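(* Let $p$ be a prime and let $e\in\mathcal{B}(\mathbb{Q}_p(\mathbb{N}))$ be an idempotent. For $i\in\mathbb{N}$ let $e_i=e\delta_i\in\mathbb{Q}_p(\mathbb{N})$ be the $i$-th column of the matrix of $e$, and choose $n\in\mathbb{N}$ such that $e_i$ has all entries in $\mathbb{Z}_p$ for every $i>n$. Then there is an idempotent $f\in\mathcal{B}(\mathbb{Q}_p(\mathbb{N}))$ such that $fe=ef=f$, the image of $f$ is the finite-dimensional $\mathbb{Q}_p$-vector space $\sum_{i\in\mathbb{N},\,i\le n}\mathbb{Q}_p e_i$, and $e-f$ is an idempotent with $\|e-f\|\le1$.
   Context: $\mathbb{Q}_p(\mathbb{N})$ is the set of maps $\xi:\mathbb{N}\to\mathbb{Q}_p$ with $|\xi(i)|_p\le1$ for all but finitely many $i$, a $\mathbb{Z}_p$-module under coordinatewise operations, with the topology $\tau$ in which $A\subseteq\mathbb{Q}_p(\mathbb{N})$ is open iff for every finite $P\subseteq\mathbb{N}$ the set $A\cap\big(\prod_{i\in P}\mathbb{Q}_p\times\prod_{j\notin P}\mathbb{Z}_p\big)$ is open in the product topology. $\mathcal{B}(\mathbb{Q}_p(\mathbb{N}))$ is the algebra of $\tau$-continuous $\mathbb{Z}_p$-linear maps, with operator norm $\|T\|=\sup_{\|\xi\|\le1}\|T\xi\|$, $\|\xi\|=\max_i|\xi(i)|_p$. $\delta_i$ is the indicator function of $\{i\}$. *)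

theory Defs
  imports "HOL-Analysis.Analysis" "HOL-Computational_Algebra.Factorial_Ring"
begin

definition padic_abs :: "nat \<Rightarrow> rat \<Rightarrow> real" where
  "padic_abs p q = (if q = 0 then 0 else
     (let (a, b) = quotient_of q in
        real p powr (- (real (multiplicity (int p) a) - real (multiplicity (int p) b)))))"

definition padic_cauchy :: "nat \<Rightarrow> (nat \<Rightarrow> rat) \<Rightarrow> bool" where
  "padic_cauchy p x \<longleftrightarrow> (\<forall>\<epsilon>>0. \<exists>N. \<forall>m\<ge>N. \<forall>n\<ge>N. padic_abs p (x m - x n) < \<epsilon>)"

definition padic_equiv :: "nat \<Rightarrow> (nat \<Rightarrow> rat) \<Rightarrow> (nat \<Rightarrow> rat) \<Rightarrow> bool" where
  "padic_equiv p x y \<longleftrightarrow> (\<lambda>n. padic_abs p (x n - y n)) \<longlonglongrightarrow> 0"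

type_synonym qp = "(nat \<Rightarrow> rat) set"

definition qp_class :: "nat \<Rightarrow> (nat \<Rightarrow> rat) \<Rightarrow> qp" where
  "qp_class p x = {y. padic_cauchy p y \<and> padic_equiv p x y}"

definition Qp :: "nat \<Rightarrow> qp set" where
  "Qp p = {qp_class p x | x. padic_cauchy p x}"

definition qp_rep :: "qp \<Rightarrow> nat \<Rightarrow> rat" where
  "qp_rep A = (SOME x. x \<in> A)"

definition qp_zero :: "nat \<Rightarrow> qp" where "qp_zero p = qp_class p (\<lambda>_. 0)"
definition qp_one :: "nat \<Rightarrow> qp" where "qp_one p = qp_class p (\<lambda>_. 1)"
definition qp_add :: "nat \<Rightarrow> qp \<Rightarrow> qp \<Rightarrow> qp" where
  "qp_add p A B = qp_class p (\<lambda>n. qp_rep A n + qp_rep B n)"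
definition qp_neg :: "nat \<Rightarrow> qp \<Rightarrow> qp" where
  "qp_neg p A = qp_class p (\<lambda>n. - qp_rep A n)"
definition qp_sub :: "nat \<Rightarrow> qp \<Rightarrow> qp \<Rightarrow> qp" where
  "qp_sub p A B = qp_class p (\<lambda>n. qp_rep A n - qp_rep B n)"
definition qp_mult :: "nat \<Rightarrow> qp \<Rightarrow> qp \<Rightarrow> qp" where
  "qp_mult p A B = qp_class p (\<lambda>n. qp_rep A n * qp_rep B n)"

definition qp_norm :: "nat \<Rightarrow> qp \<Rightarrow> real" where
  "qp_norm p A = lim (\<lambda>n. padic_abs p (qp_rep A n))"

definition Zp :: "nat \<Rightarrow> qp set" where
  "Zp p = {a \<in> Qp p. qp_norm p a \<le> 1}"

definition qp_top :: "nat \<Rightarrow> qp topology" where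
  "qp_top p = topology (\<lambda>S. S \<subseteq> Qp p \<and>
     (\<forall>x\<in>S. \<exists>r>0. \<forall>y\<in>Qp p. qp_norm p (qp_sub p y x) < r \<longrightarrow> y \<in> S))"

type_synonym qpseq = "nat \<Rightarrow> qp"

definition QpN :: "nat \<Rightarrow> qpseq set" where
  "QpN p = {\<xi>. (\<forall>i. \<xi> i \<in> Qp p) \<and> finite {i. qp_norm p (\<xi> i) > 1}}"

definition seq_add :: "nat \<Rightarrow> qpseq \<Rightarrow> qpseq \<Rightarrow> qpseq" where
  "seq_add p \<xi> \<eta> = (\<lambda>i. qp_add p (\<xi> i) (\<eta> i))"
definition seq_sub :: "nat \<Rightarrow> qpseq \<Rightarrow> qpseq \<Rightarrow> qpseq" where
  "seq_sub p \<xi> \<eta> = (\<lambda>i. qp_sub p (\<xi> i) (\<eta> i))"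
definition seq_smult :: "nat \<Rightarrow> qp \<Rightarrow> qpseq \<Rightarrow> qpseq" where
  "seq_smult p a \<xi> = (\<lambda>i. qp_mult p a (\<xi> i))"
definition seq_zero :: "nat \<Rightarrow> qpseq" where
  "seq_zero p = (\<lambda>i. qp_zero p)"

definition delta :: "nat \<Rightarrow> nat \<Rightarrow> qpseq" where
  "delta p i = (\<lambda>j. if j = i then qp_one p else qp_zero p)"

definition seq_norm :: "nat \<Rightarrow> qpseq \<Rightarrow> real" where
  "seq_norm p \<xi> = Sup (range (\<lambda>i. qp_norm p (\<xi> i)))"

definition box_top :: "nat \<Rightarrow> nat set \<Rightarrow> qpseq topology" where
  "box_top p P = product_topology
     (\<lambda>i. if i \<in> P then qp_top p else subtopology (qp_top p) (Zp p)) UNIV"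

definition tau :: "nat \<Rightarrow> qpseq topology" where
  "tau p = topology (\<lambda>A. A \<subseteq> QpN p \<and>
     (\<forall>P. finite P \<longrightarrow> openin (box_top p P) (A \<inter> topspace (box_top p P))))"

text \<open>Maps are only considered on the carrier \<open>QpN p\<close>.\<close>
definition zp_linear :: "nat \<Rightarrow> (qpseq \<Rightarrow> qpseq) \<Rightarrow> bool" where
  "zp_linear p T \<longleftrightarrow> (\<forall>\<xi>\<in>QpN p. T \<xi> \<in> QpN p) \<and>
     (\<forall>\<xi>\<in>QpN p. \<forall>\<eta>\<in>QpN p. T (seq_add p \<xi> \<eta>) = seq_add p (T \<xi>) (T \<eta>)) \<and>
     (\<forall>a\<in>Zp p. \<forall>\<xi>\<in>QpN p. T (seq_smult p a \<xi>) = seq_smult p a (T \<xi>))"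

definition bounded_ops :: "nat \<Rightarrow> (qpseq \<Rightarrow> qpseq) set" where
  "bounded_ops p = {T. zp_linear p T \<and> continuous_map (tau p) (tau p) T}"

definition idempotent_op :: "nat \<Rightarrow> (qpseq \<Rightarrow> qpseq) \<Rightarrow> bool" where
  "idempotent_op p T \<longleftrightarrow> T \<in> bounded_ops p \<and> (\<forall>\<xi>\<in>QpN p. T (T \<xi>) = T \<xi>)"

definition op_diff :: "nat \<Rightarrow> (qpseq \<Rightarrow> qpseq) \<Rightarrow> (qpseq \<Rightarrow> qpseq) \<Rightarrow> qpseq \<Rightarrow> qpseq" where
  "op_diff p S T = (\<lambda>\<xi>. seq_sub p (S \<xi>) (T \<xi>))"

definition op_norm :: "nat \<Rightarrow> (qpseq \<Rightarrow> qpseq) \<Rightarrow> real" where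
  "op_norm p T = Sup {seq_norm p (T \<xi>) | \<xi>. \<xi> \<in> QpN p \<and> seq_norm p \<xi> \<le> 1}"

definition qp_span_upto :: "nat \<Rightarrow> nat \<Rightarrow> (nat \<Rightarrow> qpseq) \<Rightarrow> qpseq set" where
  "qp_span_upto p n v = {(\<lambda>j. foldr (qp_add p) (map (\<lambda>i. qp_mult p (c i) (v i j)) [0..<Suc n]) (qp_zero p))
        | c. \<forall>i\<le>n. c i \<in> Qp p}"

end

theory Submission
  imports Defs "HOL-Algebra.Ring"
begin

context fixes p :: nat assumes pp: "prime p" begin

lemma pe: "prime_elem (int p)"
proof -
  have "prime (int p)" using pp by simp
  thus ?thesis by (rule prime_imp_prime_elem)
qed
lemma p_gt1: "real p > 1" by (metis of_nat_1 of_nat_less_iff prime_gt_1_nat pp)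
lemma pnu: "\<not> is_unit (int p)" using pe by (rule prime_elem_not_unit)

definition mu :: "int \<Rightarrow> real" where "mu a = real (multiplicity (int p) a)"

lemma mu_mult: "a \<noteq> 0 \<Longrightarrow> b \<noteq> 0 \<Longrightarrow> mu (a*b) = mu a + mu b"
  unfolding mu_def using prime_elem_multiplicity_mult_distrib[OF pe] by simp

lemma pabs_frac:
  assumes a: "a \<noteq> 0" and b: "b \<noteq> 0"
  shows "padic_abs p (of_int a / of_int b) = real p powr (- (mu a - mu b))"
proof -
  obtain a0 b0 where q: "quotient_of (of_int a / of_int b) = (a0, b0)" by (cases "quotient_of (of_int a / of_int b :: rat)") auto
  have b0: "b0 > 0" using quotient_of_denom_pos[OF q] .
  have eq: "(of_int a / of_int b :: rat) = of_int a0 / of_int b0" using quotient_of_div[OF q] .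
  have ne: "(of_int a / of_int b :: rat) \<noteq> 0" using a b by simp
  have a0: "a0 \<noteq> 0" using eq ne by auto
  have "(of_int (a * b0) :: rat) = of_int (a0 * b)" using eq b b0 by (simp add: field_simps)
  hence ab: "a * b0 = a0 * b" by linarith
  have "mu a + mu b0 = mu a0 + mu b"
    using mu_mult[of a b0] mu_mult[of a0 b] ab a b b0 a0 by auto
  hence "mu a - mu b = mu a0 - mu b0" by linarith
  thus ?thesis using ne q unfolding padic_abs_def mu_def by simp
qed

lemma rat_frac: obtains a b where "(x::rat) = of_int a / of_int b" "b \<noteq> 0"
proof -
  obtain a b where q: "quotient_of x = (a,b)" by (cases "quotient_of x") auto
  show ?thesis using that[of a b] quotient_of_div[OF q] quotient_of_denom_pos[OF q] by auto
qed

abbreviation pa where "pa \<equiv> padic_abs p"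

lemma pa_zero[simp]: "pa 0 = 0" unfolding padic_abs_def by simp
lemma pa_pos: "x \<noteq> 0 \<Longrightarrow> pa x > 0" unfolding padic_abs_def using p_gt1 by (auto simp: case_prod_beta)
lemma pa_nonneg[simp]: "pa x \<ge> 0" using pa_pos[of x] by (cases "x = 0") auto
lemma pa_eq0[simp]: "pa x = 0 \<longleftrightarrow> x = 0" using pa_pos[of x] by (cases "x = 0") auto

lemma pa_mult: "pa (x*y) = pa x * pa y"
proof (cases "x = 0 \<or> y = 0")
  case True thus ?thesis by auto
next
  case False
  obtain a b where x: "x = of_int a / of_int b" "b \<noteq> 0" by (rule rat_frac)
  obtain c d where y: "y = of_int c / of_int d" "d \<noteq> 0" by (rule rat_frac)
  have a: "a \<noteq> 0" using x False by auto
  have c: "c \<noteq> 0" using y False by auto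
  have "x * y = of_int (a*c) / of_int (b*d)" using x y by simp
  hence "pa (x*y) = real p powr (- (mu (a*c) - mu (b*d)))" using pabs_frac[of "a*c" "b*d"] a c x y by simp
  also have "\<dots> = real p powr (- (mu a - mu b)) * real p powr (- (mu c - mu d))"
    using mu_mult a c x y by (simp add: powr_add[symmetric] algebra_simps)
  finally show ?thesis using pabs_frac a c x y by simp
qed

lemma pa_minus[simp]: "pa (- x) = pa x"
proof -
  have "pa (-1) = 1"
  proof -
    have "(-1::rat) = of_int (-1) / of_int 1" by simp
    hence "pa (-1) = real p powr (- (mu (-1) - mu 1))" using pabs_frac[of "-1" 1] by simp
    moreover have "multiplicity (int p) (-1) = 0" by (rule multiplicity_unit_right) simp
    ultimately show ?thesis using prime_gt_0_nat[OF pp] unfolding mu_def by simp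
  qed
  thus ?thesis using pa_mult[of "-1" x] by simp
qed

lemma pa_one[simp]: "pa 1 = 1"
  using pabs_frac[of 1 1] prime_gt_0_nat[OF pp] unfolding mu_def by simp

lemma pa_commute: "pa (x - y) = pa (y - x)"
  using pa_minus[of "x - y"] by simp

lemma mult_sum_ge:
  assumes "u + v \<noteq> 0" shows "multiplicity (int p) (u + v) \<ge> min (multiplicity (int p) u) (multiplicity (int p) v)"
proof -
  let ?m = "min (multiplicity (int p) u) (multiplicity (int p) v)"
  have "int p ^ ?m dvd u" by (rule multiplicity_dvd') simp
  moreover have "int p ^ ?m dvd v" by (rule multiplicity_dvd') simp
  ultimately have "int p ^ ?m dvd u + v" by simp
  thus ?thesis using multiplicity_geI[OF assms pnu] by blast
qed

lemma pa_ultra: "pa (x + y) \<le> max (pa x) (pa y)"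
proof (cases "x = 0 \<or> y = 0 \<or> x + y = 0")
  case True thus ?thesis by (auto simp: le_max_iff_disj)
next
  case False
  obtain a b where x: "x = of_int a / of_int b" "b \<noteq> 0" by (rule rat_frac)
  obtain c d where y: "y = of_int c / of_int d" "d \<noteq> 0" by (rule rat_frac)
  have a: "a \<noteq> 0" using x False by auto
  have c: "c \<noteq> 0" using y False by auto
  have x': "x = of_int (a*d) / of_int (b*d)" using x y by simp
  have y': "y = of_int (c*b) / of_int (b*d)" using x y by simp
  have s: "x + y = of_int (a*d + c*b) / of_int (b*d)" using x y by (simp add: field_simps)
  have s0: "a*d + c*b \<noteq> 0"
  proof
    assume "a*d + c*b = 0"
    hence "rat_of_int (a*d + c*b) = 0" by simp
    thus False using s False by simp
  qed
  have "mu (a*d+c*b) \<ge> min (mu (a*d)) (mu (c*b))"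
    using mult_sum_ge[OF s0] unfolding mu_def by linarith
  hence le: "- (mu (a*d+c*b) - mu (b*d)) \<le> max (- (mu (a*d) - mu (b*d))) (- (mu (c*b) - mu (b*d)))"
    by linarith
  have "pa (x+y) = real p powr (- (mu (a*d+c*b) - mu (b*d)))" using s pabs_frac[of "a*d+c*b" "b*d"] s0 x y by simp
  also have "\<dots> \<le> real p powr (max (- (mu (a*d) - mu (b*d))) (- (mu (c*b) - mu (b*d))))"
    using le p_gt1 by (intro powr_mono) auto
  also have "\<dots> = max (pa x) (pa y)"
  proof -
    have px: "pa x = real p powr (- (mu (a*d) - mu (b*d)))"
      by (subst x', rule pabs_frac) (use a x y in auto)
    have py: "pa y = real p powr (- (mu (c*b) - mu (b*d)))"
      by (subst y', rule pabs_frac) (use c x y in auto)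
    show ?thesis unfolding px py using p_gt1
      by (cases "- (mu (a*d) - mu (b*d)) \<le> - (mu (c*b) - mu (b*d))") (auto simp: max_def)
  qed
  finally show ?thesis .
qed

lemma pa_tri: "pa (x + y) \<le> pa x + pa y"
  using pa_ultra[of x y] pa_nonneg[of x] pa_nonneg[of y] by linarith

lemma pa_diff: "\<bar>pa a - pa b\<bar> \<le> pa (a - b)"
proof -
  have 1: "pa a \<le> max (pa (a - b)) (pa b)" using pa_ultra[of "a-b" b] by simp
  have 2: "pa b \<le> max (pa (b - a)) (pa a)" using pa_ultra[of "b-a" a] by simp
  have "pa a \<le> pa (a-b) \<or> pa a \<le> pa b" using 1 by (auto simp: le_max_iff_disj)
  hence 3: "pa a - pa b \<le> pa (a-b)" using pa_nonneg[of b] pa_nonneg[of "a-b"] by linarith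
  have "pa b \<le> pa (a-b) \<or> pa b \<le> pa a" using 2 pa_commute[of a b] by (auto simp: le_max_iff_disj)
  hence 4: "pa b - pa a \<le> pa (a-b)" using pa_nonneg[of a] pa_nonneg[of "a-b"] by linarith
  show ?thesis using 3 4 by linarith
qed

lemma pa_inverse: "pa (inverse x) = inverse (pa x)"
proof (cases "x = 0")
  case True thus ?thesis by simp
next
  case False
  have "pa (inverse x) * pa x = 1" using pa_mult[of "inverse x" x] False by simp
  thus ?thesis using pa_pos[OF False] by (metis inverse_unique mult.commute)
qed

lemma pa_invp: "pa (inverse (of_nat p)) = real p"
proof -
  have "pa (of_nat p) = real p powr (- (mu (int p) - mu 1))"
    using pabs_frac[of "int p" 1] pp by (simp add: prime_gt_0_nat)
  also have "\<dots> = inverse (real p)" unfolding mu_def using pe p_gt1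
    by (simp add: powr_minus)
  finally show ?thesis using pa_inverse by simp
qed

end

context fixes p :: nat assumes pp: "prime p" begin

abbreviation C where "C \<equiv> padic_cauchy p"
abbreviation E where "E \<equiv> padic_equiv p"
abbreviation cls where "cls \<equiv> qp_class p"
abbreviation pa' where "pa' \<equiv> padic_abs p"

lemmas pa_simps = pa_zero[OF pp] pa_nonneg[OF pp] pa_eq0[OF pp] pa_minus[OF pp] pa_one[OF pp]

lemma cauchy_pa: "C x \<Longrightarrow> Cauchy (\<lambda>n. pa' (x n))"
  unfolding Cauchy_def padic_cauchy_def dist_real_def
proof (intro allI impI)
  fix e :: real assume "\<forall>\<epsilon>>0. \<exists>N. \<forall>m\<ge>N. \<forall>n\<ge>N. pa' (x m - x n) < \<epsilon>" "0 < e"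
  then obtain N where N: "\<forall>m\<ge>N. \<forall>n\<ge>N. pa' (x m - x n) < e" by blast
  show "\<exists>M. \<forall>m\<ge>M. \<forall>n\<ge>M. \<bar>pa' (x m) - pa' (x n)\<bar> < e"
  proof (intro exI[of _ N] allI impI)
    fix m n assume "m \<ge> N" "n \<ge> N"
    hence "pa' (x m - x n) < e" using N by blast
    moreover have "\<bar>pa' (x m) - pa' (x n)\<bar> \<le> pa' (x m - x n)" by (rule pa_diff[OF pp])
    ultimately show "\<bar>pa' (x m) - pa' (x n)\<bar> < e" by linarith
  qed
qed

lemma cauchy_conv: "C x \<Longrightarrow> convergent (\<lambda>n. pa' (x n))"
  using cauchy_pa Cauchy_convergent_iff by blast

lemma cauchy_bdd: assumes "C x" obtains B where "B > 0" "\<And>n. pa' (x n) \<le> B"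
proof -
  have "Bseq (\<lambda>n. pa' (x n))" using cauchy_conv[OF assms] convergent_imp_Bseq by blast
  then obtain K where "K > 0" "\<And>n. norm (pa' (x n)) \<le> K" unfolding Bseq_def by blast
  moreover have "pa' (x n) \<le> K" if "\<And>n. norm (pa' (x n)) \<le> K" for n using that[of n] by (simp add: abs_of_nonneg pa_simps)
  ultimately show ?thesis using that[of K] by blast
qed

lemma cauchy_const[simp]: "C (\<lambda>n. c)"
  unfolding padic_cauchy_def by (simp add: pa_simps)

lemma cauchy_add[simp]: assumes "C x" "C y" shows "C (\<lambda>n. x n + y n)"
  unfolding padic_cauchy_def
proof (intro allI impI)
  fix e :: real assume e: "e > 0"
  obtain N1 where N1: "\<forall>m\<ge>N1. \<forall>n\<ge>N1. pa' (x m - x n) < e" using assms(1) e unfolding padic_cauchy_def by blast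
  obtain N2 where N2: "\<forall>m\<ge>N2. \<forall>n\<ge>N2. pa' (y m - y n) < e" using assms(2) e unfolding padic_cauchy_def by blast
  show "\<exists>N. \<forall>m\<ge>N. \<forall>n\<ge>N. pa' (x m + y m - (x n + y n)) < e"
  proof (intro exI[of _ "max N1 N2"] allI impI)
    fix m n assume "max N1 N2 \<le> m" "max N1 N2 \<le> n"
    hence "pa' (x m - x n) < e" "pa' (y m - y n) < e" using N1 N2 by auto
    moreover have "pa' (x m + y m - (x n + y n)) \<le> max (pa' (x m - x n)) (pa' (y m - y n))"
      using pa_ultra[OF pp, of "x m - x n" "y m - y n"] by (simp add: algebra_simps)
    ultimately show "pa' (x m + y m - (x n + y n)) < e" by linarith
  qed
qed

lemma pa_negdiff: "pa' (- a - - b) = pa' (a - b)"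
proof -
  have "- a - - b = - (a - b)" by simp
  thus ?thesis using pa_minus[OF pp, of "a - b"] by simp
qed

lemma cauchy_neg[simp]: assumes "C x" shows "C (\<lambda>n. - x n)"
  using assms unfolding padic_cauchy_def pa_negdiff by simp

lemma cauchy_mult[simp]: assumes "C x" "C y" shows "C (\<lambda>n. x n * y n)"
  unfolding padic_cauchy_def
proof (intro allI impI)
  fix e :: real assume e: "e > 0"
  obtain Bx where Bx: "Bx > 0" "\<And>n. pa' (x n) \<le> Bx" using cauchy_bdd[OF assms(1)] by blast
  obtain By where By: "By > 0" "\<And>n. pa' (y n) \<le> By" using cauchy_bdd[OF assms(2)] by blast
  define d where "d = e / (Bx + By)"
  have d: "d > 0" using e Bx By by (simp add: d_def)
  obtain N1 where N1: "\<forall>m\<ge>N1. \<forall>n\<ge>N1. pa' (x m - x n) < d" using assms(1) d unfolding padic_cauchy_def by blast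
  obtain N2 where N2: "\<forall>m\<ge>N2. \<forall>n\<ge>N2. pa' (y m - y n) < d" using assms(2) d unfolding padic_cauchy_def by blast
  show "\<exists>N. \<forall>m\<ge>N. \<forall>n\<ge>N. pa' (x m * y m - x n * y n) < e"
  proof (intro exI[of _ "max N1 N2"] allI impI)
    fix m n assume "max N1 N2 \<le> m" "max N1 N2 \<le> n"
    hence h1: "pa' (x m - x n) < d" and h2: "pa' (y m - y n) < d" using N1 N2 by auto
    have eq: "x m * y m - x n * y n = x m * (y m - y n) + (x m - x n) * y n" by (simp add: algebra_simps)
    have "pa' (x m * (y m - y n)) = pa' (x m) * pa' (y m - y n)" by (rule pa_mult[OF pp])
    also have "\<dots> \<le> Bx * d" by (rule mult_mono) (simp_all add: Bx(2) less_imp_le[OF h2] Bx(1) less_imp_le pa_simps)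
    finally have "pa' (x m * (y m - y n)) \<le> Bx * d" .
    moreover have "pa' ((x m - x n) * y n) = pa' (x m - x n) * pa' (y n)" by (rule pa_mult[OF pp])
    moreover have "\<dots> \<le> d * By" by (rule mult_mono) (simp_all add: By(2) less_imp_le[OF h1] d less_imp_le pa_simps)
    ultimately have "pa' (x m * (y m - y n)) \<le> Bx * d" "pa' ((x m - x n) * y n) \<le> d * By" by auto
    moreover have "pa' (x m * y m - x n * y n) \<le> pa' (x m * (y m - y n)) + pa' ((x m - x n) * y n)"
      unfolding eq by (rule pa_tri[OF pp])
    moreover have "Bx * d + d * By = e"
    proof -
      have "Bx * d + d * By = d * (Bx + By)" by (simp add: algebra_simps)
      also have "\<dots> = e" using Bx By by (simp add: d_def)
      finally show ?thesis .
    qed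
    moreover have "Bx * d < e" "d * By < e" using Bx By d \<open>Bx * d + d * By = e\<close>
      by (smt (verit) mult_pos_pos)+
    ultimately show "pa' (x m * y m - x n * y n) < e"
    proof -
      have "pa' (x m * y m - x n * y n) \<le> max (pa' (x m * (y m - y n))) (pa' ((x m - x n) * y n))"
        unfolding eq by (rule pa_ultra[OF pp])
      thus ?thesis using \<open>pa' (x m * (y m - y n)) \<le> Bx * d\<close> \<open>pa' ((x m - x n) * y n) \<le> d * By\<close>
          \<open>Bx * d < e\<close> \<open>d * By < e\<close> by linarith
    qed
  qed
qed

lemma null_cmp: assumes "\<And>n. pa' (f n) \<le> g n" "g \<longlonglongrightarrow> 0" shows "(\<lambda>n. pa' (f n)) \<longlonglongrightarrow> 0"
  by (rule Lim_null_comparison[OF _ assms(2)]) (use assms(1) pa_nonneg[OF pp] in auto)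

lemma equiv_refl[simp]: "E x x"
  unfolding padic_equiv_def by (simp add: pa_simps)

lemma equiv_sym: "E x y \<Longrightarrow> E y x"
  unfolding padic_equiv_def using pa_commute[OF pp] by simp

lemma equiv_trans: assumes "E x y" "E y z" shows "E x z"
  unfolding padic_equiv_def
proof (rule null_cmp)
  show "pa' (x n - z n) \<le> pa' (x n - y n) + pa' (y n - z n)" for n
    using pa_tri[OF pp, of "x n - y n" "y n - z n"] by simp
  show "(\<lambda>n. pa' (x n - y n) + pa' (y n - z n)) \<longlonglongrightarrow> 0"
    using tendsto_add[OF assms[unfolded padic_equiv_def]] by simp
qed

lemma equiv_add: assumes "E x x'" "E y y'" shows "E (\<lambda>n. x n + y n) (\<lambda>n. x' n + y' n)"
  unfolding padic_equiv_def
proof (rule null_cmp)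
  show "pa' (x n + y n - (x' n + y' n)) \<le> pa' (x n - x' n) + pa' (y n - y' n)" for n
    using pa_tri[OF pp, of "x n - x' n" "y n - y' n"] by (simp add: algebra_simps)
  show "(\<lambda>n. pa' (x n - x' n) + pa' (y n - y' n)) \<longlonglongrightarrow> 0"
    using tendsto_add[OF assms[unfolded padic_equiv_def]] by simp
qed

lemma equiv_neg: assumes "E x x'" shows "E (\<lambda>n. - x n) (\<lambda>n. - x' n)"
  using assms unfolding padic_equiv_def pa_negdiff by simp

lemma equiv_mult: assumes "C x'" "C y" "E x x'" "E y y'" shows "E (\<lambda>n. x n * y n) (\<lambda>n. x' n * y' n)"
proof -
  obtain Bx where Bx: "Bx > 0" "\<And>n. pa' (x' n) \<le> Bx" using cauchy_bdd[OF assms(1)] by blast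
  obtain By where By: "By > 0" "\<And>n. pa' (y n) \<le> By" using cauchy_bdd[OF assms(2)] by blast
  show ?thesis
  unfolding padic_equiv_def
proof (rule null_cmp)
  show "pa' (x n * y n - x' n * y' n) \<le> By * pa' (x n - x' n) + Bx * pa' (y n - y' n)" for n
  proof -
    have eq: "x n * y n - x' n * y' n = (x n - x' n) * y n + x' n * (y n - y' n)" by (simp add: algebra_simps)
    have "pa' (x n * y n - x' n * y' n) \<le> pa' ((x n - x' n) * y n) + pa' (x' n * (y n - y' n))"
      unfolding eq by (rule pa_tri[OF pp])
    also have "\<dots> \<le> By * pa' (x n - x' n) + Bx * pa' (y n - y' n)"
      unfolding pa_mult[OF pp] using Bx By pa_nonneg[OF pp]
      by (intro add_mono) (simp_all add: mult_mono mult.commute)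
    finally show ?thesis .
  qed
  show "(\<lambda>n. By * pa' (x n - x' n) + Bx * pa' (y n - y' n)) \<longlonglongrightarrow> 0"
    using tendsto_add[OF tendsto_mult_right_zero[OF assms(3)[unfolded padic_equiv_def]]
                         tendsto_mult_right_zero[OF assms(4)[unfolded padic_equiv_def]]]
    by (simp add: mult.commute)
qed
qed

lemma cls_mem: "C x \<Longrightarrow> x \<in> cls x"
  unfolding qp_class_def by simp

lemma cls_eqI: "E x y \<Longrightarrow> cls x = cls y"
  unfolding qp_class_def using equiv_sym equiv_trans by blast

lemma cls_eq_iff: "C x \<Longrightarrow> C y \<Longrightarrow> cls x = cls y \<longleftrightarrow> E x y"
proof
  assume "C x" "C y" "cls x = cls y"
  hence "y \<in> cls x" using cls_mem[of y] by simp
  thus "E x y" unfolding qp_class_def by simp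
qed (rule cls_eqI)

lemma rep_props: assumes "C x" shows "C (qp_rep (cls x))" "E x (qp_rep (cls x))"
proof -
  have "qp_rep (cls x) \<in> cls x" unfolding qp_rep_def by (rule someI[of "\<lambda>z. z \<in> cls x" x]) (rule cls_mem[OF assms])
  thus "C (qp_rep (cls x))" "E x (qp_rep (cls x))" unfolding qp_class_def by auto
qed

lemma QpE: assumes "A \<in> Qp p" obtains x where "C x" "A = cls x"
  using assms unfolding Qp_def by blast

lemma cls_Qp[simp]: "C x \<Longrightarrow> cls x \<in> Qp p"
  unfolding Qp_def by blast

lemma add_cls: "C x \<Longrightarrow> C y \<Longrightarrow> qp_add p (cls x) (cls y) = cls (\<lambda>n. x n + y n)"
  unfolding qp_add_def by (intro cls_eqI equiv_sym[OF equiv_add] rep_props)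

lemma neg_cls: "C x \<Longrightarrow> qp_neg p (cls x) = cls (\<lambda>n. - x n)"
  unfolding qp_neg_def by (intro cls_eqI equiv_sym[OF equiv_neg] rep_props)

lemma sub_cls: "C x \<Longrightarrow> C y \<Longrightarrow> qp_sub p (cls x) (cls y) = cls (\<lambda>n. x n - y n)"
proof -
  assume a: "C x" "C y"
  have "E (\<lambda>n. qp_rep (cls x) n + - qp_rep (cls y) n) (\<lambda>n. x n + - y n)"
    by (intro equiv_sym[OF equiv_add] equiv_neg rep_props a)
  thus ?thesis unfolding qp_sub_def by (intro cls_eqI) simp
qed

lemma mult_cls: "C x \<Longrightarrow> C y \<Longrightarrow> qp_mult p (cls x) (cls y) = cls (\<lambda>n. x n * y n)"
  unfolding qp_mult_def by (intro cls_eqI equiv_sym[OF equiv_mult] rep_props)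

lemma norm_cls: assumes "C x" shows "(\<lambda>n. pa' (x n)) \<longlonglongrightarrow> qp_norm p (cls x)"
proof -
  let ?r = "qp_rep (cls x)"
  obtain L where L: "(\<lambda>n. pa' (?r n)) \<longlonglongrightarrow> L" using cauchy_conv[OF rep_props(1)[OF assms]]
    unfolding convergent_def by blast
  have "(\<lambda>n. pa' (x n) - pa' (?r n)) \<longlonglongrightarrow> 0"
    by (rule Lim_null_comparison[OF _ rep_props(2)[OF assms, unfolded padic_equiv_def]])
       (simp add: pa_diff[OF pp])
  hence "(\<lambda>n. (pa' (x n) - pa' (?r n)) + pa' (?r n)) \<longlonglongrightarrow> 0 + L" by (intro tendsto_add L)
  hence "(\<lambda>n. pa' (x n)) \<longlonglongrightarrow> L" by simp
  moreover have "qp_norm p (cls x) = L" unfolding qp_norm_def using L by (rule limI)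
  ultimately show ?thesis by simp
qed

lemma nonnull: assumes "C x" "\<not> E x (\<lambda>n. 0)" obtains d N where "d > 0" "\<And>n. n \<ge> N \<Longrightarrow> pa' (x n) \<ge> d"
proof -
  obtain L where L: "(\<lambda>n. pa' (x n)) \<longlonglongrightarrow> L" using cauchy_conv[OF assms(1)] unfolding convergent_def by blast
  have "L \<ge> 0" by (rule LIMSEQ_le_const[OF L]) (simp add: pa_simps)
  moreover have "L \<noteq> 0" using L assms(2) unfolding padic_equiv_def by auto
  ultimately have "L/2 < L" by simp
  then have "eventually (\<lambda>n. L/2 < pa' (x n)) sequentially" using order_tendstoD(1)[OF L] by blast
  then obtain N where "\<And>n. n \<ge> N \<Longrightarrow> L/2 < pa' (x n)" unfolding eventually_sequentially by blast
  moreover have "L/2 > 0" using \<open>L \<noteq> 0\<close> \<open>L \<ge> 0\<close> by simp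
  ultimately show ?thesis using that[of "L/2" N] by (meson less_imp_le)
qed

lemma cauchy_inverse: assumes "C x" "\<not> E x (\<lambda>n. 0)" shows "C (\<lambda>n. inverse (x n))" "E (\<lambda>n. x n * inverse (x n)) (\<lambda>n. 1)"
proof -
  obtain d N where d: "d > 0" "\<And>n. n \<ge> N \<Longrightarrow> pa' (x n) \<ge> d" using nonnull[OF assms] by blast
  have nz: "x n \<noteq> 0" if "n \<ge> N" for n
  proof
    assume "x n = 0"
    hence "pa' (x n) = 0" by (simp add: pa_simps)
    thus False using d(1) d(2)[OF that] by simp
  qed
  show "C (\<lambda>n. inverse (x n))" unfolding padic_cauchy_def
  proof (intro allI impI)
    fix e :: real assume e: "e > 0"
    obtain N1 where N1: "\<forall>m\<ge>N1. \<forall>n\<ge>N1. pa' (x m - x n) < e * d * d" using assms(1) e d unfolding padic_cauchy_def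
      by (metis mult_pos_pos)
    show "\<exists>M. \<forall>m\<ge>M. \<forall>n\<ge>M. pa' (inverse (x m) - inverse (x n)) < e"
    proof (intro exI[of _ "max N N1"] allI impI)
      fix m n assume mn: "max N N1 \<le> m" "max N N1 \<le> n"
      have eq: "inverse (x m) - inverse (x n) = (x n - x m) * inverse (x m) * inverse (x n)"
        using nz mn by (simp add: field_simps)
      have dm: "pa' (x m) \<ge> d" and dn: "pa' (x n) \<ge> d" using d mn by auto
      have "pa' (inverse (x m) - inverse (x n)) = pa' (x n - x m) / (pa' (x m) * pa' (x n))"
        unfolding eq pa_mult[OF pp] pa_inverse[OF pp] by (simp add: field_simps)
      also have "\<dots> \<le> pa' (x n - x m) / (d * d)"
        using d dm dn by (intro divide_left_mono mult_mono) (auto simp: pa_simps)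
      also have "\<dots> < e" using N1 mn d by (simp add: field_simps)
      finally show "pa' (inverse (x m) - inverse (x n)) < e" .
    qed
  qed
  show "E (\<lambda>n. x n * inverse (x n)) (\<lambda>n. 1)" unfolding padic_equiv_def
  proof (rule Lim_null_comparison[of _ "\<lambda>n. 0"])
    show "\<forall>\<^sub>F n in sequentially. norm (pa' (x n * inverse (x n) - 1)) \<le> 0"
      unfolding eventually_sequentially using nz by (intro exI[of _ N]) (simp add: pa_simps)
  qed simp
qed

end

definition QR :: "nat \<Rightarrow> qp ring" where
  "QR p = \<lparr>carrier = Qp p, monoid.mult = qp_mult p, one = qp_one p, zero = qp_zero p, add = qp_add p\<rparr>"

lemma QR_simps[simp]: "carrier (QR p) = Qp p" "monoid.mult (QR p) = qp_mult p" "one (QR p) = qp_one p"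
  "zero (QR p) = qp_zero p" "add (QR p) = qp_add p"
  by (simp_all add: QR_def)

context fixes p :: nat assumes pp: "prime p" begin

lemma zero_cls: "qp_zero p = cls p (\<lambda>n. 0)" unfolding qp_zero_def ..
lemma one_cls: "qp_one p = cls p (\<lambda>n. 1)" unfolding qp_one_def ..

lemmas cls_ops = add_cls[OF pp] mult_cls[OF pp] neg_cls[OF pp] sub_cls[OF pp] zero_cls one_cls
lemma cauchy_sub: "C p x \<Longrightarrow> C p y \<Longrightarrow> C p (\<lambda>n. x n - y n)"
  using cauchy_add[OF pp, of x "\<lambda>n. - y n"] cauchy_neg[OF pp, of y] by simp

lemmas cauchy_simps = cauchy_const[OF pp] cauchy_add[OF pp] cauchy_mult[OF pp] cauchy_neg[OF pp] cauchy_sub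

lemma cls_cong: "(\<And>n. f n = g n) \<Longrightarrow> cls p f = cls p g" by presburger

lemma Qp_cases: assumes "A \<in> Qp p" obtains x where "C p x" "A = cls p x"
  using QpE[OF pp assms] by blast

lemma add_closed: "A \<in> Qp p \<Longrightarrow> B \<in> Qp p \<Longrightarrow> qp_add p A B \<in> Qp p"
  by (elim Qp_cases) (simp add: cls_ops cauchy_simps cls_Qp[OF pp])
lemma mult_closed: "A \<in> Qp p \<Longrightarrow> B \<in> Qp p \<Longrightarrow> qp_mult p A B \<in> Qp p"
  by (elim Qp_cases) (simp add: cls_ops cauchy_simps cls_Qp[OF pp])
lemma neg_closed: "A \<in> Qp p \<Longrightarrow> qp_neg p A \<in> Qp p"
  by (elim Qp_cases) (simp add: cls_ops cauchy_simps cls_Qp[OF pp])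
lemma sub_closed: "A \<in> Qp p \<Longrightarrow> B \<in> Qp p \<Longrightarrow> qp_sub p A B \<in> Qp p"
  by (elim Qp_cases) (simp add: cls_ops cauchy_simps cls_Qp[OF pp])
lemma zero_closed: "qp_zero p \<in> Qp p"
  by (simp add: cls_ops cauchy_simps cls_Qp[OF pp])
lemma one_closed: "qp_one p \<in> Qp p"
  by (simp add: cls_ops cauchy_simps cls_Qp[OF pp])

lemma add_assoc: "A \<in> Qp p \<Longrightarrow> B \<in> Qp p \<Longrightarrow> D \<in> Qp p \<Longrightarrow> qp_add p (qp_add p A B) D = qp_add p A (qp_add p B D)"
  by (elim Qp_cases) (simp add: cls_ops cauchy_simps add.assoc)
lemma add_comm: "A \<in> Qp p \<Longrightarrow> B \<in> Qp p \<Longrightarrow> qp_add p A B = qp_add p B A"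
  by (elim Qp_cases) (simp add: cls_ops cauchy_simps add.commute)
lemma zero_add: "A \<in> Qp p \<Longrightarrow> qp_add p (qp_zero p) A = A"
  by (elim Qp_cases) (simp add: cls_ops cauchy_simps)
lemma neg_add: "A \<in> Qp p \<Longrightarrow> qp_add p (qp_neg p A) A = qp_zero p"
  by (elim Qp_cases) (simp add: cls_ops cauchy_simps)
lemma mult_assoc: "A \<in> Qp p \<Longrightarrow> B \<in> Qp p \<Longrightarrow> D \<in> Qp p \<Longrightarrow> qp_mult p (qp_mult p A B) D = qp_mult p A (qp_mult p B D)"
  by (elim Qp_cases) (simp add: cls_ops cauchy_simps mult.assoc)
lemma mult_comm: "A \<in> Qp p \<Longrightarrow> B \<in> Qp p \<Longrightarrow> qp_mult p A B = qp_mult p B A"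
  by (elim Qp_cases) (simp add: cls_ops cauchy_simps mult.commute)
lemma one_mult: "A \<in> Qp p \<Longrightarrow> qp_mult p (qp_one p) A = A"
  by (elim Qp_cases) (simp add: cls_ops cauchy_simps)
lemma distr: "A \<in> Qp p \<Longrightarrow> B \<in> Qp p \<Longrightarrow> D \<in> Qp p \<Longrightarrow> qp_mult p (qp_add p A B) D = qp_add p (qp_mult p A D) (qp_mult p B D)"
  by (elim Qp_cases) (simp add: cls_ops cauchy_simps distrib_right)
lemma sub_def': "A \<in> Qp p \<Longrightarrow> B \<in> Qp p \<Longrightarrow> qp_sub p A B = qp_add p A (qp_neg p B)"
  by (elim Qp_cases) (simp add: cls_ops cauchy_simps)

lemma zero_ne_one: "qp_zero p \<noteq> qp_one p"
proof
  assume "qp_zero p = qp_one p"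
  hence "E p (\<lambda>n. 0) (\<lambda>n. 1)" using cls_eq_iff[OF pp] by (simp add: cls_ops cauchy_simps)
  thus False unfolding padic_equiv_def using pa_one[OF pp] pa_minus[OF pp, of 1] by (simp add: LIMSEQ_const_iff)
qed

lemma inv_ex: assumes "A \<in> Qp p" "A \<noteq> qp_zero p" shows "\<exists>B\<in>Qp p. qp_mult p A B = qp_one p"
proof -
  obtain x where x: "C p x" "A = cls p x" using assms(1) by (rule Qp_cases)
  have nn: "\<not> E p x (\<lambda>n. 0)" using assms(2) x cls_eq_iff[OF pp] by (simp add: cls_ops cauchy_simps)
  note ci = cauchy_inverse[OF pp x(1) nn]
  have "qp_mult p A (cls p (\<lambda>n. inverse (x n))) = qp_one p"
    using x ci by (simp add: cls_ops cauchy_simps cls_eqI[OF pp])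
  thus ?thesis using ci cls_Qp[OF pp] by blast
qed

lemma QR_field: "field (QR p)"
proof -
  have ag: "abelian_group (QR p)"
  proof (rule abelian_groupI, simp_all only: QR_simps)
    fix x y assume "x \<in> Qp p" "y \<in> Qp p" thus "qp_add p x y \<in> Qp p" by (rule add_closed)
  next
    show "qp_zero p \<in> Qp p" by (rule zero_closed)
  next
    fix x y z assume "x \<in> Qp p" "y \<in> Qp p" "z \<in> Qp p"
    thus "qp_add p (qp_add p x y) z = qp_add p x (qp_add p y z)" by (rule add_assoc)
  next
    fix x y assume "x \<in> Qp p" "y \<in> Qp p" thus "qp_add p x y = qp_add p y x" by (rule add_comm)
  next
    fix x assume "x \<in> Qp p" thus "qp_add p (qp_zero p) x = x" by (rule zero_add)
  next
    fix x assume x: "x \<in> Qp p"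
    show "\<exists>y\<in>Qp p. qp_add p y x = qp_zero p" using neg_add[OF x] neg_closed[OF x] by (rule bexI)
  qed
  have cm: "comm_monoid (QR p)"
  proof (rule comm_monoidI, simp_all only: QR_simps)
    fix x y assume "x \<in> Qp p" "y \<in> Qp p" thus "qp_mult p x y \<in> Qp p" by (rule mult_closed)
  next
    show "qp_one p \<in> Qp p" by (rule one_closed)
  next
    fix x y z assume "x \<in> Qp p" "y \<in> Qp p" "z \<in> Qp p"
    thus "qp_mult p (qp_mult p x y) z = qp_mult p x (qp_mult p y z)" by (rule mult_assoc)
  next
    fix x y assume "x \<in> Qp p" "y \<in> Qp p" thus "qp_mult p x y = qp_mult p y x" by (rule mult_comm)
  next
    fix x assume "x \<in> Qp p" thus "qp_mult p (qp_one p) x = x" by (rule one_mult)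
  qed
  have cr: "cring (QR p)"
  proof (rule cringI[OF ag cm], simp_all only: QR_simps)
    fix x y z assume "x \<in> Qp p" "y \<in> Qp p" "z \<in> Qp p"
    thus "qp_mult p (qp_add p x y) z = qp_add p (qp_mult p x z) (qp_mult p y z)" by (rule distr)
  qed
  show ?thesis
  proof (rule cring.cring_fieldI2[OF cr], simp_all only: QR_simps)
    show "qp_zero p \<noteq> qp_one p" by (rule zero_ne_one)
  next
    fix a assume "a \<in> Qp p" "a \<noteq> qp_zero p" thus "\<exists>b\<in>Qp p. qp_mult p a b = qp_one p" by (rule inv_ex)
  qed
qed

lemma norm_lim: "C p x \<Longrightarrow> (\<lambda>n. padic_abs p (x n)) \<longlonglongrightarrow> qp_norm p (cls p x)"
  by (rule norm_cls[OF pp])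

lemma qn_cls_const: "qp_norm p (cls p (\<lambda>n. r)) = padic_abs p r"
  using norm_lim[of "\<lambda>n. r"] by (simp add: cauchy_simps LIMSEQ_const_iff)

lemma qn_nonneg: "A \<in> Qp p \<Longrightarrow> qp_norm p A \<ge> 0"
  by (elim Qp_cases) (auto intro: LIMSEQ_le_const[OF norm_lim] simp: pa_simps[OF pp])

lemma qn_mult: "A \<in> Qp p \<Longrightarrow> B \<in> Qp p \<Longrightarrow> qp_norm p (qp_mult p A B) = qp_norm p A * qp_norm p B"
proof (elim Qp_cases)
  fix x y assume xy: "C p x" "A = cls p x" "C p y" "B = cls p y"
  have "(\<lambda>n. padic_abs p (x n * y n)) \<longlonglongrightarrow> qp_norm p A * qp_norm p B"
    unfolding pa_mult[OF pp] using xy by (intro tendsto_mult) (simp_all add: norm_lim)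
  moreover have "(\<lambda>n. padic_abs p (x n * y n)) \<longlonglongrightarrow> qp_norm p (qp_mult p A B)"
    using xy norm_lim[of "\<lambda>n. x n * y n"] by (simp add: cls_ops cauchy_simps)
  ultimately show ?thesis using LIMSEQ_unique by blast
qed

lemma qn_ultra: "A \<in> Qp p \<Longrightarrow> B \<in> Qp p \<Longrightarrow> qp_norm p (qp_add p A B) \<le> max (qp_norm p A) (qp_norm p B)"
proof (elim Qp_cases)
  fix x y assume xy: "C p x" "A = cls p x" "C p y" "B = cls p y"
  have l1: "(\<lambda>n. max (padic_abs p (x n)) (padic_abs p (y n))) \<longlonglongrightarrow> max (qp_norm p A) (qp_norm p B)"
    using xy by (intro tendsto_max) (simp_all add: norm_lim)
  have l2: "(\<lambda>n. padic_abs p (x n + y n)) \<longlonglongrightarrow> qp_norm p (qp_add p A B)"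
    using xy norm_lim[of "\<lambda>n. x n + y n"] by (simp add: cls_ops cauchy_simps)
  show ?thesis by (rule LIMSEQ_le[OF l2 l1]) (simp add: pa_ultra[OF pp])
qed

lemma qn_neg: "A \<in> Qp p \<Longrightarrow> qp_norm p (qp_neg p A) = qp_norm p A"
proof (elim Qp_cases)
  fix x assume x: "C p x" "A = cls p x"
  have "(\<lambda>n. padic_abs p (- x n)) \<longlonglongrightarrow> qp_norm p (qp_neg p A)"
    using x norm_lim[of "\<lambda>n. - x n"] by (simp add: cls_ops cauchy_simps)
  moreover have "(\<lambda>n. padic_abs p (- x n)) \<longlonglongrightarrow> qp_norm p A"
    using x norm_lim[of x] by (simp add: pa_minus[OF pp])
  ultimately show ?thesis using LIMSEQ_unique by blast
qed

lemma qn_eq0: "A \<in> Qp p \<Longrightarrow> qp_norm p A = 0 \<longleftrightarrow> A = qp_zero p"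
proof (elim Qp_cases)
  fix x assume x: "C p x" "A = cls p x"
  have "qp_norm p A = 0 \<longleftrightarrow> (\<lambda>n. padic_abs p (x n)) \<longlonglongrightarrow> 0"
    using norm_lim[OF x(1)] x(2) LIMSEQ_unique by auto
  also have "\<dots> \<longleftrightarrow> E p x (\<lambda>n. 0)" unfolding padic_equiv_def by simp
  also have "\<dots> \<longleftrightarrow> A = qp_zero p" using x cls_eq_iff[OF pp] by (simp add: cls_ops cauchy_simps)
  finally show ?thesis .
qed

lemma qn_zero[simp]: "qp_norm p (qp_zero p) = 0"
  using qn_eq0 zero_closed by blast

lemma qn_one[simp]: "qp_norm p (qp_one p) = 1"
  using qn_cls_const[of 1] by (simp add: one_cls pa_one[OF pp])

lemma big_elem: "\<exists>c\<in>Qp p. qp_norm p c > 1"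
proof -
  have "qp_norm p (cls p (\<lambda>n. inverse (of_nat p))) = real p" by (simp add: qn_cls_const pa_invp[OF pp])
  moreover have "cls p (\<lambda>n. inverse (of_nat p)) \<in> Qp p" by (simp add: cls_Qp[OF pp] cauchy_simps)
  ultimately show ?thesis using p_gt1[OF pp] by (intro bexI[of _ "cls p (\<lambda>n. inverse (of_nat p))"]) simp_all
qed

end

declare QR_simps[simp del]

locale padic = fixes p :: nat assumes pp: "prime p"
begin

abbreviation R where "R \<equiv> QR p"

sublocale R: field R by (rule QR_field[OF pp])

abbreviation nrm where "nrm \<equiv> qp_norm p"

lemma to_R: "qp_add p = add R" "qp_mult p = monoid.mult R" "qp_zero p = zero R" "qp_one p = one R"
  "Qp p = carrier R"
  by (simp_all add: QR_simps)

lemma neg_R[simp]: "x \<in> carrier R \<Longrightarrow> qp_neg p x = \<ominus>\<^bsub>R\<^esub> x"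
proof -
  assume x: "x \<in> carrier R"
  have "qp_add p (qp_neg p x) x = qp_zero p" "qp_neg p x \<in> Qp p"
    using neg_add[OF pp] neg_closed[OF pp] x by (simp_all add: QR_simps)
  thus ?thesis using R.minus_equality[of "qp_neg p x" x] x by (simp add: to_R)
qed

lemma sub_R[simp]: "x \<in> carrier R \<Longrightarrow> y \<in> carrier R \<Longrightarrow> qp_sub p x y = x \<ominus>\<^bsub>R\<^esub> y"
  using sub_def'[OF pp, of x y] by (simp add: to_R R.minus_eq)

declare to_R[simp]

lemma nrm_nonneg[simp]: "x \<in> carrier R \<Longrightarrow> nrm x \<ge> 0" using qn_nonneg[OF pp] by simp
lemma nrm_mult: "x \<in> carrier R \<Longrightarrow> y \<in> carrier R \<Longrightarrow> nrm (x \<otimes>\<^bsub>R\<^esub> y) = nrm x * nrm y"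
  using qn_mult[OF pp] by simp
lemma nrm_ultra: "x \<in> carrier R \<Longrightarrow> y \<in> carrier R \<Longrightarrow> nrm (x \<oplus>\<^bsub>R\<^esub> y) \<le> max (nrm x) (nrm y)"
  using qn_ultra[OF pp] by simp
lemma nrm_neg[simp]: "x \<in> carrier R \<Longrightarrow> nrm (\<ominus>\<^bsub>R\<^esub> x) = nrm x"
  using qn_neg[OF pp] neg_R by simp
lemma nrm_eq0[simp]: "x \<in> carrier R \<Longrightarrow> nrm x = 0 \<longleftrightarrow> x = \<zero>\<^bsub>R\<^esub>"
  using qn_eq0[OF pp] by simp
lemma nrm_zero[simp]: "nrm \<zero>\<^bsub>R\<^esub> = 0" using qn_zero[OF pp] by simp
lemma nrm_one[simp]: "nrm \<one>\<^bsub>R\<^esub> = 1" using qn_one[OF pp] by simp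
lemma nrm_sub: "x \<in> carrier R \<Longrightarrow> y \<in> carrier R \<Longrightarrow> nrm (x \<ominus>\<^bsub>R\<^esub> y) \<le> max (nrm x) (nrm y)"
  using nrm_ultra[of x "\<ominus>\<^bsub>R\<^esub> y"] by (simp add: R.minus_eq)
lemma nrm_sub_comm: "x \<in> carrier R \<Longrightarrow> y \<in> carrier R \<Longrightarrow> nrm (x \<ominus>\<^bsub>R\<^esub> y) = nrm (y \<ominus>\<^bsub>R\<^esub> x)"
proof -
  assume xy: "x \<in> carrier R" "y \<in> carrier R"
  have "\<ominus>\<^bsub>R\<^esub> (x \<ominus>\<^bsub>R\<^esub> y) = y \<ominus>\<^bsub>R\<^esub> x" using xy by (simp add: R.minus_eq R.minus_add R.a_comm)
  thus ?thesis using nrm_neg[of "x \<ominus>\<^bsub>R\<^esub> y"] xy by simp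
qed
lemma nrm_inv: assumes "x \<in> carrier R" "x \<noteq> \<zero>\<^bsub>R\<^esub>" shows "nrm (inv\<^bsub>R\<^esub> x) * nrm x = 1"
proof -
  have u: "x \<in> Units R" using assms R.field_Units by simp
  have "inv\<^bsub>R\<^esub> x \<otimes>\<^bsub>R\<^esub> x = \<one>\<^bsub>R\<^esub>" using u by simp
  hence "nrm (inv\<^bsub>R\<^esub> x \<otimes>\<^bsub>R\<^esub> x) = 1" by simp
  thus ?thesis using nrm_mult[of "inv\<^bsub>R\<^esub> x" x] u assms by simp
qed
lemma nrm_pos: "x \<in> carrier R \<Longrightarrow> x \<noteq> \<zero>\<^bsub>R\<^esub> \<Longrightarrow> nrm x > 0"
  using nrm_nonneg[of x] nrm_eq0[of x] by linarith

lemma big_elem': "\<exists>c\<in>carrier R. nrm c > 1" using big_elem[OF pp] by simp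

lemma Zp_iff: "x \<in> Zp p \<longleftrightarrow> x \<in> carrier R \<and> nrm x \<le> 1" unfolding Zp_def by simp

lemma Zp_add: "x \<in> Zp p \<Longrightarrow> y \<in> Zp p \<Longrightarrow> x \<oplus>\<^bsub>R\<^esub> y \<in> Zp p"
  unfolding Zp_iff using nrm_ultra[of x y] by auto
lemma Zp_mult: "x \<in> Zp p \<Longrightarrow> y \<in> Zp p \<Longrightarrow> x \<otimes>\<^bsub>R\<^esub> y \<in> Zp p"
  unfolding Zp_iff using nrm_mult[of x y] by (auto intro: mult_le_one)
lemma Zp_neg: "x \<in> Zp p \<Longrightarrow> \<ominus>\<^bsub>R\<^esub> x \<in> Zp p"
  unfolding Zp_iff by auto
lemma Zp_sub: "x \<in> Zp p \<Longrightarrow> y \<in> Zp p \<Longrightarrow> x \<ominus>\<^bsub>R\<^esub> y \<in> Zp p"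
  using Zp_add Zp_neg by (simp add: R.minus_eq)
lemma Zp_zero: "\<zero>\<^bsub>R\<^esub> \<in> Zp p" unfolding Zp_iff by simp
lemma Zp_one: "\<one>\<^bsub>R\<^esub> \<in> Zp p" unfolding Zp_iff by simp
lemma Zp_carrier: "x \<in> Zp p \<Longrightarrow> x \<in> carrier R" unfolding Zp_iff by simp

lemma Zp_finsum: "finite A \<Longrightarrow> (\<And>a. a \<in> A \<Longrightarrow> f a \<in> Zp p) \<Longrightarrow> finsum R f A \<in> Zp p"
proof (induction A rule: finite_induct)
  case empty thus ?case by (simp add: Zp_zero)
next
  case (insert a A)
  have "f \<in> insert a A \<rightarrow> carrier R" using insert.prems Zp_carrier by blast
  hence "finsum R f (insert a A) = f a \<oplus>\<^bsub>R\<^esub> finsum R f A" using insert.hyps by (simp add: R.finsum_insert)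
  thus ?case using insert Zp_add by simp
qed

lemma fs_swap:
  assumes "finite A" "finite B" "\<And>a b. a \<in> A \<Longrightarrow> b \<in> B \<Longrightarrow> f a b \<in> carrier R"
  shows "finsum R (\<lambda>a. finsum R (\<lambda>b. f a b) B) A = finsum R (\<lambda>b. finsum R (\<lambda>a. f a b) A) B"
  using assms(1,3)
proof (induction A rule: finite_induct)
  case empty thus ?case by (simp add: R.finsum_zero)
next
  case (insert x A)
  have "finsum R (\<lambda>a. finsum R (\<lambda>b. f a b) B) (insert x A) =
        finsum R (\<lambda>b. f x b) B \<oplus>\<^bsub>R\<^esub> finsum R (\<lambda>a. finsum R (\<lambda>b. f a b) B) A"
    using insert by (intro R.finsum_insert) (auto intro!: R.finsum_closed)
  also have "\<dots> = finsum R (\<lambda>b. f x b) B \<oplus>\<^bsub>R\<^esub> finsum R (\<lambda>b. finsum R (\<lambda>a. f a b) A) B"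
    using insert by simp
  also have "\<dots> = finsum R (\<lambda>b. f x b \<oplus>\<^bsub>R\<^esub> finsum R (\<lambda>a. f a b) A) B"
    using insert by (intro R.finsum_addf[symmetric]) (auto intro!: R.finsum_closed)
  also have "\<dots> = finsum R (\<lambda>b. finsum R (\<lambda>a. f a b) (insert x A)) B"
    using insert by (intro R.finsum_cong') (auto simp: R.finsum_insert)
  finally show ?case .
qed

lemma fs_delta:
  assumes "finite A" "l \<in> A" "\<And>k. k \<in> A \<Longrightarrow> c k \<in> carrier R"
  shows "finsum R (\<lambda>k. c k \<otimes>\<^bsub>R\<^esub> (if k = l then \<one>\<^bsub>R\<^esub> else \<zero>\<^bsub>R\<^esub>)) A = c l"
proof -
  have "finsum R (\<lambda>k. c k \<otimes>\<^bsub>R\<^esub> (if k = l then \<one>\<^bsub>R\<^esub> else \<zero>\<^bsub>R\<^esub>)) A = finsum R (\<lambda>k. if l = k then c k else \<zero>\<^bsub>R\<^esub>) A"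
    using assms by (intro R.finsum_cong') auto
  also have "\<dots> = c l" using assms by (intro R.finsum_singleton) auto
  finally show ?thesis .
qed

lemma fs_delta':
  assumes "finite A" "l \<in> A" "\<And>k. k \<in> A \<Longrightarrow> c k \<in> carrier R"
  shows "finsum R (\<lambda>k. c k \<otimes>\<^bsub>R\<^esub> (if l = k then \<one>\<^bsub>R\<^esub> else \<zero>\<^bsub>R\<^esub>)) A = c l"
  using fs_delta[OF assms] by (simp add: eq_commute)

lemma fs_neg: "finite A \<Longrightarrow> (\<And>a. a \<in> A \<Longrightarrow> f a \<in> carrier R) \<Longrightarrow>
   finsum R (\<lambda>a. \<ominus>\<^bsub>R\<^esub> f a) A = \<ominus>\<^bsub>R\<^esub> finsum R f A"
proof (induction A rule: finite_induct)
  case empty thus ?case by simp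
next
  case (insert a A)
  have fc: "f \<in> insert a A \<rightarrow> carrier R" using insert.prems by blast
  have "finsum R (\<lambda>a. \<ominus>\<^bsub>R\<^esub> f a) (insert a A) = \<ominus>\<^bsub>R\<^esub> f a \<oplus>\<^bsub>R\<^esub> finsum R (\<lambda>a. \<ominus>\<^bsub>R\<^esub> f a) A"
    using insert fc by (intro R.finsum_insert) auto
  also have "\<dots> = \<ominus>\<^bsub>R\<^esub> f a \<oplus>\<^bsub>R\<^esub> \<ominus>\<^bsub>R\<^esub> finsum R f A" using insert by simp
  also have "\<dots> = \<ominus>\<^bsub>R\<^esub> (f a \<oplus>\<^bsub>R\<^esub> finsum R f A)" using fc by (simp add: R.minus_add)
  also have "\<dots> = \<ominus>\<^bsub>R\<^esub> finsum R f (insert a A)" using insert fc by (simp add: R.finsum_insert)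
  finally show ?case .
qed

lemma fs_sub: "finite A \<Longrightarrow> (\<And>a. a \<in> A \<Longrightarrow> f a \<in> carrier R) \<Longrightarrow> (\<And>a. a \<in> A \<Longrightarrow> g a \<in> carrier R) \<Longrightarrow>
   finsum R (\<lambda>a. f a \<ominus>\<^bsub>R\<^esub> g a) A = finsum R f A \<ominus>\<^bsub>R\<^esub> finsum R g A"
proof -
  assume a: "finite A" "\<And>a. a \<in> A \<Longrightarrow> f a \<in> carrier R" "\<And>a. a \<in> A \<Longrightarrow> g a \<in> carrier R"
  have "finsum R (\<lambda>a. f a \<ominus>\<^bsub>R\<^esub> g a) A = finsum R (\<lambda>a. f a \<oplus>\<^bsub>R\<^esub> \<ominus>\<^bsub>R\<^esub> g a) A"
    by (simp add: R.minus_eq)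
  also have "\<dots> = finsum R f A \<oplus>\<^bsub>R\<^esub> finsum R (\<lambda>a. \<ominus>\<^bsub>R\<^esub> g a) A"
    using a by (intro R.finsum_addf) auto
  also have "\<dots> = finsum R f A \<ominus>\<^bsub>R\<^esub> finsum R g A" using a fs_neg[of A g] by (simp add: R.minus_eq)
  finally show ?thesis .
qed

lemma foldr_fs: "distinct xs \<Longrightarrow> (\<And>i. i \<in> set xs \<Longrightarrow> f i \<in> carrier R) \<Longrightarrow>
  foldr (add R) (map f xs) \<zero>\<^bsub>R\<^esub> = finsum R f (set xs)"
proof (induction xs)
  case Nil thus ?case by simp
next
  case (Cons a xs)
  thus ?case by (simp add: R.finsum_insert Pi_def)
qed

lemma foldr_span: "(\<And>i. i \<le> n \<Longrightarrow> f i \<in> carrier R) \<Longrightarrow>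
   foldr (add R) (map f [0..<Suc n]) \<zero>\<^bsub>R\<^esub> = finsum R f {..n}"
proof -
  assume a: "\<And>i. i \<le> n \<Longrightarrow> f i \<in> carrier R"
  have s: "set [0..<Suc n] = {..n}" by auto
  show ?thesis unfolding s[symmetric] by (rule foldr_fs) (use a s in auto)
qed

end

context padic begin

definition Pq :: "qp set \<Rightarrow> bool" where
  "Pq S \<longleftrightarrow> S \<subseteq> carrier R \<and> (\<forall>x\<in>S. \<exists>r>0. \<forall>y\<in>carrier R. nrm (y \<ominus>\<^bsub>R\<^esub> x) < r \<longrightarrow> y \<in> S)"

lemma istop_Pq: "istopology Pq"
  unfolding istopology_def
proof (intro conjI allI impI)
  fix S T assume S: "Pq S" and T: "Pq T"
  show "Pq (S \<inter> T)" unfolding Pq_def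
  proof (intro conjI ballI)
    show "S \<inter> T \<subseteq> carrier R" using S unfolding Pq_def by blast
    fix x assume x: "x \<in> S \<inter> T"
    obtain r1 where r1: "r1 > 0" "\<forall>y\<in>carrier R. nrm (y \<ominus>\<^bsub>R\<^esub> x) < r1 \<longrightarrow> y \<in> S"
      using S x unfolding Pq_def by blast
    obtain r2 where r2: "r2 > 0" "\<forall>y\<in>carrier R. nrm (y \<ominus>\<^bsub>R\<^esub> x) < r2 \<longrightarrow> y \<in> T"
      using T x unfolding Pq_def by blast
    show "\<exists>r>0. \<forall>y\<in>carrier R. nrm (y \<ominus>\<^bsub>R\<^esub> x) < r \<longrightarrow> y \<in> S \<inter> T"
      using r1 r2 by (intro exI[of _ "min r1 r2"]) auto
  qed
next
  fix K assume K: "\<forall>K\<in>K. Pq K"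
  show "Pq (\<Union>K)" unfolding Pq_def
  proof (intro conjI ballI)
    show "\<Union>K \<subseteq> carrier R" using K unfolding Pq_def by blast
    fix x assume "x \<in> \<Union>K"
    then obtain S where S: "S \<in> K" "x \<in> S" by blast
    obtain r where r: "r > 0" "\<forall>y\<in>carrier R. nrm (y \<ominus>\<^bsub>R\<^esub> x) < r \<longrightarrow> y \<in> S"
      using K S unfolding Pq_def by blast
    show "\<exists>r>0. \<forall>y\<in>carrier R. nrm (y \<ominus>\<^bsub>R\<^esub> x) < r \<longrightarrow> y \<in> \<Union>K"
      using r S by blast
  qed
qed

lemma qp_top_eq: "qp_top p = topology Pq"
proof -
  have "(\<lambda>S. S \<subseteq> Qp p \<and> (\<forall>x\<in>S. \<exists>r>0. \<forall>y\<in>Qp p. qp_norm p (qp_sub p y x) < r \<longrightarrow> y \<in> S)) = Pq"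
  proof
    fix S
    show "(S \<subseteq> Qp p \<and> (\<forall>x\<in>S. \<exists>r>0. \<forall>y\<in>Qp p. qp_norm p (qp_sub p y x) < r \<longrightarrow> y \<in> S)) = Pq S"
      unfolding Pq_def
    proof (cases "S \<subseteq> carrier R")
      case True
      have "\<And>x y. x \<in> S \<Longrightarrow> y \<in> carrier R \<Longrightarrow> qp_sub p y x = y \<ominus>\<^bsub>R\<^esub> x" using True by auto
      thus "(S \<subseteq> Qp p \<and> (\<forall>x\<in>S. \<exists>r>0. \<forall>y\<in>Qp p. qp_norm p (qp_sub p y x) < r \<longrightarrow> y \<in> S)) =
        (S \<subseteq> carrier R \<and> (\<forall>x\<in>S. \<exists>r>0. \<forall>y\<in>carrier R. nrm (y \<ominus>\<^bsub>R\<^esub> x) < r \<longrightarrow> y \<in> S))"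
        using True by simp
    qed simp
  qed
  thus ?thesis unfolding qp_top_def by simp
qed

lemma qp_open: "openin (qp_top p) S \<longleftrightarrow> Pq S"
  unfolding qp_top_eq using istop_Pq by simp

lemma qp_topspace[simp]: "topspace (qp_top p) = carrier R"
proof -
  have "Pq (carrier R)" unfolding Pq_def by (auto intro: exI[of _ 1])
  hence "openin (qp_top p) (carrier R)" using qp_open by simp
  hence "carrier R \<subseteq> topspace (qp_top p)" by (rule openin_subset)
  moreover have "topspace (qp_top p) \<subseteq> carrier R"
    using qp_open[of "topspace (qp_top p)"] unfolding Pq_def by simp
  ultimately show ?thesis by blast
qed

lemma sub_self[simp]: "x \<in> carrier R \<Longrightarrow> x \<ominus>\<^bsub>R\<^esub> x = \<zero>\<^bsub>R\<^esub>"
  by (simp add: R.minus_eq R.r_neg)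

lemma sub_split: "x \<in> carrier R \<Longrightarrow> y \<in> carrier R \<Longrightarrow> z \<in> carrier R \<Longrightarrow>
  y \<ominus>\<^bsub>R\<^esub> z = (y \<ominus>\<^bsub>R\<^esub> x) \<oplus>\<^bsub>R\<^esub> (x \<ominus>\<^bsub>R\<^esub> z)"
  by algebra

lemma ball_open: assumes "c \<in> carrier R" shows "openin (qp_top p) {y \<in> carrier R. nrm (y \<ominus>\<^bsub>R\<^esub> c) < r}"
  unfolding qp_open Pq_def
proof (intro conjI ballI)
  fix x assume x: "x \<in> {y \<in> carrier R. nrm (y \<ominus>\<^bsub>R\<^esub> c) < r}"
  show "\<exists>s>0. \<forall>y\<in>carrier R. nrm (y \<ominus>\<^bsub>R\<^esub> x) < s \<longrightarrow> y \<in> {y \<in> carrier R. nrm (y \<ominus>\<^bsub>R\<^esub> c) < r}"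
  proof (intro exI[of _ r] conjI ballI impI)
    have "x \<ominus>\<^bsub>R\<^esub> c \<in> carrier R" using x assms by (simp add: R.minus_closed)
    moreover have "nrm (x \<ominus>\<^bsub>R\<^esub> c) < r" using x by simp
    ultimately show "r > 0" using nrm_nonneg[of "x \<ominus>\<^bsub>R\<^esub> c"] by linarith
    fix y assume y: "y \<in> carrier R" "nrm (y \<ominus>\<^bsub>R\<^esub> x) < r"
    have "nrm (y \<ominus>\<^bsub>R\<^esub> c) \<le> max (nrm (y \<ominus>\<^bsub>R\<^esub> x)) (nrm (x \<ominus>\<^bsub>R\<^esub> c))"
      using sub_split[of x y c] nrm_ultra[of "y \<ominus>\<^bsub>R\<^esub> x" "x \<ominus>\<^bsub>R\<^esub> c"] x y assms by simp
    thus "y \<in> {y \<in> carrier R. nrm (y \<ominus>\<^bsub>R\<^esub> c) < r}" using x y by auto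
  qed
qed auto

lemma big_open: "openin (qp_top p) {y \<in> carrier R. nrm y > 1}"
  unfolding qp_open Pq_def
proof (intro conjI ballI)
  fix x assume x: "x \<in> {y \<in> carrier R. nrm y > 1}"
  show "\<exists>s>0. \<forall>y\<in>carrier R. nrm (y \<ominus>\<^bsub>R\<^esub> x) < s \<longrightarrow> y \<in> {y \<in> carrier R. nrm y > 1}"
  proof (intro exI[of _ 1] conjI ballI impI)
    fix y assume y: "y \<in> carrier R" "nrm (y \<ominus>\<^bsub>R\<^esub> x) < 1"
    have xc: "x \<in> carrier R" using x by simp
    have e: "x = \<ominus>\<^bsub>R\<^esub> (y \<ominus>\<^bsub>R\<^esub> x) \<oplus>\<^bsub>R\<^esub> y" using xc y(1) by algebra
    have "nrm x \<le> max (nrm (\<ominus>\<^bsub>R\<^esub> (y \<ominus>\<^bsub>R\<^esub> x))) (nrm y)"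
      using nrm_ultra[of "\<ominus>\<^bsub>R\<^esub> (y \<ominus>\<^bsub>R\<^esub> x)" y] x y e by simp
    hence "nrm x \<le> max (nrm (y \<ominus>\<^bsub>R\<^esub> x)) (nrm y)" using x y by simp
    thus "y \<in> {y \<in> carrier R. nrm y > 1}" using x y by auto
  qed simp
qed auto

lemma cont_qpI:
  assumes "\<And>x. x \<in> topspace X \<Longrightarrow> h x \<in> carrier R"
    and "\<And>x r. x \<in> topspace X \<Longrightarrow> r > 0 \<Longrightarrow> \<exists>U. openin X U \<and> x \<in> U \<and> (\<forall>y\<in>U. nrm (h y \<ominus>\<^bsub>R\<^esub> h x) < r)"
  shows "continuous_map X (qp_top p) h"
  unfolding continuous_map_def
proof (intro conjI allI impI)
  show "h \<in> topspace X \<rightarrow> topspace (qp_top p)" using assms(1) by simp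
  fix U assume U: "openin (qp_top p) U"
  show "openin X {x \<in> topspace X. h x \<in> U}"
  proof (subst openin_subopen, intro ballI)
    fix x assume x: "x \<in> {x \<in> topspace X. h x \<in> U}"
    hence xt: "x \<in> topspace X" and xU: "h x \<in> U" by simp_all
    have "Pq U" using U qp_open by simp
    then obtain r where r: "r > 0" "\<And>y. y \<in> carrier R \<Longrightarrow> nrm (y \<ominus>\<^bsub>R\<^esub> h x) < r \<Longrightarrow> y \<in> U"
      using xU unfolding Pq_def by metis
    obtain V where V: "openin X V" "x \<in> V" "\<And>y. y \<in> V \<Longrightarrow> nrm (h y \<ominus>\<^bsub>R\<^esub> h x) < r"
      using assms(2)[OF xt r(1)] by metis
    have "V \<subseteq> {x \<in> topspace X. h x \<in> U}"
    proof
      fix y assume y: "y \<in> V"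
      hence yt: "y \<in> topspace X" using openin_subset[OF V(1)] by blast
      have "h y \<in> U" by (rule r(2)[OF assms(1)[OF yt] V(3)[OF y]])
      thus "y \<in> {x \<in> topspace X. h x \<in> U}" using yt by simp
    qed
    thus "\<exists>T. openin X T \<and> x \<in> T \<and> T \<subseteq> {x \<in> topspace X. h x \<in> U}" using V(1,2) by blast
  qed
qed

lemma cont_qp_carrier: "continuous_map X (qp_top p) h \<Longrightarrow> x \<in> topspace X \<Longrightarrow> h x \<in> carrier R"
  using continuous_map_image_subset_topspace[of X "qp_top p" h] by (simp add: image_subset_iff)

lemma cont_qpD:
  assumes "continuous_map X (qp_top p) h" "x \<in> topspace X" "r > 0"
  shows "\<exists>U. openin X U \<and> x \<in> U \<and> (\<forall>y\<in>U. nrm (h y \<ominus>\<^bsub>R\<^esub> h x) < r)"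
proof -
  have hx: "h x \<in> carrier R" by (rule cont_qp_carrier[OF assms(1,2)])
  let ?U = "{y \<in> topspace X. h y \<in> {z \<in> carrier R. nrm (z \<ominus>\<^bsub>R\<^esub> h x) < r}}"
  have "openin X ?U" by (rule openin_continuous_map_preimage[OF assms(1) ball_open[OF hx]])
  moreover have "x \<in> ?U" using assms hx by simp
  ultimately show ?thesis by blast
qed

lemma cont_const: "c \<in> carrier R \<Longrightarrow> continuous_map X (qp_top p) (\<lambda>x. c)"
  by (rule cont_qpI) (auto intro!: exI[of _ "topspace X"])

lemma two_nbhd:
  assumes "continuous_map X (qp_top p) h1" "continuous_map X (qp_top p) h2" "x \<in> topspace X" "r1 > 0" "r2 > 0"
  obtains U where "openin X U" "x \<in> U" "\<And>y. y \<in> U \<Longrightarrow> nrm (h1 y \<ominus>\<^bsub>R\<^esub> h1 x) < r1"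
    "\<And>y. y \<in> U \<Longrightarrow> nrm (h2 y \<ominus>\<^bsub>R\<^esub> h2 x) < r2" "\<And>y. y \<in> U \<Longrightarrow> y \<in> topspace X"
proof -
  obtain U1 where U1: "openin X U1" "x \<in> U1" "\<forall>y\<in>U1. nrm (h1 y \<ominus>\<^bsub>R\<^esub> h1 x) < r1"
    using cont_qpD[OF assms(1,3,4)] by blast
  obtain U2 where U2: "openin X U2" "x \<in> U2" "\<forall>y\<in>U2. nrm (h2 y \<ominus>\<^bsub>R\<^esub> h2 x) < r2"
    using cont_qpD[OF assms(2,3,5)] by blast
  show ?thesis
  proof (rule that[of "U1 \<inter> U2"])
    show "openin X (U1 \<inter> U2)" using U1(1) U2(1) by (rule openin_Int)
    show "x \<in> U1 \<inter> U2" using U1(2) U2(2) by simp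
    fix y assume y: "y \<in> U1 \<inter> U2"
    show "nrm (h1 y \<ominus>\<^bsub>R\<^esub> h1 x) < r1" using U1(3) y by simp
    show "nrm (h2 y \<ominus>\<^bsub>R\<^esub> h2 x) < r2" using U2(3) y by simp
    show "y \<in> topspace X" using openin_subset[OF U1(1)] y by blast
  qed
qed

lemma cont_add:
  assumes "continuous_map X (qp_top p) h1" "continuous_map X (qp_top p) h2"
  shows "continuous_map X (qp_top p) (\<lambda>x. h1 x \<oplus>\<^bsub>R\<^esub> h2 x)"
proof (rule cont_qpI)
  fix x assume x: "x \<in> topspace X" thus "h1 x \<oplus>\<^bsub>R\<^esub> h2 x \<in> carrier R"
    using cont_qp_carrier[OF assms(1) x] cont_qp_carrier[OF assms(2) x] by simp
next
  fix x and r :: real assume x: "x \<in> topspace X" and r: "r > 0"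
  obtain U where U: "openin X U" "x \<in> U" "\<And>y. y \<in> U \<Longrightarrow> nrm (h1 y \<ominus>\<^bsub>R\<^esub> h1 x) < r"
    "\<And>y. y \<in> U \<Longrightarrow> nrm (h2 y \<ominus>\<^bsub>R\<^esub> h2 x) < r" "\<And>y. y \<in> U \<Longrightarrow> y \<in> topspace X"
    using two_nbhd[OF assms x r r] by blast
  have "nrm ((h1 y \<oplus>\<^bsub>R\<^esub> h2 y) \<ominus>\<^bsub>R\<^esub> (h1 x \<oplus>\<^bsub>R\<^esub> h2 x)) < r" if y: "y \<in> U" for y
  proof -
    have c: "h1 y \<in> carrier R" "h2 y \<in> carrier R" "h1 x \<in> carrier R" "h2 x \<in> carrier R"
      using cont_qp_carrier[OF assms(1) U(5)[OF y]] cont_qp_carrier[OF assms(2) U(5)[OF y]]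
        cont_qp_carrier[OF assms(1) x] cont_qp_carrier[OF assms(2) x] by simp_all
    have e: "(h1 y \<oplus>\<^bsub>R\<^esub> h2 y) \<ominus>\<^bsub>R\<^esub> (h1 x \<oplus>\<^bsub>R\<^esub> h2 x) = (h1 y \<ominus>\<^bsub>R\<^esub> h1 x) \<oplus>\<^bsub>R\<^esub> (h2 y \<ominus>\<^bsub>R\<^esub> h2 x)"
      using c by algebra
    show ?thesis unfolding e using nrm_ultra[of "h1 y \<ominus>\<^bsub>R\<^esub> h1 x" "h2 y \<ominus>\<^bsub>R\<^esub> h2 x"] c U(3,4)[OF y] by simp
  qed
  thus "\<exists>U. openin X U \<and> x \<in> U \<and> (\<forall>y\<in>U. nrm ((h1 y \<oplus>\<^bsub>R\<^esub> h2 y) \<ominus>\<^bsub>R\<^esub> (h1 x \<oplus>\<^bsub>R\<^esub> h2 x)) < r)"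
    using U by blast
qed

lemma cont_sub:
  assumes "continuous_map X (qp_top p) h1" "continuous_map X (qp_top p) h2"
  shows "continuous_map X (qp_top p) (\<lambda>x. h1 x \<ominus>\<^bsub>R\<^esub> h2 x)"
proof (rule cont_qpI)
  fix x assume x: "x \<in> topspace X" thus "h1 x \<ominus>\<^bsub>R\<^esub> h2 x \<in> carrier R"
    using cont_qp_carrier[OF assms(1) x] cont_qp_carrier[OF assms(2) x] by (simp add: R.minus_closed)
next
  fix x and r :: real assume x: "x \<in> topspace X" and r: "r > 0"
  obtain U where U: "openin X U" "x \<in> U" "\<And>y. y \<in> U \<Longrightarrow> nrm (h1 y \<ominus>\<^bsub>R\<^esub> h1 x) < r"
    "\<And>y. y \<in> U \<Longrightarrow> nrm (h2 y \<ominus>\<^bsub>R\<^esub> h2 x) < r" "\<And>y. y \<in> U \<Longrightarrow> y \<in> topspace X"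
    using two_nbhd[OF assms x r r] by blast
  have "nrm ((h1 y \<ominus>\<^bsub>R\<^esub> h2 y) \<ominus>\<^bsub>R\<^esub> (h1 x \<ominus>\<^bsub>R\<^esub> h2 x)) < r" if y: "y \<in> U" for y
  proof -
    have c: "h1 y \<in> carrier R" "h2 y \<in> carrier R" "h1 x \<in> carrier R" "h2 x \<in> carrier R"
      using cont_qp_carrier[OF assms(1) U(5)[OF y]] cont_qp_carrier[OF assms(2) U(5)[OF y]]
        cont_qp_carrier[OF assms(1) x] cont_qp_carrier[OF assms(2) x] by simp_all
    have e: "(h1 y \<ominus>\<^bsub>R\<^esub> h2 y) \<ominus>\<^bsub>R\<^esub> (h1 x \<ominus>\<^bsub>R\<^esub> h2 x) = (h1 y \<ominus>\<^bsub>R\<^esub> h1 x) \<ominus>\<^bsub>R\<^esub> (h2 y \<ominus>\<^bsub>R\<^esub> h2 x)"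
      using c by algebra
    show ?thesis unfolding e using nrm_sub[of "h1 y \<ominus>\<^bsub>R\<^esub> h1 x" "h2 y \<ominus>\<^bsub>R\<^esub> h2 x"] c U(3,4)[OF y] by simp
  qed
  thus "\<exists>U. openin X U \<and> x \<in> U \<and> (\<forall>y\<in>U. nrm ((h1 y \<ominus>\<^bsub>R\<^esub> h2 y) \<ominus>\<^bsub>R\<^esub> (h1 x \<ominus>\<^bsub>R\<^esub> h2 x)) < r)"
    using U by blast
qed

lemma cont_mult:
  assumes "continuous_map X (qp_top p) h1" "continuous_map X (qp_top p) h2"
  shows "continuous_map X (qp_top p) (\<lambda>x. h1 x \<otimes>\<^bsub>R\<^esub> h2 x)"
proof (rule cont_qpI)
  fix x assume x: "x \<in> topspace X" thus "h1 x \<otimes>\<^bsub>R\<^esub> h2 x \<in> carrier R"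
    using cont_qp_carrier[OF assms(1) x] cont_qp_carrier[OF assms(2) x] by simp
next
  fix x and r :: real assume x: "x \<in> topspace X" and r: "r > 0"
  have cx: "h1 x \<in> carrier R" "h2 x \<in> carrier R"
    using cont_qp_carrier[OF assms(1) x] cont_qp_carrier[OF assms(2) x] by simp_all
  define M1 where "M1 = nrm (h1 x) + 1"
  define M2 where "M2 = nrm (h2 x) + 1"
  have M: "M1 > 0" "M2 > 0" "nrm (h1 x) < M1" "nrm (h2 x) < M2" using cx by (simp_all add: M1_def M2_def add_nonneg_pos)
  have r1: "min 1 (r / M2) > 0" and r2: "r / M1 > 0" using M r by auto
  obtain U where U: "openin X U" "x \<in> U" "\<And>y. y \<in> U \<Longrightarrow> nrm (h1 y \<ominus>\<^bsub>R\<^esub> h1 x) < min 1 (r / M2)"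
    "\<And>y. y \<in> U \<Longrightarrow> nrm (h2 y \<ominus>\<^bsub>R\<^esub> h2 x) < r / M1" "\<And>y. y \<in> U \<Longrightarrow> y \<in> topspace X"
    using two_nbhd[OF assms x r1 r2] by blast
  have "nrm ((h1 y \<otimes>\<^bsub>R\<^esub> h2 y) \<ominus>\<^bsub>R\<^esub> (h1 x \<otimes>\<^bsub>R\<^esub> h2 x)) < r" if y: "y \<in> U" for y
  proof -
    have c: "h1 y \<in> carrier R" "h2 y \<in> carrier R"
      using cont_qp_carrier[OF assms(1) U(5)[OF y]] cont_qp_carrier[OF assms(2) U(5)[OF y]] by simp_all
    note c = c cx
    let ?a = "h1 y" and ?b = "h2 y" and ?c = "h1 x" and ?d = "h2 x"
    have e: "(?a \<otimes>\<^bsub>R\<^esub> ?b) \<ominus>\<^bsub>R\<^esub> (?c \<otimes>\<^bsub>R\<^esub> ?d) = ?a \<otimes>\<^bsub>R\<^esub> (?b \<ominus>\<^bsub>R\<^esub> ?d) \<oplus>\<^bsub>R\<^esub> (?a \<ominus>\<^bsub>R\<^esub> ?c) \<otimes>\<^bsub>R\<^esub> ?d"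
      using c by algebra
    have e2: "?a = (?a \<ominus>\<^bsub>R\<^esub> ?c) \<oplus>\<^bsub>R\<^esub> ?c" using c by algebra
    have "nrm ?a \<le> max (nrm (?a \<ominus>\<^bsub>R\<^esub> ?c)) (nrm ?c)"
      using nrm_ultra[of "?a \<ominus>\<^bsub>R\<^esub> ?c" ?c] c e2 by simp
    moreover have "nrm (?a \<ominus>\<^bsub>R\<^esub> ?c) < 1" using U(3)[OF y] by simp
    ultimately have na: "nrm ?a \<le> M1" unfolding M1_def using nrm_nonneg[OF cx(1)] by (simp add: max_def split: if_split_asm)
    have t1: "nrm (?a \<otimes>\<^bsub>R\<^esub> (?b \<ominus>\<^bsub>R\<^esub> ?d)) < r"
    proof -
      have "nrm (?a \<otimes>\<^bsub>R\<^esub> (?b \<ominus>\<^bsub>R\<^esub> ?d)) = nrm ?a * nrm (?b \<ominus>\<^bsub>R\<^esub> ?d)" using c nrm_mult by simp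
      also have "\<dots> \<le> M1 * nrm (?b \<ominus>\<^bsub>R\<^esub> ?d)" using na c by (intro mult_right_mono) simp_all
      also have "\<dots> < M1 * (r / M1)" using U(4)[OF y] M by (intro mult_strict_left_mono) simp_all
      also have "\<dots> = r" using M by simp
      finally show ?thesis .
    qed
    have t2: "nrm ((?a \<ominus>\<^bsub>R\<^esub> ?c) \<otimes>\<^bsub>R\<^esub> ?d) < r"
    proof -
      have "nrm ((?a \<ominus>\<^bsub>R\<^esub> ?c) \<otimes>\<^bsub>R\<^esub> ?d) = nrm (?a \<ominus>\<^bsub>R\<^esub> ?c) * nrm ?d" using c nrm_mult by simp
      also have "\<dots> \<le> nrm (?a \<ominus>\<^bsub>R\<^esub> ?c) * M2" using M c by (intro mult_left_mono) simp_all
      also have "\<dots> < (r / M2) * M2" using U(3)[OF y] M by (intro mult_strict_right_mono) simp_all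
      also have "\<dots> = r" using M by simp
      finally show ?thesis .
    qed
    show ?thesis unfolding e using nrm_ultra[of "?a \<otimes>\<^bsub>R\<^esub> (?b \<ominus>\<^bsub>R\<^esub> ?d)" "(?a \<ominus>\<^bsub>R\<^esub> ?c) \<otimes>\<^bsub>R\<^esub> ?d"] c t1 t2
      by simp
  qed
  thus "\<exists>U. openin X U \<and> x \<in> U \<and> (\<forall>y\<in>U. nrm ((h1 y \<otimes>\<^bsub>R\<^esub> h2 y) \<ominus>\<^bsub>R\<^esub> (h1 x \<otimes>\<^bsub>R\<^esub> h2 x)) < r)"
    using U by blast
qed

lemma cont_finsum:
  assumes "finite K" "\<And>k. k \<in> K \<Longrightarrow> continuous_map X (qp_top p) (g k)"
  shows "continuous_map X (qp_top p) (\<lambda>x. finsum R (\<lambda>k. g k x) K)"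
  using assms
proof (induction K rule: finite_induct)
  case empty thus ?case by (simp add: cont_const)
next
  case (insert a K)
  have c: "continuous_map X (qp_top p) (\<lambda>x. g a x \<oplus>\<^bsub>R\<^esub> finsum R (\<lambda>k. g k x) K)"
    using insert by (intro cont_add) auto
  have eq:  "x \<in> topspace X \<Longrightarrow> finsum R (\<lambda>k. g k x) (insert a K) = g a x \<oplus>\<^bsub>R\<^esub> finsum R (\<lambda>k. g k x) K" for x
  proof -
    assume x: "x \<in> topspace X"
    have "g k x \<in> carrier R" if "k \<in> insert a K" for k using cont_qp_carrier[OF insert.prems[OF that] x] .
    thus ?thesis using insert.hyps by (intro R.finsum_insert) auto
  qed
  show ?case by (rule continuous_map_eq[OF c]) (simp add: eq)
qed

end

context padic begin

lemma Zp_subset: "Zp p \<subseteq> carrier R" using Zp_carrier by blast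

lemma topspace_box: "topspace (box_top p P) = {\<xi>. \<forall>i. \<xi> i \<in> carrier R \<and> (i \<notin> P \<longrightarrow> \<xi> i \<in> Zp p)}"
proof -
  have "topspace (box_top p P) = (\<Pi>\<^sub>E i\<in>UNIV. topspace (if i \<in> P then qp_top p else subtopology (qp_top p) (Zp p)))"
    unfolding box_top_def by simp
  also have "\<dots> = {\<xi>. \<forall>i. \<xi> i \<in> carrier R \<and> (i \<notin> P \<longrightarrow> \<xi> i \<in> Zp p)}"
  proof -
    have "\<And>i. topspace (if i \<in> P then qp_top p else subtopology (qp_top p) (Zp p)) = (if i \<in> P then carrier R else Zp p)"
      using Zp_subset by auto
    moreover have "(\<forall>i. \<xi> i \<in> (if i \<in> P then carrier R else Zp p)) \<longleftrightarrow> (\<forall>i. \<xi> i \<in> carrier R \<and> (i \<notin> P \<longrightarrow> \<xi> i \<in> Zp p))" for \<xi>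
      using Zp_carrier by (metis (full_types))
    ultimately show ?thesis by (auto simp: PiE_def Pi_def)
  qed
  finally show ?thesis .
qed

lemma QpN_eq: "QpN p = {\<xi>. (\<forall>i. \<xi> i \<in> carrier R) \<and> finite {i. nrm (\<xi> i) > 1}}"
  unfolding QpN_def by simp

lemma box_QpN: "finite P \<Longrightarrow> \<xi> \<in> topspace (box_top p P) \<Longrightarrow> \<xi> \<in> QpN p"
proof -
  assume P: "finite P" and x: "\<xi> \<in> topspace (box_top p P)"
  have "{i. nrm (\<xi> i) > 1} \<subseteq> P" using x unfolding topspace_box Zp_iff by force
  hence "finite {i. nrm (\<xi> i) > 1}" using P finite_subset by blast
  thus ?thesis using x unfolding QpN_eq topspace_box by simp
qed

lemma QpN_box: "\<xi> \<in> QpN p \<Longrightarrow> \<xi> \<in> topspace (box_top p {i. nrm (\<xi> i) > 1}) \<and> finite {i. nrm (\<xi> i) > 1}"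
  unfolding QpN_eq topspace_box Zp_iff by force

definition Ptau :: "qpseq set \<Rightarrow> bool" where
  "Ptau A \<longleftrightarrow> A \<subseteq> QpN p \<and> (\<forall>P. finite P \<longrightarrow> openin (box_top p P) (A \<inter> topspace (box_top p P)))"

lemma PtauD: "Ptau A \<Longrightarrow> finite P \<Longrightarrow> openin (box_top p P) (A \<inter> topspace (box_top p P))"
  unfolding Ptau_def by simp

lemma istop_tau: "istopology Ptau"
  unfolding istopology_def
proof (intro conjI allI impI)
  fix S T assume S: "Ptau S" and T: "Ptau T"
  show "Ptau (S \<inter> T)" unfolding Ptau_def
  proof (intro conjI allI impI)
    show "S \<inter> T \<subseteq> QpN p" using S unfolding Ptau_def by blast
    fix P :: "nat set" assume P: "finite P"
    have "openin (box_top p P) ((S \<inter> topspace (box_top p P)) \<inter> (T \<inter> topspace (box_top p P)))"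
      using PtauD[OF S P] PtauD[OF T P] by (rule openin_Int)
    moreover have "(S \<inter> topspace (box_top p P)) \<inter> (T \<inter> topspace (box_top p P)) = S \<inter> T \<inter> topspace (box_top p P)"
      by blast
    ultimately show "openin (box_top p P) (S \<inter> T \<inter> topspace (box_top p P))" by simp
  qed
next
  fix K assume K: "\<forall>K\<in>K. Ptau K"
  show "Ptau (\<Union>K)" unfolding Ptau_def
  proof (intro conjI allI impI)
    show "\<Union>K \<subseteq> QpN p" using K unfolding Ptau_def by blast
    fix P :: "nat set" assume P: "finite P"
    have "openin (box_top p P) (\<Union>((\<lambda>A. A \<inter> topspace (box_top p P)) ` K))"
      using K P PtauD by (intro openin_Union) auto
    moreover have "\<Union>((\<lambda>A. A \<inter> topspace (box_top p P)) ` K) = \<Union>K \<inter> topspace (box_top p P)" by blast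
    ultimately show "openin (box_top p P) (\<Union>K \<inter> topspace (box_top p P))" by simp
  qed
qed

lemma tau_open: "openin (tau p) A \<longleftrightarrow> Ptau A"
proof -
  have "tau p = topology Ptau" unfolding tau_def Ptau_def ..
  thus ?thesis using istop_tau by simp
qed

lemma topspace_tau[simp]: "topspace (tau p) = QpN p"
proof -
  have "Ptau (QpN p)" unfolding Ptau_def
  proof (intro conjI allI impI)
    fix P :: "nat set" assume P: "finite P"
    have "QpN p \<inter> topspace (box_top p P) = topspace (box_top p P)" using box_QpN[OF P] by blast
    thus "openin (box_top p P) (QpN p \<inter> topspace (box_top p P))" by simp
  qed simp
  hence "QpN p \<subseteq> topspace (tau p)" using tau_open openin_subset by blast
  moreover have "topspace (tau p) \<subseteq> QpN p" using tau_open[of "topspace (tau p)"] unfolding Ptau_def by simp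
  ultimately show ?thesis by blast
qed

lemma proj_cont: "continuous_map (box_top p P) (qp_top p) (\<lambda>\<xi>. \<xi> j)"
proof -
  have "continuous_map (box_top p P) (if j \<in> P then qp_top p else subtopology (qp_top p) (Zp p)) (\<lambda>\<xi>. \<xi> j)"
    unfolding box_top_def by (rule continuous_map_product_projection) simp
  thus ?thesis by (cases "j \<in> P") (auto dest: continuous_map_into_fulltopology)
qed

lemma coord_open: assumes "openin (qp_top p) Ob" shows "openin (tau p) {\<eta> \<in> QpN p. \<eta> j \<in> Ob}"
  unfolding tau_open Ptau_def
proof (intro conjI allI impI)
  fix P :: "nat set" assume P: "finite P"
  have "openin (box_top p P) {\<xi> \<in> topspace (box_top p P). \<xi> j \<in> Ob}"
    by (rule openin_continuous_map_preimage[OF proj_cont assms])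
  moreover have "{\<xi> \<in> topspace (box_top p P). \<xi> j \<in> Ob} = {\<eta> \<in> QpN p. \<eta> j \<in> Ob} \<inter> topspace (box_top p P)"
    using box_QpN[OF P] by blast
  ultimately show "openin (box_top p P) ({\<eta> \<in> QpN p. \<eta> j \<in> Ob} \<inter> topspace (box_top p P))" by simp
qed blast

lemma big_coord_open: "openin (tau p) {\<eta> \<in> QpN p. nrm (\<eta> j) > 1}"
proof -
  have "{\<eta> \<in> QpN p. nrm (\<eta> j) > 1} = {\<eta> \<in> QpN p. \<eta> j \<in> {y \<in> carrier R. nrm y > 1}}"
    unfolding QpN_eq by blast
  thus ?thesis using coord_open[OF big_open] by simp
qed

lemma tau_contI:
  assumes "\<And>P. finite P \<Longrightarrow> \<exists>P'. finite P' \<and> (\<forall>\<xi> \<in> topspace (box_top p P). T \<xi> \<in> topspace (box_top p P'))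
              \<and> (\<forall>i. continuous_map (box_top p P) (qp_top p) (\<lambda>\<xi>. T \<xi> i))"
  shows "continuous_map (tau p) (tau p) T"
  unfolding continuous_map_def
proof (intro conjI allI impI)
  show "T \<in> topspace (tau p) \<rightarrow> topspace (tau p)"
  proof
    fix \<xi> assume "\<xi> \<in> topspace (tau p)"
    hence x: "\<xi> \<in> topspace (box_top p {i. nrm (\<xi> i) > 1})" "finite {i. nrm (\<xi> i) > 1}" using QpN_box by auto
    obtain P' where "finite P'" "\<forall>\<xi> \<in> topspace (box_top p {i. nrm (\<xi> i) > 1}). T \<xi> \<in> topspace (box_top p P')"
      using assms[OF x(2)] by blast
    thus "T \<xi> \<in> topspace (tau p)" using x(1) box_QpN by auto
  qed
  fix A assume A: "openin (tau p) A"
  show "openin (tau p) {x \<in> topspace (tau p). T x \<in> A}"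
    unfolding tau_open Ptau_def
  proof (intro conjI allI impI)
    show "{x \<in> topspace (tau p). T x \<in> A} \<subseteq> QpN p" by auto
    fix P :: "nat set" assume P: "finite P"
    obtain P' where P': "finite P'" "\<forall>\<xi> \<in> topspace (box_top p P). T \<xi> \<in> topspace (box_top p P')"
      "\<forall>i. continuous_map (box_top p P) (qp_top p) (\<lambda>\<xi>. T \<xi> i)"
      using assms[OF P] by blast
    have c: "continuous_map (box_top p P) (box_top p P') T"
      unfolding box_top_def[of p P'] continuous_map_componentwise_UNIV
    proof
      fix k
      show "continuous_map (box_top p P) (if k \<in> P' then qp_top p else subtopology (qp_top p) (Zp p)) (\<lambda>x. T x k)"
      proof (cases "k \<in> P'")
        case True thus ?thesis using P'(3) by simp
      next
        case False
        have "(\<lambda>x. T x k) \<in> topspace (box_top p P) \<rightarrow> Zp p"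
          using P'(2) False unfolding topspace_box[of P'] by blast
        thus ?thesis using False P'(3) by (simp add: continuous_map_in_subtopology)
      qed
    qed
    have "openin (box_top p P') (A \<inter> topspace (box_top p P'))" using A P' unfolding tau_open Ptau_def by blast
    hence "openin (box_top p P) {x \<in> topspace (box_top p P). T x \<in> A \<inter> topspace (box_top p P')}"
      by (rule openin_continuous_map_preimage[OF c])
    moreover have "{x \<in> topspace (box_top p P). T x \<in> A \<inter> topspace (box_top p P')} =
        {x \<in> topspace (tau p). T x \<in> A} \<inter> topspace (box_top p P)"
      using P'(2) box_QpN[OF P] by auto
    ultimately show "openin (box_top p P) ({x \<in> topspace (tau p). T x \<in> A} \<inter> topspace (box_top p P))" by simp
  qed
qed

lemma tau_cont_QpN: "continuous_map (tau p) (tau p) T \<Longrightarrow> \<xi> \<in> QpN p \<Longrightarrow> T \<xi> \<in> QpN p"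
  using continuous_map_image_subset_topspace[of "tau p" "tau p" T] by auto

lemma tau_cont_coord:
  assumes T: "continuous_map (tau p) (tau p) T" and P: "finite P"
  shows "continuous_map (box_top p P) (qp_top p) (\<lambda>\<xi>. T \<xi> j)"
  unfolding continuous_map_def
proof (intro conjI allI impI)
  show "(\<lambda>\<xi>. T \<xi> j) \<in> topspace (box_top p P) \<rightarrow> topspace (qp_top p)"
  proof
    fix \<xi> assume "\<xi> \<in> topspace (box_top p P)"
    hence "T \<xi> \<in> QpN p" using box_QpN[OF P] tau_cont_QpN[OF T] by blast
    thus "T \<xi> j \<in> topspace (qp_top p)" unfolding QpN_eq by simp
  qed
  fix Ob assume Ob: "openin (qp_top p) Ob"
  have "openin (tau p) {x \<in> topspace (tau p). T x \<in> {\<eta> \<in> QpN p. \<eta> j \<in> Ob}}"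
    by (rule openin_continuous_map_preimage[OF T coord_open[OF Ob]])
  hence "openin (box_top p P) ({x \<in> QpN p. T x \<in> {\<eta> \<in> QpN p. \<eta> j \<in> Ob}} \<inter> topspace (box_top p P))"
    using P unfolding tau_open Ptau_def by simp
  moreover have "{x \<in> QpN p. T x \<in> {\<eta> \<in> QpN p. \<eta> j \<in> Ob}} \<inter> topspace (box_top p P) = {\<xi> \<in> topspace (box_top p P). T \<xi> j \<in> Ob}"
    using box_QpN[OF P] tau_cont_QpN[OF T] by blast
  ultimately show "openin (box_top p P) {\<xi> \<in> topspace (box_top p P). T \<xi> j \<in> Ob}" by simp
qed

end

context padic begin

definition vec :: "qpseq \<Rightarrow> bool" where "vec \<xi> \<longleftrightarrow> (\<forall>i. \<xi> i \<in> carrier R)"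

lemma QpN_vec: "\<xi> \<in> QpN p \<Longrightarrow> \<xi> i \<in> carrier R" unfolding QpN_eq by simp

lemma seq_add_eq: "seq_add p \<xi> \<eta> = (\<lambda>i. \<xi> i \<oplus>\<^bsub>R\<^esub> \<eta> i)" unfolding seq_add_def by simp
lemma seq_smult_eq: "seq_smult p a \<xi> = (\<lambda>i. a \<otimes>\<^bsub>R\<^esub> \<xi> i)" unfolding seq_smult_def by simp
lemma seq_sub_eq: "vec \<xi> \<Longrightarrow> vec \<eta> \<Longrightarrow> seq_sub p \<xi> \<eta> = (\<lambda>i. \<xi> i \<ominus>\<^bsub>R\<^esub> \<eta> i)"
  unfolding seq_sub_def vec_def by simp
lemma delta_eq: "delta p i = (\<lambda>j. if j = i then \<one>\<^bsub>R\<^esub> else \<zero>\<^bsub>R\<^esub>)" unfolding delta_def to_R by (rule refl)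

lemma fin_QpN: assumes "\<And>i. \<xi> i \<in> carrier R" "\<And>i. i > N \<Longrightarrow> \<xi> i = \<zero>\<^bsub>R\<^esub>" shows "\<xi> \<in> QpN p"
proof -
  have "{i. nrm (\<xi> i) > 1} \<subseteq> {..N}"
  proof
    fix i assume i: "i \<in> {i. nrm (\<xi> i) > 1}"
    show "i \<in> {..N}"
    proof (rule ccontr)
      assume "i \<notin> {..N}"
      hence "\<xi> i = \<zero>\<^bsub>R\<^esub>" using assms(2) by simp
      thus False using i by simp
    qed
  qed
  hence "finite {i. nrm (\<xi> i) > 1}" using finite_subset by blast
  thus ?thesis unfolding QpN_eq using assms(1) by simp
qed

lemma QpN_add: "\<xi> \<in> QpN p \<Longrightarrow> \<eta> \<in> QpN p \<Longrightarrow> (\<lambda>i. \<xi> i \<oplus>\<^bsub>R\<^esub> \<eta> i) \<in> QpN p"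
proof -
  assume a: "\<xi> \<in> QpN p" "\<eta> \<in> QpN p"
  have "{i. nrm (\<xi> i \<oplus>\<^bsub>R\<^esub> \<eta> i) > 1} \<subseteq> {i. nrm (\<xi> i) > 1} \<union> {i. nrm (\<eta> i) > 1}"
  proof
    fix i assume "i \<in> {i. nrm (\<xi> i \<oplus>\<^bsub>R\<^esub> \<eta> i) > 1}"
    moreover have "nrm (\<xi> i \<oplus>\<^bsub>R\<^esub> \<eta> i) \<le> max (nrm (\<xi> i)) (nrm (\<eta> i))"
      using a QpN_vec nrm_ultra by blast
    ultimately show "i \<in> {i. nrm (\<xi> i) > 1} \<union> {i. nrm (\<eta> i) > 1}" by (auto simp: max_def split: if_splits)
  qed
  moreover have "finite ({i. nrm (\<xi> i) > 1} \<union> {i. nrm (\<eta> i) > 1})" using a unfolding QpN_eq by simp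
  ultimately have "finite {i. nrm (\<xi> i \<oplus>\<^bsub>R\<^esub> \<eta> i) > 1}" by (rule finite_subset)
  thus ?thesis unfolding QpN_eq using a QpN_vec by simp
qed

lemma QpN_smult: assumes "a \<in> Zp p" "\<xi> \<in> QpN p" shows "(\<lambda>i. a \<otimes>\<^bsub>R\<^esub> \<xi> i) \<in> QpN p"
proof -
  have a: "a \<in> carrier R" "nrm a \<le> 1" using assms(1) Zp_iff by auto
  have "{i. nrm (a \<otimes>\<^bsub>R\<^esub> \<xi> i) > 1} \<subseteq> {i. nrm (\<xi> i) > 1}"
  proof
    fix i assume i: "i \<in> {i. nrm (a \<otimes>\<^bsub>R\<^esub> \<xi> i) > 1}"
    have "nrm (a \<otimes>\<^bsub>R\<^esub> \<xi> i) = nrm a * nrm (\<xi> i)" using a assms QpN_vec nrm_mult by blast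
    moreover have "nrm a * nrm (\<xi> i) \<le> nrm (\<xi> i)" using a QpN_vec[OF assms(2)] nrm_nonneg
      by (simp add: mult_left_le_one_le)
    ultimately show "i \<in> {i. nrm (\<xi> i) > 1}" using i by auto
  qed
  moreover have "finite {i. nrm (\<xi> i) > 1}" using assms(2) unfolding QpN_eq by simp
  ultimately have "finite {i. nrm (a \<otimes>\<^bsub>R\<^esub> \<xi> i) > 1}" by (rule finite_subset)
  thus ?thesis unfolding QpN_eq using a assms QpN_vec by simp
qed

lemma QpN_neg: "\<xi> \<in> QpN p \<Longrightarrow> (\<lambda>i. \<ominus>\<^bsub>R\<^esub> \<xi> i) \<in> QpN p"
  unfolding QpN_eq by simp

lemma QpN_sub: "\<xi> \<in> QpN p \<Longrightarrow> \<eta> \<in> QpN p \<Longrightarrow> (\<lambda>i. \<xi> i \<ominus>\<^bsub>R\<^esub> \<eta> i) \<in> QpN p"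
  using QpN_add[of \<xi> "\<lambda>i. \<ominus>\<^bsub>R\<^esub> \<eta> i"] QpN_neg[of \<eta>] by (simp add: R.minus_eq)

lemma QpN_zero: "(\<lambda>i. \<zero>\<^bsub>R\<^esub>) \<in> QpN p" by (rule fin_QpN) auto

end

locale sd = padic +
  fixes e :: "qpseq \<Rightarrow> qpseq" and n :: nat
  assumes idem: "idempotent_op p e"
    and colZ: "\<forall>i>n. \<forall>j. qp_norm p (e (delta p i) j) \<le> 1"
begin

lemma e_QpN: "\<xi> \<in> QpN p \<Longrightarrow> e \<xi> \<in> QpN p"
  using idem unfolding idempotent_op_def bounded_ops_def zp_linear_def by blast
lemma e_add: "\<xi> \<in> QpN p \<Longrightarrow> \<eta> \<in> QpN p \<Longrightarrow> e (\<lambda>i. \<xi> i \<oplus>\<^bsub>R\<^esub> \<eta> i) = (\<lambda>i. e \<xi> i \<oplus>\<^bsub>R\<^esub> e \<eta> i)"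
  using idem unfolding idempotent_op_def bounded_ops_def zp_linear_def seq_add_eq by blast
lemma e_smult: "a \<in> Zp p \<Longrightarrow> \<xi> \<in> QpN p \<Longrightarrow> e (\<lambda>i. a \<otimes>\<^bsub>R\<^esub> \<xi> i) = (\<lambda>i. a \<otimes>\<^bsub>R\<^esub> e \<xi> i)"
  using idem unfolding idempotent_op_def bounded_ops_def zp_linear_def seq_smult_eq by blast
lemma e_cont: "continuous_map (tau p) (tau p) e"
  using idem unfolding idempotent_op_def bounded_ops_def by blast
lemma e_idem: "\<xi> \<in> QpN p \<Longrightarrow> e (e \<xi>) = e \<xi>"
  using idem unfolding idempotent_op_def by blast

lemma e_vec: "\<xi> \<in> QpN p \<Longrightarrow> e \<xi> j \<in> carrier R" using e_QpN QpN_vec by blast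

lemma e_sub: assumes "\<xi> \<in> QpN p" "\<eta> \<in> QpN p" shows "e (\<lambda>i. \<xi> i \<ominus>\<^bsub>R\<^esub> \<eta> i) = (\<lambda>i. e \<xi> i \<ominus>\<^bsub>R\<^esub> e \<eta> i)"
proof -
  have m1: "\<ominus>\<^bsub>R\<^esub> \<one>\<^bsub>R\<^esub> \<in> Zp p" using Zp_neg[OF Zp_one] .
  have s: "(\<lambda>i. \<ominus>\<^bsub>R\<^esub> \<one>\<^bsub>R\<^esub> \<otimes>\<^bsub>R\<^esub> \<eta> i) \<in> QpN p" by (rule QpN_smult[OF m1 assms(2)])
  have "(\<lambda>i. \<xi> i \<ominus>\<^bsub>R\<^esub> \<eta> i) = (\<lambda>i. \<xi> i \<oplus>\<^bsub>R\<^esub> (\<ominus>\<^bsub>R\<^esub> \<one>\<^bsub>R\<^esub> \<otimes>\<^bsub>R\<^esub> \<eta> i))"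
    using assms QpN_vec by (simp add: R.minus_eq R.l_minus)
  hence "e (\<lambda>i. \<xi> i \<ominus>\<^bsub>R\<^esub> \<eta> i) = (\<lambda>i. e \<xi> i \<oplus>\<^bsub>R\<^esub> (\<ominus>\<^bsub>R\<^esub> \<one>\<^bsub>R\<^esub> \<otimes>\<^bsub>R\<^esub> e \<eta> i))"
    using e_add[OF assms(1) s] e_smult[OF m1 assms(2)] by simp
  also have "\<dots> = (\<lambda>i. e \<xi> i \<ominus>\<^bsub>R\<^esub> e \<eta> i)"
    using assms e_vec by (simp add: R.minus_eq R.l_minus)
  finally show ?thesis .
qed

abbreviation col where "col i \<equiv> e (delta p i)"

lemma delta_QpN: "delta p i \<in> QpN p"
  unfolding delta_eq by (rule fin_QpN[of _ i]) auto

lemma col_vec: "col i j \<in> carrier R" using e_vec[OF delta_QpN] .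

lemma e_cdelta:
  assumes c: "c \<in> carrier R"
  shows "e (\<lambda>j. if j = i then c else \<zero>\<^bsub>R\<^esub>) = (\<lambda>j. c \<otimes>\<^bsub>R\<^esub> col i j)"
proof -
  let ?z = "\<lambda>j. if j = i then c else \<zero>\<^bsub>R\<^esub>"
  have zQ: "?z \<in> QpN p" by (rule fin_QpN[of _ i]) (auto simp: c)
  have zs: "?z = (\<lambda>j. c \<otimes>\<^bsub>R\<^esub> delta p i j)" unfolding delta_eq using c by (simp add: fun_eq_iff)
  show ?thesis
  proof (cases "nrm c \<le> 1")
    case True
    hence "c \<in> Zp p" using c Zp_iff by simp
    thus ?thesis unfolding zs using e_smult[OF _ delta_QpN] by simp
  next
    case False
    hence c0: "c \<noteq> \<zero>\<^bsub>R\<^esub>" by auto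
    define a where "a = inv\<^bsub>R\<^esub> c"
    have u: "c \<in> Units R" using c c0 R.field_Units by simp
    have a: "a \<in> carrier R" "a \<otimes>\<^bsub>R\<^esub> c = \<one>\<^bsub>R\<^esub>" "c \<otimes>\<^bsub>R\<^esub> a = \<one>\<^bsub>R\<^esub>" using u unfolding a_def by simp_all
    have "nrm a * nrm c = 1" using nrm_inv[OF c c0] unfolding a_def .
    hence "nrm a \<le> 1"
    proof -
      assume na: "nrm a * nrm c = 1"
      show "nrm a \<le> 1"
      proof (rule ccontr)
        assume "\<not> nrm a \<le> 1"
        hence "1 * 1 < nrm a * nrm c" using False by (intro mult_strict_mono) auto
        thus False using na by simp
      qed
    qed
    hence aZ: "a \<in> Zp p" using a Zp_iff by simp
    have "(\<lambda>j. a \<otimes>\<^bsub>R\<^esub> ?z j) = delta p i"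
      unfolding delta_eq using a by (simp add: fun_eq_iff)
    hence "col i = (\<lambda>j. a \<otimes>\<^bsub>R\<^esub> e ?z j)" using e_smult[OF aZ zQ] by simp
    hence "c \<otimes>\<^bsub>R\<^esub> col i j = e ?z j" for j
      using a c e_vec[OF zQ, of j] by (simp add: R.m_assoc[symmetric])
    thus ?thesis by auto
  qed
qed

lemma e_fin:
  "(\<And>i. \<zeta> i \<in> carrier R) \<Longrightarrow> (\<And>i. i > N \<Longrightarrow> \<zeta> i = \<zero>\<^bsub>R\<^esub>) \<Longrightarrow>
     e \<zeta> = (\<lambda>j. finsum R (\<lambda>i. \<zeta> i \<otimes>\<^bsub>R\<^esub> col i j) {..N})"
proof (induction N arbitrary: \<zeta>)
  case 0
  note pr = 0
  have "\<zeta> = (\<lambda>j. if j = 0 then \<zeta> 0 else \<zero>\<^bsub>R\<^esub>)"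
  proof
    fix j show "\<zeta> j = (if j = 0 then \<zeta> 0 else \<zero>\<^bsub>R\<^esub>)" using pr(2)[of j] by simp
  qed
  hence "e \<zeta> = (\<lambda>j. \<zeta> 0 \<otimes>\<^bsub>R\<^esub> col 0 j)" using e_cdelta[of "\<zeta> 0" 0] pr by simp
  thus ?case using pr col_vec by simp
next
  case (Suc N)
  let ?a = "\<lambda>j. if j = Suc N then \<zero>\<^bsub>R\<^esub> else \<zeta> j"
  let ?b = "\<lambda>j. if j = Suc N then \<zeta> (Suc N) else \<zero>\<^bsub>R\<^esub>"
  have aQ: "?a \<in> QpN p" by (rule fin_QpN[of _ N]) (use Suc.prems in auto)
  have bQ: "?b \<in> QpN p" by (rule fin_QpN[of _ "Suc N"]) (use Suc.prems in auto)
  have z: "\<zeta> = (\<lambda>j. ?a j \<oplus>\<^bsub>R\<^esub> ?b j)" using Suc.prems by (simp add: fun_eq_iff)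
  have ea: "e ?a = (\<lambda>j. finsum R (\<lambda>i. ?a i \<otimes>\<^bsub>R\<^esub> col i j) {..N})"
    by (rule Suc.IH) (use Suc.prems in auto)
  have ea': "e ?a = (\<lambda>j. finsum R (\<lambda>i. \<zeta> i \<otimes>\<^bsub>R\<^esub> col i j) {..N})"
    unfolding ea by (intro ext R.finsum_cong') (auto simp: Suc.prems col_vec)
  have eb: "e ?b = (\<lambda>j. \<zeta> (Suc N) \<otimes>\<^bsub>R\<^esub> col (Suc N) j)" by (rule e_cdelta) (rule Suc.prems)
  have "e \<zeta> = (\<lambda>j. e ?a j \<oplus>\<^bsub>R\<^esub> e ?b j)" using e_add[OF aQ bQ] z by metis
  also have "\<dots> = (\<lambda>j. finsum R (\<lambda>i. \<zeta> i \<otimes>\<^bsub>R\<^esub> col i j) {..Suc N})"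
  proof
    fix j
    have "finsum R (\<lambda>i. \<zeta> i \<otimes>\<^bsub>R\<^esub> col i j) {..Suc N} = finsum R (\<lambda>i. \<zeta> i \<otimes>\<^bsub>R\<^esub> col i j) (insert (Suc N) {..N})"
      by (simp add: atMost_Suc)
    also have "\<dots> = \<zeta> (Suc N) \<otimes>\<^bsub>R\<^esub> col (Suc N) j \<oplus>\<^bsub>R\<^esub> finsum R (\<lambda>i. \<zeta> i \<otimes>\<^bsub>R\<^esub> col i j) {..N}"
      by (rule R.finsum_insert) (auto simp: Suc.prems col_vec)
    finally show "e ?a j \<oplus>\<^bsub>R\<^esub> e ?b j = finsum R (\<lambda>i. \<zeta> i \<otimes>\<^bsub>R\<^esub> col i j) {..Suc N}"
      unfolding ea' eb using Suc.prems col_vec by (simp add: R.a_comm R.finsum_closed Pi_def)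
  qed
  finally show ?case .
qed

end

context padic begin

lemma sub_zero[simp]: "a \<in> carrier R \<Longrightarrow> a \<ominus>\<^bsub>R\<^esub> \<zero>\<^bsub>R\<^esub> = a"
  by (simp add: R.minus_eq)

lemma sub_eq0: "a \<in> carrier R \<Longrightarrow> b \<in> carrier R \<Longrightarrow> a \<ominus>\<^bsub>R\<^esub> b = \<zero>\<^bsub>R\<^esub> \<Longrightarrow> a = b"
proof -
  assume ab: "a \<in> carrier R" "b \<in> carrier R" "a \<ominus>\<^bsub>R\<^esub> b = \<zero>\<^bsub>R\<^esub>"
  have "a = (a \<ominus>\<^bsub>R\<^esub> b) \<oplus>\<^bsub>R\<^esub> b" using ab(1,2) by algebra
  thus ?thesis using ab by simp
qed

lemma KA:
  assumes "finite A" "t \<in> carrier R" "\<And>k. k \<in> A \<Longrightarrow> c k \<in> carrier R"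
    "\<And>k. k \<in> A \<Longrightarrow> a k \<in> carrier R" "\<And>k. k \<in> A \<Longrightarrow> b k \<in> carrier R"
  shows "finsum R (\<lambda>k. c k \<otimes>\<^bsub>R\<^esub> (a k \<ominus>\<^bsub>R\<^esub> b k \<otimes>\<^bsub>R\<^esub> t)) A =
         finsum R (\<lambda>k. c k \<otimes>\<^bsub>R\<^esub> a k) A \<ominus>\<^bsub>R\<^esub> finsum R (\<lambda>k. c k \<otimes>\<^bsub>R\<^esub> b k) A \<otimes>\<^bsub>R\<^esub> t"
proof -
  have "finsum R (\<lambda>k. c k \<otimes>\<^bsub>R\<^esub> (a k \<ominus>\<^bsub>R\<^esub> b k \<otimes>\<^bsub>R\<^esub> t)) A =
        finsum R (\<lambda>k. c k \<otimes>\<^bsub>R\<^esub> a k \<ominus>\<^bsub>R\<^esub> (c k \<otimes>\<^bsub>R\<^esub> b k) \<otimes>\<^bsub>R\<^esub> t) A"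
  proof (rule R.finsum_cong')
    fix k assume k: "k \<in> A"
    have ck: "c k \<in> carrier R" "a k \<in> carrier R" "b k \<in> carrier R" using assms k by auto
    show "c k \<otimes>\<^bsub>R\<^esub> (a k \<ominus>\<^bsub>R\<^esub> b k \<otimes>\<^bsub>R\<^esub> t) = c k \<otimes>\<^bsub>R\<^esub> a k \<ominus>\<^bsub>R\<^esub> (c k \<otimes>\<^bsub>R\<^esub> b k) \<otimes>\<^bsub>R\<^esub> t"
      using ck assms(2) by algebra
  qed (use assms in auto)
  also have "\<dots> = finsum R (\<lambda>k. c k \<otimes>\<^bsub>R\<^esub> a k) A \<ominus>\<^bsub>R\<^esub> finsum R (\<lambda>k. (c k \<otimes>\<^bsub>R\<^esub> b k) \<otimes>\<^bsub>R\<^esub> t) A"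
    by (rule fs_sub) (use assms in auto)
  also have "finsum R (\<lambda>k. (c k \<otimes>\<^bsub>R\<^esub> b k) \<otimes>\<^bsub>R\<^esub> t) A = finsum R (\<lambda>k. c k \<otimes>\<^bsub>R\<^esub> b k) A \<otimes>\<^bsub>R\<^esub> t"
    by (rule R.finsum_ldistr[symmetric]) (use assms in auto)
  finally show ?thesis .
qed

lemma maxlem:
  assumes rv: "\<And>j. r j \<in> carrier R" and rn: "\<And>a. a \<in> carrier R \<Longrightarrow> finite {j. nrm (a \<otimes>\<^bsub>R\<^esub> r j) > 1}"
    and r0: "r j0 \<noteq> \<zero>\<^bsub>R\<^esub>"
  shows "\<exists>js. r js \<noteq> \<zero>\<^bsub>R\<^esub> \<and> (\<forall>j. nrm (r j) \<le> nrm (r js))"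
proof -
  define c where "c = inv\<^bsub>R\<^esub> (r j0)"
  have u: "r j0 \<in> Units R" using rv r0 R.field_Units by simp
  have cc: "c \<in> carrier R" unfolding c_def using u by simp
  have cn: "nrm c * nrm (r j0) = 1" unfolding c_def by (rule nrm_inv[OF rv r0])
  have ncpos: "nrm c > 0"
  proof -
    have "nrm c \<noteq> 0" using cn by auto
    thus ?thesis using nrm_nonneg[OF cc] by linarith
  qed
  have nm: "nrm (c \<otimes>\<^bsub>R\<^esub> r j) = nrm c * nrm (r j)" for j using nrm_mult[OF cc rv] .
  define S where "S = {j. nrm (c \<otimes>\<^bsub>R\<^esub> r j) > 1}"
  have Sf: "finite S" unfolding S_def by (rule rn[OF cc])
  show ?thesis
  proof (cases "S = {}")
    case True
    have "nrm (r j) \<le> nrm (r j0)" for j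
    proof -
      have "\<not> 1 < nrm (c \<otimes>\<^bsub>R\<^esub> r j)" using True unfolding S_def by blast
      hence "nrm c * nrm (r j) \<le> nrm c * nrm (r j0)" using cn nm[of j] by simp
      thus ?thesis using ncpos by simp
    qed
    thus ?thesis using r0 by blast
  next
    case False
    define M where "M = Max ((\<lambda>j. nrm (r j)) ` S)"
    have "M \<in> (\<lambda>j. nrm (r j)) ` S" unfolding M_def using Sf False by (intro Max_in) auto
    then obtain js where js: "js \<in> S" "nrm (r js) = M" by blast
    have le: "j \<in> S \<Longrightarrow> nrm (r j) \<le> M" for j unfolding M_def using Sf by (intro Max_ge) auto
    have big: "nrm c * nrm (r js) > 1" using js(1) nm unfolding S_def by simp
    have "r js \<noteq> \<zero>\<^bsub>R\<^esub>"
    proof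
      assume "r js = \<zero>\<^bsub>R\<^esub>" thus False using big by simp
    qed
    moreover have "nrm (r j) \<le> nrm (r js)" for j
    proof (cases "j \<in> S")
      case True thus ?thesis using le js by simp
    next
      case False
      hence "nrm c * nrm (r j) \<le> 1" using nm unfolding S_def by simp
      hence "nrm c * nrm (r j) \<le> nrm c * nrm (r js)" using big by simp
      thus ?thesis using ncpos by simp
    qed
    ultimately show ?thesis by blast
  qed
qed

lemma echelon:
  fixes V :: "qpseq set" and x :: "nat \<Rightarrow> qpseq"
  assumes Vvec0: "\<forall>v\<in>V. \<forall>j. v j \<in> carrier R"
    and Vzero: "(\<lambda>j. \<zero>\<^bsub>R\<^esub>) \<in> V"
    and Vadd0: "\<forall>v\<in>V. \<forall>w\<in>V. (\<lambda>j. v j \<oplus>\<^bsub>R\<^esub> w j) \<in> V"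
    and Vsmult0: "\<forall>a\<in>carrier R. \<forall>v\<in>V. (\<lambda>j. a \<otimes>\<^bsub>R\<^esub> v j) \<in> V"
    and Vnull0: "\<forall>v\<in>V. \<forall>a\<in>carrier R. finite {j. nrm (a \<otimes>\<^bsub>R\<^esub> v j) > 1}"
    and xV0: "\<forall>i. x i \<in> V"
  shows "\<exists>(d::nat) piv v. (\<forall>k<d. v k \<in> V) \<and> (\<forall>k<d. \<forall>l<d. v k (piv l) = (if k = l then \<one>\<^bsub>R\<^esub> else \<zero>\<^bsub>R\<^esub>))
      \<and> (\<forall>k<d. \<forall>j. nrm (v k j) \<le> 1)
      \<and> (\<forall>i<m. \<forall>j. x i j = finsum R (\<lambda>k. x i (piv k) \<otimes>\<^bsub>R\<^esub> v k j) {..<d})"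
proof -
  have Vvec: "\<And>v j. v \<in> V \<Longrightarrow> v j \<in> carrier R" using Vvec0 by blast
  have Vadd: "\<And>v w. v \<in> V \<Longrightarrow> w \<in> V \<Longrightarrow> (\<lambda>j. v j \<oplus>\<^bsub>R\<^esub> w j) \<in> V" using Vadd0 by blast
  have Vsmult: "\<And>a v. a \<in> carrier R \<Longrightarrow> v \<in> V \<Longrightarrow> (\<lambda>j. a \<otimes>\<^bsub>R\<^esub> v j) \<in> V" using Vsmult0 by blast
  have Vnull: "\<And>v a. v \<in> V \<Longrightarrow> a \<in> carrier R \<Longrightarrow> finite {j. nrm (a \<otimes>\<^bsub>R\<^esub> v j) > 1}" using Vnull0 by blast
  have xV: "\<And>i. x i \<in> V" using xV0 by blast
  show ?thesis
proof (induction m)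
  case 0
  show ?case by (rule exI[of _ "0::nat"]) simp
next
  case (Suc m)
  have Vsub: "(\<lambda>j. v j \<ominus>\<^bsub>R\<^esub> w j) \<in> V" if "v \<in> V" "w \<in> V" for v w
  proof -
    have "(\<lambda>j. v j \<ominus>\<^bsub>R\<^esub> w j) = (\<lambda>j. v j \<oplus>\<^bsub>R\<^esub> (\<ominus>\<^bsub>R\<^esub> \<one>\<^bsub>R\<^esub> \<otimes>\<^bsub>R\<^esub> w j))"
      using Vvec that by (simp add: fun_eq_iff R.minus_eq R.l_minus)
    thus ?thesis using Vadd Vsmult that by simp
  qed
  have vsumV: "(\<lambda>j. finsum R (\<lambda>k. c k \<otimes>\<^bsub>R\<^esub> w k j) {..<D}) \<in> V"
    if "\<And>k. k < D \<Longrightarrow> w k \<in> V" "\<And>k. k < D \<Longrightarrow> c k \<in> carrier R" for D :: nat and c w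
    using that
  proof (induction D)
    case 0 thus ?case using Vzero by simp
  next
    case (Suc D)
    have eq: "(\<lambda>j. finsum R (\<lambda>k. c k \<otimes>\<^bsub>R\<^esub> w k j) {..<Suc D}) =
          (\<lambda>j. c D \<otimes>\<^bsub>R\<^esub> w D j \<oplus>\<^bsub>R\<^esub> finsum R (\<lambda>k. c k \<otimes>\<^bsub>R\<^esub> w k j) {..<D})"
    proof
      fix j
      show "finsum R (\<lambda>k. c k \<otimes>\<^bsub>R\<^esub> w k j) {..<Suc D} = c D \<otimes>\<^bsub>R\<^esub> w D j \<oplus>\<^bsub>R\<^esub> finsum R (\<lambda>k. c k \<otimes>\<^bsub>R\<^esub> w k j) {..<D}"
        unfolding lessThan_Suc using Suc.prems Vvec by (intro R.finsum_insert) auto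
    qed
    show ?case unfolding eq using Suc by (intro Vadd Vsmult) auto
  qed
  from Suc.IH show ?case
  proof (elim exE conjE)
  fix d :: nat and piv v
  assume IH: "\<forall>k<d. v k \<in> V" "\<forall>k<d. \<forall>l<d. v k (piv l) = (if k = l then \<one>\<^bsub>R\<^esub> else \<zero>\<^bsub>R\<^esub>)"
      "\<forall>k<d. \<forall>j. nrm (v k j) \<le> 1" "\<forall>i<m. \<forall>j. x i j = finsum R (\<lambda>k. x i (piv k) \<otimes>\<^bsub>R\<^esub> v k j) {..<d}"

  have xv: "x i j \<in> carrier R" if "i < Suc m" for i j using Vvec xV that by blast
  have vv: "v k j \<in> carrier R" if "k < d" for k j using Vvec IH(1) that by blast
  define S where "S i j = finsum R (\<lambda>k. x i (piv k) \<otimes>\<^bsub>R\<^esub> v k j) {..<d}" for i j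
  have Sv: "S i j \<in> carrier R" if "i < Suc m" for i j
    unfolding S_def using xv vv that by (intro R.finsum_closed) auto
  have SV: "(\<lambda>j. S i j) \<in> V" if "i < Suc m" for i
    unfolding S_def using IH(1) xv that by (intro vsumV) auto
  have Spiv: "S i (piv l) = x i (piv l)" if "i < Suc m" "l < d" for i l
  proof -
    have "S i (piv l) = finsum R (\<lambda>k. x i (piv k) \<otimes>\<^bsub>R\<^esub> (if k = l then \<one>\<^bsub>R\<^esub> else \<zero>\<^bsub>R\<^esub>)) {..<d}"
      unfolding S_def by (intro R.finsum_cong') (use IH(2) that xv in auto)
    also have "\<dots> = x i (piv l)" using that xv by (intro fs_delta) auto
    finally show ?thesis .
  qed
  define r where "r j = x m j \<ominus>\<^bsub>R\<^esub> S m j" for j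
  have rv: "r j \<in> carrier R" for j unfolding r_def using xv Sv by simp
  have rV: "r \<in> V" unfolding r_def[abs_def] using Vsub xV SV by simp
  have rpiv: "r (piv l) = \<zero>\<^bsub>R\<^esub>" if "l < d" for l unfolding r_def using Spiv[of m l] that xv by simp
  show ?case
  proof (cases "\<forall>j. r j = \<zero>\<^bsub>R\<^esub>")
    case True
    have "\<forall>i<Suc m. \<forall>j. x i j = finsum R (\<lambda>k. x i (piv k) \<otimes>\<^bsub>R\<^esub> v k j) {..<d}"
    proof (intro allI impI)
      fix i j assume i: "i < Suc m"
      show "x i j = finsum R (\<lambda>k. x i (piv k) \<otimes>\<^bsub>R\<^esub> v k j) {..<d}"
      proof (cases "i < m")
        case True thus ?thesis by (rule IH(4)[rule_format])
      next
        case False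
        hence im: "i = m" using i by simp
        have "x m j = S m j" using sub_eq0[OF xv Sv] True unfolding r_def by simp
        thus ?thesis using im unfolding S_def by simp
      qed
    qed
    thus ?thesis using IH(1-3) by blast
  next
    case False
    then obtain j0 where j0: "r j0 \<noteq> \<zero>\<^bsub>R\<^esub>" by blast
    obtain js where js: "r js \<noteq> \<zero>\<^bsub>R\<^esub>" "\<And>j. nrm (r j) \<le> nrm (r js)"
      using maxlem[OF rv Vnull[OF rV] j0] by blast
    define a where "a = inv\<^bsub>R\<^esub> (r js)"
    have u: "r js \<in> Units R" using rv js R.field_Units by simp
    have a: "a \<in> carrier R" "a \<otimes>\<^bsub>R\<^esub> r js = \<one>\<^bsub>R\<^esub>" "r js \<otimes>\<^bsub>R\<^esub> a = \<one>\<^bsub>R\<^esub>" using u unfolding a_def by simp_all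
    have na: "nrm a * nrm (r js) = 1" unfolding a_def by (rule nrm_inv[OF rv js(1)])
    define w where "w j = a \<otimes>\<^bsub>R\<^esub> r j" for j
    have wv: "w j \<in> carrier R" for j unfolding w_def using a rv by simp
    have wV: "w \<in> V" unfolding w_def[abs_def] using Vsmult a rV by simp
    have wjs: "w js = \<one>\<^bsub>R\<^esub>" unfolding w_def using a by simp
    have wpiv: "w (piv l) = \<zero>\<^bsub>R\<^esub>" if "l < d" for l unfolding w_def using rpiv that a by simp
    have wn: "nrm (w j) \<le> 1" for j
    proof -
      have "nrm (w j) = nrm a * nrm (r j)" unfolding w_def using nrm_mult a rv by simp
      also have "\<dots> \<le> nrm a * nrm (r js)" using js(2) a by (intro mult_left_mono) simp_all
      finally show ?thesis using na by simp
    qed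
    have jsn: "js \<noteq> piv l" if "l < d" for l using rpiv[OF that] js(1) by auto
    define v' where "v' k = (if k < d then (\<lambda>j. v k j \<ominus>\<^bsub>R\<^esub> v k js \<otimes>\<^bsub>R\<^esub> w j) else w)" for k
    define piv' where "piv' = piv(d := js)"
    have v'V: "\<forall>k<Suc d. v' k \<in> V"
    proof (intro allI impI)
      fix k assume k: "k < Suc d"
      show "v' k \<in> V"
      proof (cases "k < d")
        case True
        have "(\<lambda>j. v k js \<otimes>\<^bsub>R\<^esub> w j) \<in> V" using Vsmult vv True wV by simp
        thus ?thesis unfolding v'_def using True Vsub IH(1) by simp
      qed (simp add: v'_def wV)
    qed
    have v'piv: "\<forall>k<Suc d. \<forall>l<Suc d. v' k (piv' l) = (if k = l then \<one>\<^bsub>R\<^esub> else \<zero>\<^bsub>R\<^esub>)"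
    proof (intro allI impI)
      fix k l assume k: "k < Suc d" and l: "l < Suc d"
      show "v' k (piv' l) = (if k = l then \<one>\<^bsub>R\<^esub> else \<zero>\<^bsub>R\<^esub>)"
      proof (cases "k < d")
        case kd: True
        show ?thesis
        proof (cases "l < d")
          case True
          have "v' k (piv' l) = v k (piv l) \<ominus>\<^bsub>R\<^esub> v k js \<otimes>\<^bsub>R\<^esub> \<zero>\<^bsub>R\<^esub>"
            unfolding v'_def piv'_def using kd True wpiv by simp
          also have "\<dots> = v k (piv l)" using vv kd IH(2) True by simp
          finally show ?thesis using IH(2) kd True by simp
        next
          case False
          hence ld: "l = d" using l by simp
          have "v' k (piv' l) = v k js \<ominus>\<^bsub>R\<^esub> v k js \<otimes>\<^bsub>R\<^esub> \<one>\<^bsub>R\<^esub>"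
            unfolding v'_def piv'_def using kd ld wjs by simp
          also have "\<dots> = \<zero>\<^bsub>R\<^esub>" using vv kd by simp
          finally show ?thesis using kd ld by simp
        qed
      next
        case False
        hence kd: "k = d" using k by simp
        show ?thesis
        proof (cases "l < d")
          case True
          thus ?thesis unfolding v'_def piv'_def using kd wpiv by simp
        next
          case False
          hence "l = d" using l by simp
          thus ?thesis unfolding v'_def piv'_def using kd wjs by simp
        qed
      qed
    qed
    have v'n: "\<forall>k<Suc d. \<forall>j. nrm (v' k j) \<le> 1"
    proof (intro allI impI)
      fix k j assume k: "k < Suc d"
      show "nrm (v' k j) \<le> 1"
      proof (cases "k < d")
        case True
        have c: "v k j \<in> carrier R" "v k js \<in> carrier R" "w j \<in> carrier R" using vv True wv by auto
        have "nrm (v' k j) \<le> max (nrm (v k j)) (nrm (v k js \<otimes>\<^bsub>R\<^esub> w j))"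
          unfolding v'_def using True c nrm_sub by simp
        moreover have "nrm (v k js \<otimes>\<^bsub>R\<^esub> w j) \<le> 1"
          using nrm_mult[OF c(2,3)] IH(3) True wn[of j] nrm_nonneg c by (simp add: mult_le_one)
        moreover have "nrm (v k j) \<le> 1" using IH(3) True by simp
        ultimately show ?thesis by (meson max.boundedI order_trans)
      qed (simp add: v'_def wn)
    qed
    have rep: "\<forall>i<Suc m. \<forall>j. x i j = finsum R (\<lambda>k. x i (piv' k) \<otimes>\<^bsub>R\<^esub> v' k j) {..<Suc d}"
    proof (intro allI impI)
      fix i j assume i: "i < Suc m"
      have "finsum R (\<lambda>k. x i (piv' k) \<otimes>\<^bsub>R\<^esub> v' k j) {..<Suc d} =
            x i (piv' d) \<otimes>\<^bsub>R\<^esub> v' d j \<oplus>\<^bsub>R\<^esub> finsum R (\<lambda>k. x i (piv' k) \<otimes>\<^bsub>R\<^esub> v' k j) {..<d}"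
      proof -
        have "v' k j \<in> carrier R" if "k < Suc d" for k using v'V Vvec that by blast
        thus ?thesis unfolding lessThan_Suc using xv[OF i] by (intro R.finsum_insert) auto
      qed
      also have "finsum R (\<lambda>k. x i (piv' k) \<otimes>\<^bsub>R\<^esub> v' k j) {..<d} =
                 finsum R (\<lambda>k. x i (piv k) \<otimes>\<^bsub>R\<^esub> (v k j \<ominus>\<^bsub>R\<^esub> v k js \<otimes>\<^bsub>R\<^esub> w j)) {..<d}"
        unfolding v'_def piv'_def by (intro R.finsum_cong') (auto simp: xv[OF i] vv wv)
      also have "\<dots> = S i j \<ominus>\<^bsub>R\<^esub> S i js \<otimes>\<^bsub>R\<^esub> w j"
        unfolding S_def by (rule KA) (auto simp: xv[OF i] vv wv)
      also have "x i (piv' d) \<otimes>\<^bsub>R\<^esub> v' d j = x i js \<otimes>\<^bsub>R\<^esub> w j" unfolding v'_def piv'_def by simp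
      finally have eq: "finsum R (\<lambda>k. x i (piv' k) \<otimes>\<^bsub>R\<^esub> v' k j) {..<Suc d} =
            x i js \<otimes>\<^bsub>R\<^esub> w j \<oplus>\<^bsub>R\<^esub> (S i j \<ominus>\<^bsub>R\<^esub> S i js \<otimes>\<^bsub>R\<^esub> w j)" .
      have c: "x i js \<in> carrier R" "w j \<in> carrier R" "S i j \<in> carrier R" "S i js \<in> carrier R" "x i j \<in> carrier R"
        using xv[OF i] wv Sv[OF i] by auto
      have eq2: "x i js \<otimes>\<^bsub>R\<^esub> w j \<oplus>\<^bsub>R\<^esub> (S i j \<ominus>\<^bsub>R\<^esub> S i js \<otimes>\<^bsub>R\<^esub> w j) =
                 (x i js \<ominus>\<^bsub>R\<^esub> S i js) \<otimes>\<^bsub>R\<^esub> w j \<oplus>\<^bsub>R\<^esub> S i j"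
        using c by algebra
      show "x i j = finsum R (\<lambda>k. x i (piv' k) \<otimes>\<^bsub>R\<^esub> v' k j) {..<Suc d}"
      proof (cases "i < m")
        case True
        have "S i j = x i j" "S i js = x i js" unfolding S_def using IH(4)[rule_format, OF True] by (rule sym)+
        thus ?thesis unfolding eq eq2 using c by simp
      next
        case False
        hence im: "i = m" using i by simp
        have "(x i js \<ominus>\<^bsub>R\<^esub> S i js) \<otimes>\<^bsub>R\<^esub> w j = r j" unfolding im r_def[symmetric] w_def
          using a rv by (simp add: R.m_assoc[symmetric])
        moreover have "r j \<oplus>\<^bsub>R\<^esub> S i j = x i j" unfolding r_def im using xv Sv by (simp add: R.minus_eq R.a_assoc R.l_neg)
        ultimately show ?thesis unfolding eq eq2 by simp
      qed
    qed
    show ?thesis using v'V v'piv v'n rep by blast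
  qed
qed
qed
qed

end

context padic begin

lemma LC:
  assumes "finite I" "finite K" "\<And>k. k \<in> K \<Longrightarrow> a k \<in> carrier R"
    "\<And>k i. k \<in> K \<Longrightarrow> i \<in> I \<Longrightarrow> W k i \<in> carrier R" "\<And>i. i \<in> I \<Longrightarrow> c i \<in> carrier R"
  shows "finsum R (\<lambda>i. finsum R (\<lambda>k. a k \<otimes>\<^bsub>R\<^esub> W k i) K \<otimes>\<^bsub>R\<^esub> c i) I =
         finsum R (\<lambda>k. a k \<otimes>\<^bsub>R\<^esub> finsum R (\<lambda>i. W k i \<otimes>\<^bsub>R\<^esub> c i) I) K"
proof -
  have "finsum R (\<lambda>i. finsum R (\<lambda>k. a k \<otimes>\<^bsub>R\<^esub> W k i) K \<otimes>\<^bsub>R\<^esub> c i) I =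
        finsum R (\<lambda>i. finsum R (\<lambda>k. a k \<otimes>\<^bsub>R\<^esub> (W k i \<otimes>\<^bsub>R\<^esub> c i)) K) I"
  proof (rule R.finsum_cong')
    fix i assume i: "i \<in> I"
    have "finsum R (\<lambda>k. a k \<otimes>\<^bsub>R\<^esub> W k i) K \<otimes>\<^bsub>R\<^esub> c i = finsum R (\<lambda>k. (a k \<otimes>\<^bsub>R\<^esub> W k i) \<otimes>\<^bsub>R\<^esub> c i) K"
      using assms i by (intro R.finsum_ldistr) auto
    also have "\<dots> = finsum R (\<lambda>k. a k \<otimes>\<^bsub>R\<^esub> (W k i \<otimes>\<^bsub>R\<^esub> c i)) K"
      using assms i by (intro R.finsum_cong') (auto simp: R.m_assoc)
    finally show "finsum R (\<lambda>k. a k \<otimes>\<^bsub>R\<^esub> W k i) K \<otimes>\<^bsub>R\<^esub> c i = finsum R (\<lambda>k. a k \<otimes>\<^bsub>R\<^esub> (W k i \<otimes>\<^bsub>R\<^esub> c i)) K" .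
  qed (use assms in \<open>auto intro!: R.finsum_closed\<close>)
  also have "\<dots> = finsum R (\<lambda>k. finsum R (\<lambda>i. a k \<otimes>\<^bsub>R\<^esub> (W k i \<otimes>\<^bsub>R\<^esub> c i)) I) K"
    using assms by (intro fs_swap) auto
  also have "\<dots> = finsum R (\<lambda>k. a k \<otimes>\<^bsub>R\<^esub> finsum R (\<lambda>i. W k i \<otimes>\<^bsub>R\<^esub> c i) I) K"
    using assms by (intro R.finsum_cong') (auto simp: R.finsum_rdistr intro!: R.finsum_closed)
  finally show ?thesis .
qed

end

context sd begin

definition V :: "qpseq set" where
  "V = {(\<lambda>j. finsum R (\<lambda>i. c i \<otimes>\<^bsub>R\<^esub> col i j) {..n}) | c. \<forall>i\<le>n. c i \<in> carrier R}"

definition zeta :: "(nat \<Rightarrow> qp) \<Rightarrow> qpseq" where "zeta c = (\<lambda>i. if i \<le> n then c i else \<zero>\<^bsub>R\<^esub>)"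

lemma zeta_QpN: "(\<And>i. i \<le> n \<Longrightarrow> c i \<in> carrier R) \<Longrightarrow> zeta c \<in> QpN p"
  unfolding zeta_def by (rule fin_QpN[of _ n]) auto

lemma e_zeta: "(\<And>i. i \<le> n \<Longrightarrow> c i \<in> carrier R) \<Longrightarrow> e (zeta c) = (\<lambda>j. finsum R (\<lambda>i. c i \<otimes>\<^bsub>R\<^esub> col i j) {..n})"
proof -
  assume c: "\<And>i. i \<le> n \<Longrightarrow> c i \<in> carrier R"
  have "e (zeta c) = (\<lambda>j. finsum R (\<lambda>i. zeta c i \<otimes>\<^bsub>R\<^esub> col i j) {..n})"
    by (rule e_fin) (auto simp: zeta_def c)
  also have "\<dots> = (\<lambda>j. finsum R (\<lambda>i. c i \<otimes>\<^bsub>R\<^esub> col i j) {..n})"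
    by (intro ext R.finsum_cong') (auto simp: zeta_def c col_vec)
  finally show ?thesis .
qed

lemma V_intro: "(\<And>i. i \<le> n \<Longrightarrow> c i \<in> carrier R) \<Longrightarrow> (\<lambda>j. finsum R (\<lambda>i. c i \<otimes>\<^bsub>R\<^esub> col i j) {..n}) \<in> V"
  unfolding V_def by (intro CollectI exI[of _ c]) simp

lemma V_iff: "v \<in> V \<longleftrightarrow> (\<exists>c. (\<forall>i\<le>n. c i \<in> carrier R) \<and> v = e (zeta c))"
  unfolding V_def using e_zeta by auto

lemma V_QpN: "v \<in> V \<Longrightarrow> v \<in> QpN p"
  unfolding V_iff using e_QpN zeta_QpN by auto

lemma V_fix: "v \<in> V \<Longrightarrow> e v = v"
  unfolding V_iff using e_idem zeta_QpN by auto

lemma V_vec: "v \<in> V \<Longrightarrow> v j \<in> carrier R" using V_QpN QpN_vec by blast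

lemma V_add: assumes "v \<in> V" "w \<in> V" shows "(\<lambda>j. v j \<oplus>\<^bsub>R\<^esub> w j) \<in> V"
proof -
  obtain c where c: "\<forall>i\<le>n. c i \<in> carrier R" "v = (\<lambda>j. finsum R (\<lambda>i. c i \<otimes>\<^bsub>R\<^esub> col i j) {..n})"
    using assms(1) unfolding V_def by blast
  obtain d where d: "\<forall>i\<le>n. d i \<in> carrier R" "w = (\<lambda>j. finsum R (\<lambda>i. d i \<otimes>\<^bsub>R\<^esub> col i j) {..n})"
    using assms(2) unfolding V_def by blast
  have "(\<lambda>j. v j \<oplus>\<^bsub>R\<^esub> w j) = (\<lambda>j. finsum R (\<lambda>i. (c i \<oplus>\<^bsub>R\<^esub> d i) \<otimes>\<^bsub>R\<^esub> col i j) {..n})"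
  proof
    fix j
    have "v j \<oplus>\<^bsub>R\<^esub> w j = finsum R (\<lambda>i. c i \<otimes>\<^bsub>R\<^esub> col i j \<oplus>\<^bsub>R\<^esub> d i \<otimes>\<^bsub>R\<^esub> col i j) {..n}"
      unfolding c(2) d(2) using c d col_vec by (intro R.finsum_addf[symmetric]) auto
    also have "\<dots> = finsum R (\<lambda>i. (c i \<oplus>\<^bsub>R\<^esub> d i) \<otimes>\<^bsub>R\<^esub> col i j) {..n}"
      using c d col_vec by (intro R.finsum_cong') (auto simp: R.l_distr)
    finally show "v j \<oplus>\<^bsub>R\<^esub> w j = finsum R (\<lambda>i. (c i \<oplus>\<^bsub>R\<^esub> d i) \<otimes>\<^bsub>R\<^esub> col i j) {..n}" .
  qed
  moreover have "(\<lambda>j. finsum R (\<lambda>i. (c i \<oplus>\<^bsub>R\<^esub> d i) \<otimes>\<^bsub>R\<^esub> col i j) {..n}) \<in> V"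
    by (rule V_intro) (use c d in simp)
  ultimately show ?thesis by simp
qed

lemma V_smult: assumes "a \<in> carrier R" "v \<in> V" shows "(\<lambda>j. a \<otimes>\<^bsub>R\<^esub> v j) \<in> V"
proof -
  obtain c where c: "\<forall>i\<le>n. c i \<in> carrier R" "v = (\<lambda>j. finsum R (\<lambda>i. c i \<otimes>\<^bsub>R\<^esub> col i j) {..n})"
    using assms(2) unfolding V_def by blast
  have "(\<lambda>j. a \<otimes>\<^bsub>R\<^esub> v j) = (\<lambda>j. finsum R (\<lambda>i. (a \<otimes>\<^bsub>R\<^esub> c i) \<otimes>\<^bsub>R\<^esub> col i j) {..n})"
  proof
    fix j
    have "a \<otimes>\<^bsub>R\<^esub> v j = finsum R (\<lambda>i. a \<otimes>\<^bsub>R\<^esub> (c i \<otimes>\<^bsub>R\<^esub> col i j)) {..n}"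
      unfolding c(2) using c assms(1) col_vec by (intro R.finsum_rdistr) auto
    also have "\<dots> = finsum R (\<lambda>i. (a \<otimes>\<^bsub>R\<^esub> c i) \<otimes>\<^bsub>R\<^esub> col i j) {..n}"
      using c assms(1) col_vec by (intro R.finsum_cong') (auto simp: R.m_assoc)
    finally show "a \<otimes>\<^bsub>R\<^esub> v j = finsum R (\<lambda>i. (a \<otimes>\<^bsub>R\<^esub> c i) \<otimes>\<^bsub>R\<^esub> col i j) {..n}" .
  qed
  moreover have "(\<lambda>j. finsum R (\<lambda>i. (a \<otimes>\<^bsub>R\<^esub> c i) \<otimes>\<^bsub>R\<^esub> col i j) {..n}) \<in> V"
    by (rule V_intro) (use c assms in simp)
  ultimately show ?thesis by simp
qed

lemma V_zero: "(\<lambda>j. \<zero>\<^bsub>R\<^esub>) \<in> V"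
proof -
  have "(\<lambda>j. \<zero>\<^bsub>R\<^esub>) = (\<lambda>j. finsum R (\<lambda>i. \<zero>\<^bsub>R\<^esub> \<otimes>\<^bsub>R\<^esub> col i j) {..n})"
    using col_vec by (simp add: R.finsum_zero)
  moreover have "(\<lambda>j. finsum R (\<lambda>i. \<zero>\<^bsub>R\<^esub> \<otimes>\<^bsub>R\<^esub> col i j) {..n}) \<in> V" by (rule V_intro) simp
  ultimately show ?thesis by simp
qed

lemma V_null: "v \<in> V \<Longrightarrow> a \<in> carrier R \<Longrightarrow> finite {j. nrm (a \<otimes>\<^bsub>R\<^esub> v j) > 1}"
  using V_smult V_QpN unfolding QpN_eq by blast

lemma col_V: "i \<le> n \<Longrightarrow> col i \<in> V"
proof -
  assume i: "i \<le> n"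
  have "col i = (\<lambda>j. finsum R (\<lambda>k. (if k = i then \<one>\<^bsub>R\<^esub> else \<zero>\<^bsub>R\<^esub>) \<otimes>\<^bsub>R\<^esub> col k j) {..n})"
  proof
    fix j
    have "finsum R (\<lambda>k. (if k = i then \<one>\<^bsub>R\<^esub> else \<zero>\<^bsub>R\<^esub>) \<otimes>\<^bsub>R\<^esub> col k j) {..n} =
          finsum R (\<lambda>k. col k j \<otimes>\<^bsub>R\<^esub> (if k = i then \<one>\<^bsub>R\<^esub> else \<zero>\<^bsub>R\<^esub>)) {..n}"
      using col_vec by (intro R.finsum_cong') (auto simp: R.m_comm)
    also have "\<dots> = col i j" using i col_vec by (intro fs_delta) auto
    finally show "col i j = finsum R (\<lambda>k. (if k = i then \<one>\<^bsub>R\<^esub> else \<zero>\<^bsub>R\<^esub>) \<otimes>\<^bsub>R\<^esub> col k j) {..n}" by simp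
  qed
  moreover have "(\<lambda>j. finsum R (\<lambda>k. (if k = i then \<one>\<^bsub>R\<^esub> else \<zero>\<^bsub>R\<^esub>) \<otimes>\<^bsub>R\<^esub> col k j) {..n}) \<in> V"
    by (rule V_intro) simp
  ultimately show ?thesis by simp
qed

lemma ech_exists:
  "\<exists>(d::nat) piv v W. (\<forall>k<d. v k = (\<lambda>j. finsum R (\<lambda>i. W k i \<otimes>\<^bsub>R\<^esub> col i j) {..n}))
      \<and> (\<forall>k<d. \<forall>i\<le>n. W k i \<in> carrier R)
      \<and> (\<forall>k<d. \<forall>l<d. v k (piv l) = (if k = l then \<one>\<^bsub>R\<^esub> else \<zero>\<^bsub>R\<^esub>))
      \<and> (\<forall>k<d. \<forall>j. nrm (v k j) \<le> 1)
      \<and> (\<forall>i\<le>n. \<forall>j. col i j = finsum R (\<lambda>k. col i (piv k) \<otimes>\<^bsub>R\<^esub> v k j) {..<d})"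
proof -
  let ?x = "\<lambda>i. if i \<le> n then col i else (\<lambda>j. \<zero>\<^bsub>R\<^esub>)"
  have xV: "?x i \<in> V" for i using col_V V_zero by simp
  obtain d :: nat and piv v where E: "\<forall>k<d. v k \<in> V" "\<forall>k<d. \<forall>l<d. v k (piv l) = (if k = l then \<one>\<^bsub>R\<^esub> else \<zero>\<^bsub>R\<^esub>)"
      "\<forall>k<d. \<forall>j. nrm (v k j) \<le> 1" "\<forall>i<Suc n. \<forall>j. ?x i j = finsum R (\<lambda>k. ?x i (piv k) \<otimes>\<^bsub>R\<^esub> v k j) {..<d}"
  proof -
    have "\<forall>v\<in>V. \<forall>j. v j \<in> carrier R" using V_vec by blast
    moreover have "\<forall>v\<in>V. \<forall>w\<in>V. (\<lambda>j. v j \<oplus>\<^bsub>R\<^esub> w j) \<in> V" using V_add by blast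
    moreover have "\<forall>a\<in>carrier R. \<forall>v\<in>V. (\<lambda>j. a \<otimes>\<^bsub>R\<^esub> v j) \<in> V" using V_smult by blast
    moreover have "\<forall>v\<in>V. \<forall>a\<in>carrier R. finite {j. nrm (a \<otimes>\<^bsub>R\<^esub> v j) > 1}" using V_null by blast
    moreover have "\<forall>i. ?x i \<in> V" using xV by blast
    ultimately have ex: "\<exists>(d::nat) piv v. (\<forall>k<d. v k \<in> V) \<and> (\<forall>k<d. \<forall>l<d. v k (piv l) = (if k = l then \<one>\<^bsub>R\<^esub> else \<zero>\<^bsub>R\<^esub>))
      \<and> (\<forall>k<d. \<forall>j. nrm (v k j) \<le> 1)
      \<and> (\<forall>i<Suc n. \<forall>j. ?x i j = finsum R (\<lambda>k. ?x i (piv k) \<otimes>\<^bsub>R\<^esub> v k j) {..<d})"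
      using V_zero by (intro echelon[where V=V and x="?x" and m="Suc n"])
    from ex show ?thesis by (elim exE conjE) (rule that)
  qed
  have "\<forall>k. \<exists>c. k < d \<longrightarrow> (\<forall>i\<le>n. c i \<in> carrier R) \<and> v k = (\<lambda>j. finsum R (\<lambda>i. c i \<otimes>\<^bsub>R\<^esub> col i j) {..n})"
    using E(1) unfolding V_def by blast
  hence "\<exists>W. \<forall>k. k < d \<longrightarrow> (\<forall>i\<le>n. W k i \<in> carrier R) \<and> v k = (\<lambda>j. finsum R (\<lambda>i. W k i \<otimes>\<^bsub>R\<^esub> col i j) {..n})"
    by (rule choice)
  then obtain W where W0: "\<forall>k. k < d \<longrightarrow> (\<forall>i\<le>n. W k i \<in> carrier R) \<and> v k = (\<lambda>j. finsum R (\<lambda>i. W k i \<otimes>\<^bsub>R\<^esub> col i j) {..n})"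
    by (elim exE) (rule that)
  have W: "\<And>k. k < d \<Longrightarrow> (\<forall>i\<le>n. W k i \<in> carrier R) \<and> v k = (\<lambda>j. finsum R (\<lambda>i. W k i \<otimes>\<^bsub>R\<^esub> col i j) {..n})"
    using W0 by simp
  have rep: "\<forall>i\<le>n. \<forall>j. col i j = finsum R (\<lambda>k. col i (piv k) \<otimes>\<^bsub>R\<^esub> v k j) {..<d}"
  proof (intro allI impI)
    fix i j assume i: "i \<le> n"
    have "i < Suc n" using i by simp
    from E(4)[rule_format, OF this, of j] show "col i j = finsum R (\<lambda>k. col i (piv k) \<otimes>\<^bsub>R\<^esub> v k j) {..<d}"
      using i by simp
  qed
  show ?thesis
    apply (rule exI[of _ d], rule exI[of _ piv], rule exI[of _ v], rule exI[of _ W])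
    using W E(2,3) rep by blast
qed

end

locale ech = sd +
  fixes d :: nat and piv :: "nat \<Rightarrow> nat" and v :: "nat \<Rightarrow> qpseq" and W :: "nat \<Rightarrow> nat \<Rightarrow> qp"
  assumes vW: "\<forall>k<d. v k = (\<lambda>j. finsum R (\<lambda>i. W k i \<otimes>\<^bsub>R\<^esub> col i j) {..n})"
    and Wc: "\<forall>k<d. \<forall>i\<le>n. W k i \<in> carrier R"
    and pivp: "\<forall>k<d. \<forall>l<d. v k (piv l) = (if k = l then \<one>\<^bsub>R\<^esub> else \<zero>\<^bsub>R\<^esub>)"
    and vn: "\<forall>k<d. \<forall>j. nrm (v k j) \<le> 1"
    and rep: "\<forall>i\<le>n. \<forall>j. col i j = finsum R (\<lambda>k. col i (piv k) \<otimes>\<^bsub>R\<^esub> v k j) {..<d}"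
begin

lemma vc: "k < d \<Longrightarrow> v k j \<in> carrier R"
  using vW col_vec Wc by (auto intro!: R.finsum_closed)

lemma vZ: "k < d \<Longrightarrow> v k j \<in> Zp p"
  using vc vn Zp_iff by simp

lemma Wc': "k < d \<Longrightarrow> i \<le> n \<Longrightarrow> W k i \<in> carrier R" using Wc by simp

definition pi :: "qpseq \<Rightarrow> qpseq" where
  "pi \<eta> = (\<lambda>j. finsum R (\<lambda>k. \<eta> (piv k) \<otimes>\<^bsub>R\<^esub> v k j) {..<d})"

lemma pi_vec: "(\<And>i. \<eta> i \<in> carrier R) \<Longrightarrow> pi \<eta> j \<in> carrier R"
  unfolding pi_def using vc by (auto intro!: R.finsum_closed)

lemma pi_add: "(\<And>i. a i \<in> carrier R) \<Longrightarrow> (\<And>i. b i \<in> carrier R) \<Longrightarrow>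
    pi (\<lambda>i. a i \<oplus>\<^bsub>R\<^esub> b i) = (\<lambda>j. pi a j \<oplus>\<^bsub>R\<^esub> pi b j)"
proof
  fix j assume a: "\<And>i. a i \<in> carrier R" and b: "\<And>i. b i \<in> carrier R"
  have "pi (\<lambda>i. a i \<oplus>\<^bsub>R\<^esub> b i) j = finsum R (\<lambda>k. a (piv k) \<otimes>\<^bsub>R\<^esub> v k j \<oplus>\<^bsub>R\<^esub> b (piv k) \<otimes>\<^bsub>R\<^esub> v k j) {..<d}"
    unfolding pi_def using a b vc by (intro R.finsum_cong') (auto simp: R.l_distr)
  also have "\<dots> = pi a j \<oplus>\<^bsub>R\<^esub> pi b j" unfolding pi_def using a b vc by (intro R.finsum_addf) auto
  finally show "pi (\<lambda>i. a i \<oplus>\<^bsub>R\<^esub> b i) j = pi a j \<oplus>\<^bsub>R\<^esub> pi b j" .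
qed

lemma pi_smult: "c \<in> carrier R \<Longrightarrow> (\<And>i. a i \<in> carrier R) \<Longrightarrow>
    pi (\<lambda>i. c \<otimes>\<^bsub>R\<^esub> a i) = (\<lambda>j. c \<otimes>\<^bsub>R\<^esub> pi a j)"
proof
  fix j assume c: "c \<in> carrier R" and a: "\<And>i. a i \<in> carrier R"
  have "pi (\<lambda>i. c \<otimes>\<^bsub>R\<^esub> a i) j = finsum R (\<lambda>k. c \<otimes>\<^bsub>R\<^esub> (a (piv k) \<otimes>\<^bsub>R\<^esub> v k j)) {..<d}"
    unfolding pi_def using a c vc by (intro R.finsum_cong') (auto simp: R.m_assoc)
  also have "\<dots> = c \<otimes>\<^bsub>R\<^esub> pi a j" unfolding pi_def using a c vc by (intro R.finsum_rdistr[symmetric]) auto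
  finally show "pi (\<lambda>i. c \<otimes>\<^bsub>R\<^esub> a i) j = c \<otimes>\<^bsub>R\<^esub> pi a j" .
qed

lemma pi_sub: "(\<And>i. a i \<in> carrier R) \<Longrightarrow> (\<And>i. b i \<in> carrier R) \<Longrightarrow>
    pi (\<lambda>i. a i \<ominus>\<^bsub>R\<^esub> b i) = (\<lambda>j. pi a j \<ominus>\<^bsub>R\<^esub> pi b j)"
proof
  fix j assume a: "\<And>i. a i \<in> carrier R" and b: "\<And>i. b i \<in> carrier R"
  have "pi (\<lambda>i. a i \<ominus>\<^bsub>R\<^esub> b i) j = finsum R (\<lambda>k. a (piv k) \<otimes>\<^bsub>R\<^esub> v k j \<ominus>\<^bsub>R\<^esub> b (piv k) \<otimes>\<^bsub>R\<^esub> v k j) {..<d}"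
    unfolding pi_def using a b vc by (intro R.finsum_cong') (auto simp: R.l_minus R.minus_eq R.l_distr)
  also have "\<dots> = pi a j \<ominus>\<^bsub>R\<^esub> pi b j" unfolding pi_def using a b vc by (intro fs_sub) auto
  finally show "pi (\<lambda>i. a i \<ominus>\<^bsub>R\<^esub> b i) j = pi a j \<ominus>\<^bsub>R\<^esub> pi b j" .
qed

lemma pi_V: assumes "\<eta> \<in> V" shows "pi \<eta> = \<eta>"
proof
  fix j
  obtain c where c: "\<forall>i\<le>n. c i \<in> carrier R" "\<eta> = (\<lambda>j. finsum R (\<lambda>i. c i \<otimes>\<^bsub>R\<^esub> col i j) {..n})"
    using assms unfolding V_def by blast
  have "pi \<eta> j = finsum R (\<lambda>k. finsum R (\<lambda>i. c i \<otimes>\<^bsub>R\<^esub> col i (piv k)) {..n} \<otimes>\<^bsub>R\<^esub> v k j) {..<d}"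
    unfolding pi_def c(2) ..
  also have "\<dots> = finsum R (\<lambda>i. c i \<otimes>\<^bsub>R\<^esub> finsum R (\<lambda>k. col i (piv k) \<otimes>\<^bsub>R\<^esub> v k j) {..<d}) {..n}"
    by (rule LC) (use c col_vec vc in auto)
  also have "\<dots> = finsum R (\<lambda>i. c i \<otimes>\<^bsub>R\<^esub> col i j) {..n}"
  proof (rule R.finsum_cong')
    fix i assume i: "i \<in> {..n}"
    show "c i \<otimes>\<^bsub>R\<^esub> finsum R (\<lambda>k. col i (piv k) \<otimes>\<^bsub>R\<^esub> v k j) {..<d} = c i \<otimes>\<^bsub>R\<^esub> col i j"
      using rep[rule_format, of i j] i by simp
  qed (use c col_vec vc in \<open>auto intro!: R.finsum_closed\<close>)
  finally show "pi \<eta> j = \<eta> j" using c(2) by simp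
qed

lemma pi_inV: assumes "\<And>i. \<eta> i \<in> carrier R" shows "pi \<eta> \<in> V"
proof -
  have "pi \<eta> = (\<lambda>j. finsum R (\<lambda>i. finsum R (\<lambda>k. \<eta> (piv k) \<otimes>\<^bsub>R\<^esub> W k i) {..<d} \<otimes>\<^bsub>R\<^esub> col i j) {..n})"
  proof
    fix j
    have "pi \<eta> j = finsum R (\<lambda>k. \<eta> (piv k) \<otimes>\<^bsub>R\<^esub> finsum R (\<lambda>i. W k i \<otimes>\<^bsub>R\<^esub> col i j) {..n}) {..<d}"
      unfolding pi_def using vW by (intro R.finsum_cong') (auto simp: assms vc Wc' col_vec intro!: R.finsum_closed)
    also have "\<dots> = finsum R (\<lambda>i. finsum R (\<lambda>k. \<eta> (piv k) \<otimes>\<^bsub>R\<^esub> W k i) {..<d} \<otimes>\<^bsub>R\<^esub> col i j) {..n}"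
      by (rule LC[symmetric]) (use assms Wc' col_vec in auto)
    finally show "pi \<eta> j = finsum R (\<lambda>i. finsum R (\<lambda>k. \<eta> (piv k) \<otimes>\<^bsub>R\<^esub> W k i) {..<d} \<otimes>\<^bsub>R\<^esub> col i j) {..n}" .
  qed
  moreover have "(\<lambda>j. finsum R (\<lambda>i. finsum R (\<lambda>k. \<eta> (piv k) \<otimes>\<^bsub>R\<^esub> W k i) {..<d} \<otimes>\<^bsub>R\<^esub> col i j) {..n}) \<in> V"
    by (rule V_intro) (use assms Wc' in \<open>auto intro!: R.finsum_closed\<close>)
  ultimately show ?thesis by simp
qed

lemma pi_Zp: "(\<And>i. \<eta> i \<in> Zp p) \<Longrightarrow> pi \<eta> j \<in> Zp p"
  unfolding pi_def by (intro Zp_finsum Zp_mult vZ) auto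

end

context ech begin

definition hh :: "qpseq \<Rightarrow> qpseq" where
  "hh \<xi> = zeta (\<lambda>i. finsum R (\<lambda>k. e \<xi> (piv k) \<otimes>\<^bsub>R\<^esub> W k i) {..<d})"

definition ff :: "qpseq \<Rightarrow> qpseq" where "ff \<xi> = e (hh \<xi>)"

lemma hh_coef: "\<xi> \<in> QpN p \<Longrightarrow> i \<le> n \<Longrightarrow> finsum R (\<lambda>k. e \<xi> (piv k) \<otimes>\<^bsub>R\<^esub> W k i) {..<d} \<in> carrier R"
  using e_vec Wc' by (auto intro!: R.finsum_closed)

lemma hh_QpN: "\<xi> \<in> QpN p \<Longrightarrow> hh \<xi> \<in> QpN p"
  unfolding hh_def by (rule zeta_QpN) (rule hh_coef)

lemma ff_pi: assumes "\<xi> \<in> QpN p" shows "ff \<xi> = pi (e \<xi>)"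
proof
  fix j
  have "ff \<xi> j = finsum R (\<lambda>i. finsum R (\<lambda>k. e \<xi> (piv k) \<otimes>\<^bsub>R\<^esub> W k i) {..<d} \<otimes>\<^bsub>R\<^esub> col i j) {..n}"
    unfolding ff_def hh_def using e_zeta[of "\<lambda>i. finsum R (\<lambda>k. e \<xi> (piv k) \<otimes>\<^bsub>R\<^esub> W k i) {..<d}"] hh_coef[OF assms]
    by simp
  also have "\<dots> = finsum R (\<lambda>k. e \<xi> (piv k) \<otimes>\<^bsub>R\<^esub> finsum R (\<lambda>i. W k i \<otimes>\<^bsub>R\<^esub> col i j) {..n}) {..<d}"
    by (rule LC) (use e_vec[OF assms] Wc' col_vec in auto)
  also have "\<dots> = pi (e \<xi>) j"
    unfolding pi_def using vW by (intro R.finsum_cong') (auto simp: e_vec[OF assms] vc Wc' col_vec intro!: R.finsum_closed)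
  finally show "ff \<xi> j = pi (e \<xi>) j" .
qed

lemma ff_V: "\<xi> \<in> QpN p \<Longrightarrow> ff \<xi> \<in> V"
  using ff_pi pi_inV e_vec by simp

lemma ff_QpN: "\<xi> \<in> QpN p \<Longrightarrow> ff \<xi> \<in> QpN p"
  using ff_V V_QpN by blast

lemma hh_coord_cont: assumes P: "finite P" shows "continuous_map (box_top p P) (qp_top p) (\<lambda>\<xi>. hh \<xi> i)"
proof (cases "i \<le> n")
  case True
  have "continuous_map (box_top p P) (qp_top p) (\<lambda>\<xi>. finsum R (\<lambda>k. e \<xi> (piv k) \<otimes>\<^bsub>R\<^esub> W k i) {..<d})"
    by (intro cont_finsum cont_mult tau_cont_coord[OF e_cont P] cont_const) (use Wc' True in auto)
  thus ?thesis unfolding hh_def zeta_def using True by simp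
next
  case False
  thus ?thesis unfolding hh_def zeta_def by (simp add: cont_const)
qed

lemma hh_cont: "continuous_map (tau p) (tau p) hh"
proof (rule tau_contI)
  fix P :: "nat set" assume P: "finite P"
  show "\<exists>P'. finite P' \<and> (\<forall>\<xi>\<in>topspace (box_top p P). hh \<xi> \<in> topspace (box_top p P')) \<and>
          (\<forall>i. continuous_map (box_top p P) (qp_top p) (\<lambda>\<xi>. hh \<xi> i))"
  proof (intro exI[of _ "{..n}"] conjI ballI allI)
    fix \<xi> assume x: "\<xi> \<in> topspace (box_top p P)"
    hence xQ: "\<xi> \<in> QpN p" using box_QpN[OF P] by blast
    show "hh \<xi> \<in> topspace (box_top p {..n})"
      unfolding topspace_box using QpN_vec[OF hh_QpN[OF xQ]] Zp_zero by (auto simp: hh_def zeta_def)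
  qed (use hh_coord_cont[OF P] in auto)
qed

definition kk :: "qpseq \<Rightarrow> qpseq" where "kk \<xi> = (\<lambda>i. \<xi> i \<ominus>\<^bsub>R\<^esub> hh \<xi> i)"

lemma kk_cont: "continuous_map (tau p) (tau p) kk"
proof (rule tau_contI)
  fix P :: "nat set" assume P: "finite P"
  show "\<exists>P'. finite P' \<and> (\<forall>\<xi>\<in>topspace (box_top p P). kk \<xi> \<in> topspace (box_top p P')) \<and>
          (\<forall>i. continuous_map (box_top p P) (qp_top p) (\<lambda>\<xi>. kk \<xi> i))"
  proof (intro exI[of _ "P \<union> {..n}"] conjI ballI allI)
    show "finite (P \<union> {..n})" using P by simp
    fix \<xi> assume x: "\<xi> \<in> topspace (box_top p P)"
    hence xQ: "\<xi> \<in> QpN p" using box_QpN[OF P] by blast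
    have hv: "hh \<xi> i \<in> carrier R" for i using QpN_vec[OF hh_QpN[OF xQ]] .
    have xv: "\<xi> i \<in> carrier R" for i using QpN_vec[OF xQ] .
    have "kk \<xi> i \<in> Zp p" if "i \<notin> P \<union> {..n}" for i
    proof -
      have "hh \<xi> i = \<zero>\<^bsub>R\<^esub>" using that unfolding hh_def zeta_def by simp
      moreover have "\<xi> i \<in> Zp p" using x that unfolding topspace_box by simp
      ultimately show ?thesis unfolding kk_def using xv by simp
    qed
    thus "kk \<xi> \<in> topspace (box_top p (P \<union> {..n}))"
      unfolding topspace_box unfolding kk_def using hv xv by (simp add: R.minus_closed)
  next
    fix i
    show "continuous_map (box_top p P) (qp_top p) (\<lambda>\<xi>. kk \<xi> i)"
      unfolding kk_def by (intro cont_sub proj_cont hh_coord_cont[OF P])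
  qed
qed

lemma ff_cont: "continuous_map (tau p) (tau p) ff"
proof -
  have "continuous_map (tau p) (tau p) (e \<circ> hh)" by (rule continuous_map_compose[OF hh_cont e_cont])
  moreover have "e \<circ> hh = ff" unfolding ff_def by auto
  ultimately show ?thesis by simp
qed

lemma TT_eq: assumes "\<xi> \<in> QpN p" shows "op_diff p e ff \<xi> = (\<lambda>j. e \<xi> j \<ominus>\<^bsub>R\<^esub> pi (e \<xi>) j)"
proof -
  have "vec (e \<xi>)" "vec (ff \<xi>)" unfolding vec_def using e_vec[OF assms] QpN_vec[OF ff_QpN[OF assms]] by auto
  thus ?thesis unfolding op_diff_def using seq_sub_eq ff_pi[OF assms] by simp
qed

lemma TT_kk: assumes "\<xi> \<in> QpN p" shows "op_diff p e ff \<xi> = e (kk \<xi>)"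
proof -
  have "e (kk \<xi>) = (\<lambda>i. e \<xi> i \<ominus>\<^bsub>R\<^esub> e (hh \<xi>) i)" unfolding kk_def by (rule e_sub[OF assms hh_QpN[OF assms]])
  also have "\<dots> = op_diff p e ff \<xi>" unfolding TT_eq[OF assms] ff_def[symmetric] ff_pi[OF assms] ..
  finally show ?thesis by simp
qed

lemma TT_cont: "continuous_map (tau p) (tau p) (op_diff p e ff)"
proof -
  have "continuous_map (tau p) (tau p) (e \<circ> kk)" by (rule continuous_map_compose[OF kk_cont e_cont])
  thus ?thesis by (rule continuous_map_eq) (simp add: TT_kk)
qed

lemma TT_QpN: "\<xi> \<in> QpN p \<Longrightarrow> op_diff p e ff \<xi> \<in> QpN p"
  unfolding TT_eq using QpN_sub[OF e_QpN ff_QpN] ff_pi by simp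

lemma pi_col: "i \<le> n \<Longrightarrow> pi (col i) = col i" using pi_V col_V by simp

lemma TT_Zp: assumes xQ: "\<xi> \<in> QpN p" and xZ: "\<And>i. \<xi> i \<in> Zp p" shows "op_diff p e ff \<xi> j \<in> Zp p"
proof (rule ccontr)
  let ?T = "op_diff p e ff"
  assume nz: "?T \<xi> j \<notin> Zp p"
  have Tc: "?T \<xi> j \<in> carrier R" using QpN_vec[OF TT_QpN[OF xQ]] .
  hence big: "nrm (?T \<xi> j) > 1" using nz Zp_iff by auto
  let ?A = "{\<eta> \<in> QpN p. nrm (\<eta> j) > 1}"
  let ?U = "{\<zeta> \<in> topspace (tau p). ?T \<zeta> \<in> ?A}"
  have "openin (tau p) ?U" by (rule openin_continuous_map_preimage[OF TT_cont big_coord_open])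
  hence "Ptau ?U" using tau_open by simp
  hence Uo: "openin (box_top p {}) (?U \<inter> topspace (box_top p {}))" by (rule PtauD) simp
  have xb: "\<xi> \<in> topspace (box_top p {})" unfolding topspace_box using xZ Zp_carrier by auto
  have xU: "\<xi> \<in> ?U \<inter> topspace (box_top p {})" using xQ TT_QpN[OF xQ] big xb by simp
  let ?X = "\<lambda>i::nat. if i \<in> {} then qp_top p else subtopology (qp_top p) (Zp p)"
  have "openin (product_topology ?X UNIV) (?U \<inter> topspace (box_top p {}))" using Uo unfolding box_top_def .
  then obtain Ub where Ub: "finite {i \<in> UNIV. Ub i \<noteq> topspace (?X i)}" "\<forall>i\<in>UNIV. openin (?X i) (Ub i)"
      "\<xi> \<in> Pi\<^sub>E UNIV Ub" "Pi\<^sub>E UNIV Ub \<subseteq> ?U \<inter> topspace (box_top p {})"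
    using xU unfolding openin_product_topology_alt by meson
  have tX: "topspace (?X i) = Zp p" for i using Zp_subset by auto
  obtain N where N: "{i \<in> UNIV. Ub i \<noteq> topspace (?X i)} \<subseteq> {..<N}" using finite_nat_bounded[OF Ub(1)] by blast
  define \<xi>' where "\<xi>' i = (if i < N then \<xi> i else \<zero>\<^bsub>R\<^esub>)" for i
  have x'v: "\<xi>' i \<in> Zp p" for i unfolding \<xi>'_def using xZ Zp_zero by simp
  have x'c: "\<xi>' i \<in> carrier R" for i using x'v Zp_carrier by blast
  have "\<xi>' \<in> Pi\<^sub>E UNIV Ub"
    unfolding PiE_iff
  proof (intro conjI ballI)
    fix i :: nat
    show "\<xi>' i \<in> Ub i"
    proof (cases "i < N")
      case True thus ?thesis using Ub(3) unfolding \<xi>'_def PiE_iff by simp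
    next
      case False
      hence "Ub i = topspace (?X i)" using N by auto
      thus ?thesis using x'v tX by simp
    qed
  qed simp
  hence "\<xi>' \<in> ?U" using Ub(4) by blast
  hence big': "nrm (?T \<xi>' j) > 1" by simp
  have x'0: "\<And>i. N < i \<Longrightarrow> \<xi>' i = \<zero>\<^bsub>R\<^esub>" unfolding \<xi>'_def by simp
  have x'Q: "\<xi>' \<in> QpN p" by (rule fin_QpN[of _ N]) (rule x'c, rule x'0)
  have ex': "e \<xi>' = (\<lambda>j. finsum R (\<lambda>i. \<xi>' i \<otimes>\<^bsub>R\<^esub> col i j) {..N})"
    by (rule e_fin) (rule x'c, rule x'0)
  have "pi (e \<xi>') j = finsum R (\<lambda>k. finsum R (\<lambda>i. \<xi>' i \<otimes>\<^bsub>R\<^esub> col i (piv k)) {..N} \<otimes>\<^bsub>R\<^esub> v k j) {..<d}"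
    unfolding pi_def ex' ..
  also have "\<dots> = finsum R (\<lambda>i. \<xi>' i \<otimes>\<^bsub>R\<^esub> pi (col i) j) {..N}"
    unfolding pi_def by (rule LC) (use x'c col_vec vc in auto)
  finally have pe: "pi (e \<xi>') j = finsum R (\<lambda>i. \<xi>' i \<otimes>\<^bsub>R\<^esub> pi (col i) j) {..N}" .
  have "?T \<xi>' j = finsum R (\<lambda>i. \<xi>' i \<otimes>\<^bsub>R\<^esub> col i j) {..N} \<ominus>\<^bsub>R\<^esub> finsum R (\<lambda>i. \<xi>' i \<otimes>\<^bsub>R\<^esub> pi (col i) j) {..N}"
    unfolding TT_eq[OF x'Q] pe by (simp add: ex')
  also have "\<dots> = finsum R (\<lambda>i. \<xi>' i \<otimes>\<^bsub>R\<^esub> col i j \<ominus>\<^bsub>R\<^esub> \<xi>' i \<otimes>\<^bsub>R\<^esub> pi (col i) j) {..N}"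
    by (rule fs_sub[symmetric]) (use x'c col_vec pi_vec in auto)
  also have "\<dots> = finsum R (\<lambda>i. \<xi>' i \<otimes>\<^bsub>R\<^esub> (col i j \<ominus>\<^bsub>R\<^esub> pi (col i) j)) {..N}"
    by (intro R.finsum_cong') (use x'c col_vec pi_vec in \<open>auto simp: R.r_minus R.minus_eq R.r_distr\<close>)
  also have "\<dots> \<in> Zp p"
  proof (rule Zp_finsum)
    fix i assume "i \<in> {..N}"
    have "col i j \<ominus>\<^bsub>R\<^esub> pi (col i) j \<in> Zp p"
    proof (cases "i \<le> n")
      case True thus ?thesis using pi_col col_vec Zp_zero by simp
    next
      case False
      have cz: "col i l \<in> Zp p" for l using colZ False col_vec Zp_iff by simp
      show ?thesis by (intro Zp_sub cz pi_Zp)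
    qed
    thus "\<xi>' i \<otimes>\<^bsub>R\<^esub> (col i j \<ominus>\<^bsub>R\<^esub> pi (col i) j) \<in> Zp p" using x'v Zp_mult by blast
  qed simp
  finally show False using big' Zp_iff by simp
qed

end

context padic begin

lemma sn_bdd: assumes "\<xi> \<in> QpN p" shows "bdd_above (range (\<lambda>i. nrm (\<xi> i)))"
proof -
  have s: "range (\<lambda>i. nrm (\<xi> i)) \<subseteq> {..1} \<union> (\<lambda>i. nrm (\<xi> i)) ` {i. nrm (\<xi> i) > 1}" by auto
  have b: "bdd_above ({..1} \<union> (\<lambda>i. nrm (\<xi> i)) ` {i. nrm (\<xi> i) > 1})"
    using assms unfolding QpN_eq by (simp add: bdd_above_finite)
  show ?thesis by (rule bdd_above_mono[OF b s])
qed

lemma sn_le1: assumes "\<xi> \<in> QpN p" "seq_norm p \<xi> \<le> 1" shows "\<xi> i \<in> Zp p"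
proof -
  have "nrm (\<xi> i) \<le> seq_norm p \<xi>" unfolding seq_norm_def by (rule cSup_upper) (use sn_bdd[OF assms(1)] in auto)
  thus ?thesis using assms QpN_vec Zp_iff by auto
qed

lemma sn_ge: "(\<And>i. nrm (\<xi> i) \<le> 1) \<Longrightarrow> seq_norm p \<xi> \<le> 1"
  unfolding seq_norm_def by (rule cSup_least) auto

end

context ech begin

lemma ff_lin: "zp_linear p ff"
  unfolding zp_linear_def seq_add_eq seq_smult_eq
proof (intro conjI ballI)
  fix \<xi> assume "\<xi> \<in> QpN p" thus "ff \<xi> \<in> QpN p" by (rule ff_QpN)
next
  fix \<xi> \<eta> assume x: "\<xi> \<in> QpN p" and y: "\<eta> \<in> QpN p"
  have "ff (\<lambda>i. \<xi> i \<oplus>\<^bsub>R\<^esub> \<eta> i) = pi (e (\<lambda>i. \<xi> i \<oplus>\<^bsub>R\<^esub> \<eta> i))" by (rule ff_pi[OF QpN_add[OF x y]])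
  also have "\<dots> = pi (\<lambda>i. e \<xi> i \<oplus>\<^bsub>R\<^esub> e \<eta> i)" using e_add[OF x y] by simp
  also have "\<dots> = (\<lambda>j. pi (e \<xi>) j \<oplus>\<^bsub>R\<^esub> pi (e \<eta>) j)" by (rule pi_add) (use e_vec x y in auto)
  finally show "ff (\<lambda>i. \<xi> i \<oplus>\<^bsub>R\<^esub> \<eta> i) = (\<lambda>i. ff \<xi> i \<oplus>\<^bsub>R\<^esub> ff \<eta> i)" using ff_pi x y by simp
next
  fix a \<xi> assume a: "a \<in> Zp p" and x: "\<xi> \<in> QpN p"
  have ac: "a \<in> carrier R" using a Zp_carrier by blast
  have "ff (\<lambda>i. a \<otimes>\<^bsub>R\<^esub> \<xi> i) = pi (e (\<lambda>i. a \<otimes>\<^bsub>R\<^esub> \<xi> i))" by (rule ff_pi[OF QpN_smult[OF a x]])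
  also have "\<dots> = pi (\<lambda>i. a \<otimes>\<^bsub>R\<^esub> e \<xi> i)" using e_smult[OF a x] by simp
  also have "\<dots> = (\<lambda>j. a \<otimes>\<^bsub>R\<^esub> pi (e \<xi>) j)" by (rule pi_smult[OF ac]) (use e_vec x in auto)
  finally show "ff (\<lambda>i. a \<otimes>\<^bsub>R\<^esub> \<xi> i) = (\<lambda>i. a \<otimes>\<^bsub>R\<^esub> ff \<xi> i)" using ff_pi x by simp
qed

lemma ff_idem: "idempotent_op p ff"
  unfolding idempotent_op_def bounded_ops_def
proof (intro conjI ballI CollectI)
  show "zp_linear p ff" by (rule ff_lin)
  show "continuous_map (tau p) (tau p) ff" by (rule ff_cont)
  fix \<xi> assume x: "\<xi> \<in> QpN p"
  have "ff (ff \<xi>) = pi (e (ff \<xi>))" by (rule ff_pi[OF ff_QpN[OF x]])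
  also have "\<dots> = pi (ff \<xi>)" using V_fix[OF ff_V[OF x]] by simp
  also have "\<dots> = ff \<xi>" by (rule pi_V[OF ff_V[OF x]])
  finally show "ff (ff \<xi>) = ff \<xi>" .
qed

lemma ff_e: "\<xi> \<in> QpN p \<Longrightarrow> ff (e \<xi>) = ff \<xi> \<and> e (ff \<xi>) = ff \<xi>"
  using ff_pi e_QpN e_idem V_fix ff_V by simp

lemma span_V: "qp_span_upto p n (\<lambda>i. e (delta p i)) = V"
proof -
  have eq: "(\<lambda>j. foldr (qp_add p) (map (\<lambda>i. qp_mult p (c i) (col i j)) [0..<Suc n]) (qp_zero p)) =
            (\<lambda>j. finsum R (\<lambda>i. c i \<otimes>\<^bsub>R\<^esub> col i j) {..n})" if "\<forall>i\<le>n. c i \<in> Qp p" for c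
  proof
    fix j
    show "foldr (qp_add p) (map (\<lambda>i. qp_mult p (c i) (col i j)) [0..<Suc n]) (qp_zero p) = finsum R (\<lambda>i. c i \<otimes>\<^bsub>R\<^esub> col i j) {..n}"
      unfolding to_R by (rule foldr_span) (use that col_vec in simp)
  qed
  show ?thesis
  proof
    show "qp_span_upto p n (\<lambda>i. e (delta p i)) \<subseteq> V"
    proof
      fix x assume "x \<in> qp_span_upto p n (\<lambda>i. e (delta p i))"
      then obtain c where c: "\<forall>i\<le>n. c i \<in> Qp p"
        "x = (\<lambda>j. foldr (qp_add p) (map (\<lambda>i. qp_mult p (c i) (col i j)) [0..<Suc n]) (qp_zero p))"
        unfolding qp_span_upto_def by blast
      have "x = (\<lambda>j. finsum R (\<lambda>i. c i \<otimes>\<^bsub>R\<^esub> col i j) {..n})" using c eq by simp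
      moreover have "(\<lambda>j. finsum R (\<lambda>i. c i \<otimes>\<^bsub>R\<^esub> col i j) {..n}) \<in> V" by (rule V_intro) (use c in simp)
      ultimately show "x \<in> V" by simp
    qed
  next
    show "V \<subseteq> qp_span_upto p n (\<lambda>i. e (delta p i))"
    proof
      fix x assume "x \<in> V"
      then obtain c where c: "\<forall>i\<le>n. c i \<in> carrier R" "x = (\<lambda>j. finsum R (\<lambda>i. c i \<otimes>\<^bsub>R\<^esub> col i j) {..n})"
        unfolding V_def by blast
      have c': "\<forall>i\<le>n. c i \<in> Qp p" using c by simp
      have "x = (\<lambda>j. foldr (qp_add p) (map (\<lambda>i. qp_mult p (c i) (col i j)) [0..<Suc n]) (qp_zero p))"
        using c eq[OF c'] by simp
      thus "x \<in> qp_span_upto p n (\<lambda>i. e (delta p i))" unfolding qp_span_upto_def using c' by blast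
    qed
  qed
qed

lemma ff_img: "ff ` QpN p = qp_span_upto p n (\<lambda>i. e (delta p i))"
  unfolding span_V
proof
  show "ff ` QpN p \<subseteq> V" using ff_V by blast
  show "V \<subseteq> ff ` QpN p"
  proof
    fix \<eta> assume h: "\<eta> \<in> V"
    then obtain c where c: "\<forall>i\<le>n. c i \<in> carrier R" "\<eta> = e (zeta c)" unfolding V_iff by blast
    have zQ: "zeta c \<in> QpN p" using c zeta_QpN by simp
    have "ff (zeta c) = pi \<eta>" using ff_pi[OF zQ] c by simp
    also have "\<dots> = \<eta>" by (rule pi_V[OF h])
    finally show "\<eta> \<in> ff ` QpN p" using zQ by (metis image_eqI)
  qed
qed

lemma TT_lin: "zp_linear p (op_diff p e ff)"
  unfolding zp_linear_def seq_add_eq seq_smult_eq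
proof (intro conjI ballI)
  fix \<xi> assume "\<xi> \<in> QpN p" thus "op_diff p e ff \<xi> \<in> QpN p" by (rule TT_QpN)
next
  fix \<xi> \<eta> assume x: "\<xi> \<in> QpN p" and y: "\<eta> \<in> QpN p"
  have s: "(\<lambda>i. \<xi> i \<oplus>\<^bsub>R\<^esub> \<eta> i) \<in> QpN p" by (rule QpN_add[OF x y])
  have ex: "e (\<lambda>i. \<xi> i \<oplus>\<^bsub>R\<^esub> \<eta> i) = (\<lambda>i. e \<xi> i \<oplus>\<^bsub>R\<^esub> e \<eta> i)" by (rule e_add[OF x y])
  have pa: "pi (\<lambda>i. e \<xi> i \<oplus>\<^bsub>R\<^esub> e \<eta> i) = (\<lambda>j. pi (e \<xi>) j \<oplus>\<^bsub>R\<^esub> pi (e \<eta>) j)"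
    by (rule pi_add) (use e_vec x y in auto)
  show "op_diff p e ff (\<lambda>i. \<xi> i \<oplus>\<^bsub>R\<^esub> \<eta> i) = (\<lambda>i. op_diff p e ff \<xi> i \<oplus>\<^bsub>R\<^esub> op_diff p e ff \<eta> i)"
    unfolding TT_eq[OF s] TT_eq[OF x] TT_eq[OF y] ex pa
  proof
    fix j
    have c: "e \<xi> j \<in> carrier R" "e \<eta> j \<in> carrier R" "pi (e \<xi>) j \<in> carrier R" "pi (e \<eta>) j \<in> carrier R"
      using e_vec x y pi_vec by auto
    show "e \<xi> j \<oplus>\<^bsub>R\<^esub> e \<eta> j \<ominus>\<^bsub>R\<^esub> (pi (e \<xi>) j \<oplus>\<^bsub>R\<^esub> pi (e \<eta>) j) =
          e \<xi> j \<ominus>\<^bsub>R\<^esub> pi (e \<xi>) j \<oplus>\<^bsub>R\<^esub> (e \<eta> j \<ominus>\<^bsub>R\<^esub> pi (e \<eta>) j)"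
      using c by algebra
  qed
next
  fix a \<xi> assume a: "a \<in> Zp p" and x: "\<xi> \<in> QpN p"
  have ac: "a \<in> carrier R" using a Zp_carrier by blast
  have s: "(\<lambda>i. a \<otimes>\<^bsub>R\<^esub> \<xi> i) \<in> QpN p" by (rule QpN_smult[OF a x])
  have ex: "e (\<lambda>i. a \<otimes>\<^bsub>R\<^esub> \<xi> i) = (\<lambda>i. a \<otimes>\<^bsub>R\<^esub> e \<xi> i)" by (rule e_smult[OF a x])
  have pa: "pi (\<lambda>i. a \<otimes>\<^bsub>R\<^esub> e \<xi> i) = (\<lambda>j. a \<otimes>\<^bsub>R\<^esub> pi (e \<xi>) j)"
    by (rule pi_smult[OF ac]) (use e_vec x in auto)
  show "op_diff p e ff (\<lambda>i. a \<otimes>\<^bsub>R\<^esub> \<xi> i) = (\<lambda>i. a \<otimes>\<^bsub>R\<^esub> op_diff p e ff \<xi> i)"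
    unfolding TT_eq[OF s] TT_eq[OF x] ex pa
  proof
    fix j
    have c: "e \<xi> j \<in> carrier R" "pi (e \<xi>) j \<in> carrier R" using e_vec x pi_vec by auto
    show "a \<otimes>\<^bsub>R\<^esub> e \<xi> j \<ominus>\<^bsub>R\<^esub> a \<otimes>\<^bsub>R\<^esub> pi (e \<xi>) j = a \<otimes>\<^bsub>R\<^esub> (e \<xi> j \<ominus>\<^bsub>R\<^esub> pi (e \<xi>) j)"
      using c ac by algebra
  qed
qed

lemma TT_idem: "idempotent_op p (op_diff p e ff)"
  unfolding idempotent_op_def bounded_ops_def
proof (intro conjI ballI CollectI)
  show "zp_linear p (op_diff p e ff)" by (rule TT_lin)
  show "continuous_map (tau p) (tau p) (op_diff p e ff)" by (rule TT_cont)
  fix \<xi> assume x: "\<xi> \<in> QpN p"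
  let ?T = "op_diff p e ff"
  have pQ: "pi (e \<xi>) \<in> QpN p" using ff_QpN[OF x] ff_pi[OF x] by simp
  have pV: "pi (e \<xi>) \<in> V" using pi_inV e_vec x by simp
  have eT: "e (?T \<xi>) = ?T \<xi>"
  proof -
    have "e (?T \<xi>) = e (\<lambda>j. e \<xi> j \<ominus>\<^bsub>R\<^esub> pi (e \<xi>) j)" unfolding TT_eq[OF x] ..
    also have "\<dots> = (\<lambda>j. e (e \<xi>) j \<ominus>\<^bsub>R\<^esub> e (pi (e \<xi>)) j)" by (rule e_sub[OF e_QpN[OF x] pQ])
    also have "\<dots> = ?T \<xi>" unfolding TT_eq[OF x] e_idem[OF x] V_fix[OF pV] ..
    finally show ?thesis .
  qed
  have pT: "pi (?T \<xi>) = (\<lambda>j. \<zero>\<^bsub>R\<^esub>)"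
  proof -
    have "pi (?T \<xi>) = (\<lambda>j. pi (e \<xi>) j \<ominus>\<^bsub>R\<^esub> pi (pi (e \<xi>)) j)"
      unfolding TT_eq[OF x] by (rule pi_sub) (use e_vec x pi_vec in auto)
    also have "\<dots> = (\<lambda>j. \<zero>\<^bsub>R\<^esub>)" unfolding pi_V[OF pV] using pi_vec e_vec x by simp
    finally show ?thesis .
  qed
  have "?T (?T \<xi>) = (\<lambda>j. e (?T \<xi>) j \<ominus>\<^bsub>R\<^esub> pi (e (?T \<xi>)) j)" by (rule TT_eq[OF TT_QpN[OF x]])
  also have "\<dots> = (\<lambda>j. ?T \<xi> j \<ominus>\<^bsub>R\<^esub> \<zero>\<^bsub>R\<^esub>)" unfolding eT pT ..
  also have "\<dots> = ?T \<xi>" using QpN_vec[OF TT_QpN[OF x]] by simp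
  finally show "?T (?T \<xi>) = ?T \<xi>" .
qed

lemma TT_norm: "\<xi> \<in> QpN p \<Longrightarrow> seq_norm p \<xi> \<le> 1 \<Longrightarrow> seq_norm p (op_diff p e ff \<xi>) \<le> 1"
proof -
  assume x: "\<xi> \<in> QpN p" "seq_norm p \<xi> \<le> 1"
  have "\<And>i. \<xi> i \<in> Zp p" using sn_le1[OF x] .
  hence "\<And>j. op_diff p e ff \<xi> j \<in> Zp p" using TT_Zp[OF x(1)] by blast
  thus ?thesis using Zp_iff by (intro sn_ge) auto
qed

lemma final:
  "\<exists>f. idempotent_op p f
           \<and> (\<forall>\<xi>\<in>QpN p. f (e \<xi>) = f \<xi> \<and> e (f \<xi>) = f \<xi>)
           \<and> f ` QpN p = qp_span_upto p n (\<lambda>i. e (delta p i))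
           \<and> idempotent_op p (op_diff p e f)
           \<and> bdd_above {seq_norm p (op_diff p e f \<xi>) | \<xi>. \<xi> \<in> QpN p \<and> seq_norm p \<xi> \<le> 1}
           \<and> op_norm p (op_diff p e f) \<le> 1"
proof (rule exI[of _ ff], intro conjI ballI)
  let ?S = "{seq_norm p (op_diff p e ff \<xi>) | \<xi>. \<xi> \<in> QpN p \<and> seq_norm p \<xi> \<le> 1}"
  show "idempotent_op p ff" by (rule ff_idem)
  show "idempotent_op p (op_diff p e ff)" by (rule TT_idem)
  show "ff ` QpN p = qp_span_upto p n (\<lambda>i. e (delta p i))" by (rule ff_img)
  fix \<xi> assume "\<xi> \<in> QpN p"
  thus "ff (e \<xi>) = ff \<xi>" "e (ff \<xi>) = ff \<xi>" using ff_e by auto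
next
  let ?S = "{seq_norm p (op_diff p e ff \<xi>) | \<xi>. \<xi> \<in> QpN p \<and> seq_norm p \<xi> \<le> 1}"
  have le: "\<forall>x\<in>?S. x \<le> 1" using TT_norm by blast
  show "bdd_above ?S" by (rule bdd_aboveI[where M=1]) (use le in blast)
next
  let ?S = "{seq_norm p (op_diff p e ff \<xi>) | \<xi>. \<xi> \<in> QpN p \<and> seq_norm p \<xi> \<le> 1}"
  have le: "\<forall>x\<in>?S. x \<le> 1" using TT_norm by blast
  have z: "(\<lambda>i. \<zero>\<^bsub>R\<^esub>) \<in> QpN p" by (rule QpN_zero)
  have "seq_norm p (\<lambda>i. \<zero>\<^bsub>R\<^esub>) \<le> 1" by (rule sn_ge) simp
  hence ne: "?S \<noteq> {}" using z by blast
  show "op_norm p (op_diff p e ff) \<le> 1" unfolding op_norm_def by (rule cSup_least[OF ne]) (use le in blast)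
qed

end

theorem lemma3p13:
  fixes p n :: nat and e :: "qpseq \<Rightarrow> qpseq"
  assumes "prime p"
    and "idempotent_op p e"
    and "\<forall>i>n. \<forall>j. qp_norm p (e (delta p i) j) \<le> 1"
  shows "\<exists>f. idempotent_op p f
           \<and> (\<forall>\<xi>\<in>QpN p. f (e \<xi>) = f \<xi> \<and> e (f \<xi>) = f \<xi>)
           \<and> f ` QpN p = qp_span_upto p n (\<lambda>i. e (delta p i))
           \<and> idempotent_op p (op_diff p e f)
           \<and> bdd_above {seq_norm p (op_diff p e f \<xi>) | \<xi>. \<xi> \<in> QpN p \<and> seq_norm p \<xi> \<le> 1}
           \<and> op_norm p (op_diff p e f) \<le> 1"
proof -
  interpret sd p e n by unfold_locales (fact assms)+
  obtain d :: nat and piv v W where D: "\<forall>k<d. v k = (\<lambda>j. finsum R (\<lambda>i. W k i \<otimes>\<^bsub>R\<^esub> col i j) {..n})"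
      "\<forall>k<d. \<forall>i\<le>n. W k i \<in> carrier R"
      "\<forall>k<d. \<forall>l<d. v k (piv l) = (if k = l then \<one>\<^bsub>R\<^esub> else \<zero>\<^bsub>R\<^esub>)"
      "\<forall>k<d. \<forall>j. nrm (v k j) \<le> 1"
      "\<forall>i\<le>n. \<forall>j. col i j = finsum R (\<lambda>k. col i (piv k) \<otimes>\<^bsub>R\<^esub> v k j) {..<d}"
    using ech_exists by (elim exE conjE) (rule that)
  interpret ech p e n d piv v W by unfold_locales (fact D)+
  show ?thesis by (rule final)
qed

end
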